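(* Let $L,M,N$ be Lie superalgebras such that (i) $L$ and $N$ act compatibly on one another, and $M$ and $N$ act compatibly on one another; (ii) ${}^{l}({}^{m}n)=(-1)^{|l||m|}\,{}^{m}({}^{l}n)$ for all homogeneous $l\in L$, $m\in M$, $n\in N$; (iii) the canonical homomorphisms $[L,N]^{N}\otimes M\to N\otimes M$ and $[M,N]^{N}\otimes L\to N\otimes L$ are trivial. Then $L\oplus M$ acts on $N$ by ${}^{(l,m)}n={}^{l}n+{}^{m}n$, $N$ acts on $L\oplus M$ by ${}^{n}(l,m)=({}^{n}l,{}^{n}m)$, and with these actions there is an isomorphism of Lie superalgebras \[(L\oplus M)\otimes N\cong (L\otimes N)\oplus(M\otimes N),\quad (l,m)\otimes n\mapsto (l\otimes n,\,m\otimes n).\]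
   Context: All algebras are over a field $\mathbb{F}$ of characteristic $\neq 2,3$. An action of a Lie superalgebra $P$ on a Lie superalgebra $M$ is an even bilinear map $(p,m)\mapsto {}^{p}m$ with ${}^{[p,p']}m={}^{p}({}^{p'}m)-(-1)^{|p||p'|}{}^{p'}({}^{p}m)$ and ${}^{p}[m,m']=[{}^{p}m,m']+(-1)^{|p||m|}[m,{}^{p}m']$. Actions of $M$ and $N$ on each other are compatible if ${}^{({}^{n}m)}n'=-(-1)^{|m||n|}[{}^{m}n,n']$ and ${}^{({}^{m}n)}m'=-(-1)^{|m||n|}[{}^{n}m,m']$ for all homogeneous $m,m'\in M$, $n,n'\in N$. Given mutual actions, the non-abelian tensor product $M\otimes N$ is the Lie superalgebra generated by symbols $m\otimes n$ (homogeneous $m,n$, degree $|m|+|n|$) subject to: $\lambda(m\otimes n)=\lambda m\otimes n=m\otimes\lambda n$; additivity in each variable (for elements of the same degree); $[m,m']\otimes n=m\otimes{}^{m'}n-(-1)^{|m||m'|}m'\otimes{}^{m}n$; $m\otimes[n,n']=(-1)^{|n'|(|m|+|n|)}{}^{n'}m\otimes n-(-1)^{|m||n|}{}^{n}m\otimes n'$; $[m\otimes n,m'\otimes n']=-(-1)^{|m||n|}\,{}^{n}m\otimes{}^{m'}n'$. For an action of $L$ on $N$, $[L,N]^{N}$ denotes the graded ideal of $N$ spanned by the elements ${}^{l}n$. *)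

theory Defs
  imports Main
begin

text \<open>Degrees are booleans (True = odd); the sign (-1)^(|x||y|) is sg (i \<and> j).\<close>

record ('a, 'k) lsa =
  car :: "'a set"
  zr  :: 'a
  ad  :: "'a \<Rightarrow> 'a \<Rightarrow> 'a"
  sc  :: "'k \<Rightarrow> 'a \<Rightarrow> 'a"
  br  :: "'a \<Rightarrow> 'a \<Rightarrow> 'a"
  gr  :: "bool \<Rightarrow> 'a set"

definition sg :: "bool \<Rightarrow> 'k::field" where
  "sg b = (if b then -1 else 1)"

definition lsub :: "('a, 'k::field) lsa \<Rightarrow> 'a \<Rightarrow> 'a \<Rightarrow> 'a" where
  "lsub A x y = ad A x (sc A (-1) y)"

definition subspace :: "('a, 'k::field) lsa \<Rightarrow> 'a set \<Rightarrow> bool" where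
  "subspace A U \<longleftrightarrow> U \<subseteq> car A \<and> zr A \<in> U \<and> (\<forall>x\<in>U. \<forall>y\<in>U. ad A x y \<in> U)
     \<and> (\<forall>c. \<forall>x\<in>U. sc A c x \<in> U)"

definition vector_space :: "('a, 'k::field) lsa \<Rightarrow> bool" where
  "vector_space A \<longleftrightarrow> subspace A (car A)
    \<and> (\<forall>x\<in>car A. \<forall>y\<in>car A. \<forall>z\<in>car A. ad A (ad A x y) z = ad A x (ad A y z))
    \<and> (\<forall>x\<in>car A. \<forall>y\<in>car A. ad A x y = ad A y x)
    \<and> (\<forall>x\<in>car A. ad A (zr A) x = x)
    \<and> (\<forall>x\<in>car A. ad A x (sc A (-1) x) = zr A)
    \<and> (\<forall>c. \<forall>x\<in>car A. \<forall>y\<in>car A. sc A c (ad A x y) = ad A (sc A c x) (sc A c y))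
    \<and> (\<forall>c d. \<forall>x\<in>car A. sc A (c + d) x = ad A (sc A c x) (sc A d x))
    \<and> (\<forall>c d. \<forall>x\<in>car A. sc A (c * d) x = sc A c (sc A d x))
    \<and> (\<forall>x\<in>car A. sc A 1 x = x)"

definition graded :: "('a, 'k::field) lsa \<Rightarrow> bool" where
  "graded A \<longleftrightarrow> (\<forall>b. subspace A (gr A b)) \<and> gr A False \<inter> gr A True = {zr A}
    \<and> (\<forall>x\<in>car A. \<exists>x0\<in>gr A False. \<exists>x1\<in>gr A True. x = ad A x0 x1)"

definition lie_superalgebra :: "('a, 'k::field) lsa \<Rightarrow> bool" where
  "lie_superalgebra A \<longleftrightarrow> vector_space A \<and> graded A
    \<and> (\<forall>x\<in>car A. \<forall>y\<in>car A. br A x y \<in> car A)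
    \<and> (\<forall>x\<in>car A. \<forall>y\<in>car A. \<forall>z\<in>car A.
          br A (ad A x y) z = ad A (br A x z) (br A y z)
        \<and> br A z (ad A x y) = ad A (br A z x) (br A z y))
    \<and> (\<forall>c. \<forall>x\<in>car A. \<forall>y\<in>car A. br A (sc A c x) y = sc A c (br A x y)
        \<and> br A x (sc A c y) = sc A c (br A x y))
    \<and> (\<forall>i j. \<forall>x\<in>gr A i. \<forall>y\<in>gr A j. br A x y \<in> gr A (i \<noteq> j))
    \<and> (\<forall>i j. \<forall>x\<in>gr A i. \<forall>y\<in>gr A j. br A x y = sc A (- sg (i \<and> j)) (br A y x))
    \<and> (\<forall>i j. \<forall>x\<in>gr A i. \<forall>y\<in>gr A j. \<forall>z\<in>car A.
          br A x (br A y z) = ad A (br A (br A x y) z) (sc A (sg (i \<and> j)) (br A y (br A x z))))"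

definition is_action :: "('p, 'k::field) lsa \<Rightarrow> ('m, 'k) lsa \<Rightarrow> ('p \<Rightarrow> 'm \<Rightarrow> 'm) \<Rightarrow> bool" where
  "is_action P M a \<longleftrightarrow>
      (\<forall>p\<in>car P. \<forall>m\<in>car M. a p m \<in> car M)
    \<and> (\<forall>p\<in>car P. \<forall>p'\<in>car P. \<forall>m\<in>car M. a (ad P p p') m = ad M (a p m) (a p' m))
    \<and> (\<forall>c. \<forall>p\<in>car P. \<forall>m\<in>car M. a (sc P c p) m = sc M c (a p m))
    \<and> (\<forall>p\<in>car P. \<forall>m\<in>car M. \<forall>m'\<in>car M. a p (ad M m m') = ad M (a p m) (a p m'))
    \<and> (\<forall>c. \<forall>p\<in>car P. \<forall>m\<in>car M. a p (sc M c m) = sc M c (a p m))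
    \<and> (\<forall>i j. \<forall>p\<in>gr P i. \<forall>m\<in>gr M j. a p m \<in> gr M (i \<noteq> j))
    \<and> (\<forall>i j. \<forall>p\<in>gr P i. \<forall>p'\<in>gr P j. \<forall>m\<in>car M.
         a (br P p p') m = lsub M (a p (a p' m)) (sc M (sg (i \<and> j)) (a p' (a p m))))
    \<and> (\<forall>i j. \<forall>p\<in>gr P i. \<forall>m\<in>gr M j. \<forall>m'\<in>car M.
         a p (br M m m') = ad M (br M (a p m) m') (sc M (sg (i \<and> j)) (br M m (a p m'))))"

definition compatible :: "('m, 'k::field) lsa \<Rightarrow> ('n, 'k) lsa \<Rightarrow> ('m \<Rightarrow> 'n \<Rightarrow> 'n) \<Rightarrow> ('n \<Rightarrow> 'm \<Rightarrow> 'm) \<Rightarrow> bool" where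
  "compatible M N aMN aNM \<longleftrightarrow>
      (\<forall>i j. \<forall>m\<in>gr M i. \<forall>n\<in>gr N j. \<forall>n'\<in>car N.
         aMN (aNM n m) n' = sc N (- sg (i \<and> j)) (br N (aMN m n) n'))
    \<and> (\<forall>i j. \<forall>m\<in>gr M i. \<forall>n\<in>gr N j. \<forall>m'\<in>car M.
         aNM (aMN m n) m' = sc M (- sg (i \<and> j)) (br M (aNM n m) m'))"

definition hom :: "('a, 'k::field) lsa \<Rightarrow> ('b, 'k) lsa \<Rightarrow> ('a \<Rightarrow> 'b) \<Rightarrow> bool" where
  "hom A B f \<longleftrightarrow> (\<forall>x\<in>car A. f x \<in> car B)
    \<and> (\<forall>x\<in>car A. \<forall>y\<in>car A. f (ad A x y) = ad B (f x) (f y))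
    \<and> (\<forall>c. \<forall>x\<in>car A. f (sc A c x) = sc B c (f x))
    \<and> (\<forall>x\<in>car A. \<forall>y\<in>car A. f (br A x y) = br B (f x) (f y))
    \<and> (\<forall>b. f ` gr A b \<subseteq> gr B b)"

definition iso :: "('a, 'k::field) lsa \<Rightarrow> ('b, 'k) lsa \<Rightarrow> ('a \<Rightarrow> 'b) \<Rightarrow> bool" where
  "iso A B f \<longleftrightarrow> hom A B f \<and> bij_betw f (car A) (car B)"

definition dsum :: "('a, 'k) lsa \<Rightarrow> ('b, 'k) lsa \<Rightarrow> ('a \<times> 'b, 'k) lsa" where
  "dsum A B = \<lparr> car = car A \<times> car B, zr = (zr A, zr B),
     ad = (\<lambda>(a, b) (a', b'). (ad A a a', ad B b b')),
     sc = (\<lambda>c (a, b). (sc A c a, sc B c b)),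
     br = (\<lambda>(a, b) (a', b'). (br A a a', br B b b')),
     gr = (\<lambda>i. gr A i \<times> gr B i) \<rparr>"

definition subalg :: "('a, 'k) lsa \<Rightarrow> 'a set \<Rightarrow> ('a, 'k) lsa" where
  "subalg A U = A\<lparr> car := U, gr := (\<lambda>b. gr A b \<inter> U) \<rparr>"

definition lspan :: "('a, 'k::field) lsa \<Rightarrow> 'a set \<Rightarrow> 'a set" where
  "lspan A S = \<Inter> {U. S \<subseteq> U \<and> subspace A U}"

text \<open>[L,N]^N : the (graded ideal of N) spanned by the elements {}^l n.\<close>
definition act_ideal :: "('l, 'k::field) lsa \<Rightarrow> ('n, 'k) lsa \<Rightarrow> ('l \<Rightarrow> 'n \<Rightarrow> 'n) \<Rightarrow> 'n set" where
  "act_ideal L N a = lspan N {a l n | l n. l \<in> car L \<and> n \<in> car N}"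

definition dsum_act :: "('n, 'k) lsa \<Rightarrow> ('l \<Rightarrow> 'n \<Rightarrow> 'n) \<Rightarrow> ('m \<Rightarrow> 'n \<Rightarrow> 'n) \<Rightarrow> ('l \<times> 'm \<Rightarrow> 'n \<Rightarrow> 'n)" where
  "dsum_act N aLN aMN = (\<lambda>(l, m) n. ad N (aLN l n) (aMN m n))"

definition act_dsum :: "('n \<Rightarrow> 'l \<Rightarrow> 'l) \<Rightarrow> ('n \<Rightarrow> 'm \<Rightarrow> 'm) \<Rightarrow> ('n \<Rightarrow> 'l \<times> 'm \<Rightarrow> 'l \<times> 'm)" where
  "act_dsum aNL aNM = (\<lambda>n (l, m). (aNL n l, aNM n m))"

definition fvs :: "'g set \<Rightarrow> ('g \<Rightarrow> 'k::zero) set" where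
  "fvs G = {f. finite {x. f x \<noteq> 0} \<and> (\<forall>x. f x \<noteq> 0 \<longrightarrow> x \<in> G)}"

definition fvs_gr :: "'g set \<Rightarrow> ('g \<Rightarrow> bool) \<Rightarrow> bool \<Rightarrow> ('g \<Rightarrow> 'k::zero) set" where
  "fvs_gr G dg b = {f \<in> fvs G. \<forall>x. f x \<noteq> 0 \<longrightarrow> dg x = b}"

definition fadd :: "('g \<Rightarrow> 'k::field) \<Rightarrow> ('g \<Rightarrow> 'k) \<Rightarrow> ('g \<Rightarrow> 'k)" where
  "fadd f g = (\<lambda>x. f x + g x)"

definition fsc :: "'k::field \<Rightarrow> ('g \<Rightarrow> 'k) \<Rightarrow> ('g \<Rightarrow> 'k)" where
  "fsc c f = (\<lambda>x. c * f x)"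

definition fminus :: "('g \<Rightarrow> 'k::field) \<Rightarrow> ('g \<Rightarrow> 'k) \<Rightarrow> ('g \<Rightarrow> 'k)" where
  "fminus f g = fadd f (fsc (-1) g)"

definition fzero :: "'g \<Rightarrow> 'k::field" where
  "fzero = (\<lambda>_. 0)"

definition dl :: "'g \<Rightarrow> ('g \<Rightarrow> 'k::field)" where
  "dl g = (\<lambda>x. if x = g then 1 else 0)"

definition fproj :: "('g \<Rightarrow> bool) \<Rightarrow> bool \<Rightarrow> ('g \<Rightarrow> 'k::field) \<Rightarrow> ('g \<Rightarrow> 'k)" where
  "fproj dg b f = (\<lambda>x. if dg x = b then f x else 0)"

text \<open>Bilinear extension of a map on basis elements: [dl p, dl q] = c p q * dl (b p q).\<close>
definition fbil :: "('g \<Rightarrow> 'g \<Rightarrow> 'g) \<Rightarrow> ('g \<Rightarrow> 'g \<Rightarrow> 'k::field) \<Rightarrow> ('g \<Rightarrow> 'k) \<Rightarrow> ('g \<Rightarrow> 'k) \<Rightarrow> ('g \<Rightarrow> 'k)" where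
  "fbil b c f g = (\<lambda>x. \<Sum>p\<in>{p. f p \<noteq> 0}. \<Sum>q\<in>{q. g q \<noteq> 0}.
                       if b p q = x then f p * g q * c p q else 0)"

definition coset :: "('g \<Rightarrow> 'k::field) set \<Rightarrow> ('g \<Rightarrow> 'k) \<Rightarrow> ('g \<Rightarrow> 'k) set" where
  "coset K f = {fadd f k | k. k \<in> K}"

definition rep :: "('g \<Rightarrow> 'k) set \<Rightarrow> ('g \<Rightarrow> 'k)" where
  "rep X = (SOME f. f \<in> X)"

text \<open>The generator m \<otimes> n, for m homogeneous of degree i and n homogeneous of degree j,
  is indexed by (m, n, i, j); it has degree i + j.\<close>

definition tgens :: "('m, 'k) lsa \<Rightarrow> ('n, 'k) lsa \<Rightarrow> ('m \<times> 'n \<times> bool \<times> bool) set" where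
  "tgens M N = {(m, n, i, j) | m n i j. m \<in> gr M i \<and> n \<in> gr N j}"

definition tdeg :: "'m \<times> 'n \<times> bool \<times> bool \<Rightarrow> bool" where
  "tdeg g = (case g of (m, n, i, j) \<Rightarrow> i \<noteq> j)"

text \<open>[m \<otimes> n, m' \<otimes> n'] = -(-1)^(|m||n|) ({}^n m \<otimes> {}^m' n').\<close>
definition tgb :: "('m \<Rightarrow> 'n \<Rightarrow> 'n) \<Rightarrow> ('n \<Rightarrow> 'm \<Rightarrow> 'm)
    \<Rightarrow> 'm \<times> 'n \<times> bool \<times> bool \<Rightarrow> 'm \<times> 'n \<times> bool \<times> bool \<Rightarrow> 'm \<times> 'n \<times> bool \<times> bool" where
  "tgb aMN aNM g h = (case g of (m, n, i, j) \<Rightarrow> case h of (m', n', i', j') \<Rightarrow>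
       (aNM n m, aMN m' n', i \<noteq> j, i' \<noteq> j'))"

definition tgc :: "'m \<times> 'n \<times> bool \<times> bool \<Rightarrow> 'm \<times> 'n \<times> bool \<times> bool \<Rightarrow> 'k::field" where
  "tgc g h = (case g of (m, n, i, j) \<Rightarrow> - sg (i \<and> j))"

definition tbr :: "('m \<Rightarrow> 'n \<Rightarrow> 'n) \<Rightarrow> ('n \<Rightarrow> 'm \<Rightarrow> 'm)
    \<Rightarrow> ('m \<times> 'n \<times> bool \<times> bool \<Rightarrow> 'k::field) \<Rightarrow> ('m \<times> 'n \<times> bool \<times> bool \<Rightarrow> 'k)
    \<Rightarrow> ('m \<times> 'n \<times> bool \<times> bool \<Rightarrow> 'k)" where
  "tbr aMN aNM = fbil (tgb aMN aNM) tgc"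

definition trels :: "('m, 'k::field) lsa \<Rightarrow> ('n, 'k) lsa \<Rightarrow> ('m \<Rightarrow> 'n \<Rightarrow> 'n) \<Rightarrow> ('n \<Rightarrow> 'm \<Rightarrow> 'm)
    \<Rightarrow> ('m \<times> 'n \<times> bool \<times> bool \<Rightarrow> 'k) set" where
  "trels M N aMN aNM =
      {fminus (fsc c (dl (m, n, i, j))) (dl (sc M c m, n, i, j)) | c m n i j.
          m \<in> gr M i \<and> n \<in> gr N j}
    \<union> {fminus (fsc c (dl (m, n, i, j))) (dl (m, sc N c n, i, j)) | c m n i j.
          m \<in> gr M i \<and> n \<in> gr N j}
    \<union> {fminus (dl (ad M m m', n, i, j)) (fadd (dl (m, n, i, j)) (dl (m', n, i, j))) | m m' n i j.
          m \<in> gr M i \<and> m' \<in> gr M i \<and> n \<in> gr N j}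
    \<union> {fminus (dl (m, ad N n n', i, j)) (fadd (dl (m, n, i, j)) (dl (m, n', i, j))) | m n n' i j.
          m \<in> gr M i \<and> n \<in> gr N j \<and> n' \<in> gr N j}
    \<union> {fadd (fminus (dl (br M m m', n, i \<noteq> i', j)) (dl (m, aMN m' n, i, i' \<noteq> j)))
            (fsc (sg (i \<and> i')) (dl (m', aMN m n, i', i \<noteq> j))) | m m' n i i' j.
          m \<in> gr M i \<and> m' \<in> gr M i' \<and> n \<in> gr N j}
    \<union> {fadd (fminus (dl (m, br N n n', i, j \<noteq> j'))
                    (fsc (sg (j' \<and> (i \<noteq> j))) (dl (aNM n' m, n, i \<noteq> j', j))))
            (fsc (sg (i \<and> j)) (dl (aNM n m, n', i \<noteq> j, j'))) | m n n' i j j'.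
          m \<in> gr M i \<and> n \<in> gr N j \<and> n' \<in> gr N j'}"

text \<open>Subspaces K of the free vector space V on the generators such that V/K, with the
  bracket induced by [m \<otimes> n, m' \<otimes> n'] = -(-1)^(|m||n|) {}^n m \<otimes> {}^m' n', is a
  Lie superalgebra in which the linear relations hold.  The non-abelian tensor
  product (the Lie superalgebra presented by the generators and relations) is V/K
  for the smallest such K.\<close>
definition tgood :: "('m, 'k::field) lsa \<Rightarrow> ('n, 'k) lsa \<Rightarrow> ('m \<Rightarrow> 'n \<Rightarrow> 'n) \<Rightarrow> ('n \<Rightarrow> 'm \<Rightarrow> 'm)
    \<Rightarrow> ('m \<times> 'n \<times> bool \<times> bool \<Rightarrow> 'k) set \<Rightarrow> bool" where
  "tgood M N aMN aNM K \<longleftrightarrow>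
      K \<subseteq> fvs (tgens M N) \<and> fzero \<in> K
    \<and> (\<forall>x\<in>K. \<forall>y\<in>K. fadd x y \<in> K) \<and> (\<forall>c. \<forall>x\<in>K. fsc c x \<in> K)
    \<and> (\<forall>b. \<forall>x\<in>K. fproj tdeg b x \<in> K)
    \<and> trels M N aMN aNM \<subseteq> K
    \<and> (\<forall>f\<in>fvs (tgens M N). \<forall>k\<in>K. tbr aMN aNM f k \<in> K \<and> tbr aMN aNM k f \<in> K)
    \<and> (\<forall>a b. \<forall>f\<in>fvs_gr (tgens M N) tdeg a. \<forall>g\<in>fvs_gr (tgens M N) tdeg b.
         fadd (tbr aMN aNM f g) (fsc (sg (a \<and> b)) (tbr aMN aNM g f)) \<in> K)
    \<and> (\<forall>a b. \<forall>f\<in>fvs_gr (tgens M N) tdeg a. \<forall>g\<in>fvs_gr (tgens M N) tdeg b.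
         \<forall>h\<in>fvs (tgens M N).
         fminus (tbr aMN aNM f (tbr aMN aNM g h))
           (fadd (tbr aMN aNM (tbr aMN aNM f g) h)
                 (fsc (sg (a \<and> b)) (tbr aMN aNM g (tbr aMN aNM f h)))) \<in> K)"

definition tker :: "('m, 'k::field) lsa \<Rightarrow> ('n, 'k) lsa \<Rightarrow> ('m \<Rightarrow> 'n \<Rightarrow> 'n) \<Rightarrow> ('n \<Rightarrow> 'm \<Rightarrow> 'm)
    \<Rightarrow> ('m \<times> 'n \<times> bool \<times> bool \<Rightarrow> 'k) set" where
  "tker M N aMN aNM = \<Inter> {K. tgood M N aMN aNM K}"

definition tensor :: "('m, 'k::field) lsa \<Rightarrow> ('n, 'k) lsa \<Rightarrow> ('m \<Rightarrow> 'n \<Rightarrow> 'n) \<Rightarrow> ('n \<Rightarrow> 'm \<Rightarrow> 'm)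
    \<Rightarrow> (('m \<times> 'n \<times> bool \<times> bool \<Rightarrow> 'k) set, 'k) lsa" where
  "tensor M N aMN aNM =
     \<lparr> car = coset (tker M N aMN aNM) ` fvs (tgens M N),
       zr = coset (tker M N aMN aNM) fzero,
       ad = (\<lambda>X Y. coset (tker M N aMN aNM) (fadd (rep X) (rep Y))),
       sc = (\<lambda>c X. coset (tker M N aMN aNM) (fsc c (rep X))),
       br = (\<lambda>X Y. coset (tker M N aMN aNM) (tbr aMN aNM (rep X) (rep Y))),
       gr = (\<lambda>b. coset (tker M N aMN aNM) ` fvs_gr (tgens M N) tdeg b) \<rparr>"

definition tsym :: "('m, 'k::field) lsa \<Rightarrow> ('n, 'k) lsa \<Rightarrow> ('m \<Rightarrow> 'n \<Rightarrow> 'n) \<Rightarrow> ('n \<Rightarrow> 'm \<Rightarrow> 'm)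
    \<Rightarrow> 'm \<Rightarrow> 'n \<Rightarrow> bool \<Rightarrow> bool \<Rightarrow> ('m \<times> 'n \<times> bool \<times> bool \<Rightarrow> 'k) set" where
  "tsym M N aMN aNM m n i j = coset (tker M N aMN aNM) (dl (m, n, i, j))"

text \<open>The canonical homomorphism I \<otimes> M \<rightarrow> N \<otimes> M (I a graded ideal of N, with the restricted
  actions), x \<otimes> m \<mapsto> x \<otimes> m, exists and is trivial.\<close>
definition canon_trivial :: "('n, 'k::field) lsa \<Rightarrow> 'n set \<Rightarrow> ('m, 'k) lsa
    \<Rightarrow> ('n \<Rightarrow> 'm \<Rightarrow> 'm) \<Rightarrow> ('m \<Rightarrow> 'n \<Rightarrow> 'n) \<Rightarrow> bool" where
  "canon_trivial N I M aNM aMN \<longleftrightarrow>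
     (\<exists>\<phi>. hom (tensor (subalg N I) M aNM aMN) (tensor N M aNM aMN) \<phi>
        \<and> (\<forall>x m i j. x \<in> gr N i \<inter> I \<and> m \<in> gr M j \<longrightarrow>
             \<phi> (tsym (subalg N I) M aNM aMN x m i j) = tsym N M aNM aMN x m i j)
        \<and> (\<forall>X\<in>car (tensor (subalg N I) M aNM aMN). \<phi> X = zr (tensor N M aNM aMN)))"

end

theory Submission
  imports Defs
begin


definition fin :: "('g \<Rightarrow> 'k::zero) \<Rightarrow> bool" where
  "fin f \<longleftrightarrow> finite {x. f x \<noteq> 0}"

definition fmap :: "('g \<Rightarrow> 'h) \<Rightarrow> ('g \<Rightarrow> 'k::field) \<Rightarrow> ('g \<Rightarrow> 'k) \<Rightarrow> ('h \<Rightarrow> 'k)" where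
  "fmap g c f = (\<lambda>y. \<Sum>p\<in>{p. f p \<noteq> 0}. if g p = y then c p * f p else 0)"

lemma sum_supp:
  assumes "finite A" "{p. f p \<noteq> 0} \<subseteq> A" "\<And>p. f p = 0 \<Longrightarrow> F p = 0"
  shows "sum F {p. f p \<noteq> 0} = sum F A"
  by (rule sum.mono_neutral_left) (use assms in auto)

lemma fin_fadd: "fin f \<Longrightarrow> fin g \<Longrightarrow> fin (fadd f g)"
  unfolding fin_def fadd_def by (rule finite_subset[of _ "{x. f x \<noteq> 0} \<union> {x. g x \<noteq> 0}"]) auto
lemma fin_fsc: "fin f \<Longrightarrow> fin (fsc c f)"
  unfolding fin_def fsc_def by (rule finite_subset[of _ "{x. f x \<noteq> 0}"]) auto
lemma fin_fzero: "fin fzero" unfolding fin_def fzero_def by simp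
lemma fin_dl: "fin (dl p)" unfolding fin_def dl_def by simp
lemma fin_fminus: "fin f \<Longrightarrow> fin g \<Longrightarrow> fin (fminus f g)"
  unfolding fminus_def by (simp add: fin_fadd fin_fsc)
lemma fvs_fin: "f \<in> fvs G \<Longrightarrow> fin f" unfolding fvs_def fin_def by auto

lemma fvs_fadd: "f \<in> fvs G \<Longrightarrow> g \<in> fvs G \<Longrightarrow> fadd f g \<in> fvs G"
  using fin_fadd[of f g] unfolding fvs_def fin_def fadd_def by (auto, metis add.right_neutral)
lemma fvs_fsc: "f \<in> fvs G \<Longrightarrow> fsc c f \<in> fvs G"
  using fin_fsc[of f c] unfolding fvs_def fin_def fsc_def by auto
lemma fvs_fzero: "fzero \<in> fvs G" unfolding fvs_def fzero_def by simp
lemma fvs_dl: "p \<in> G \<Longrightarrow> dl p \<in> fvs G" unfolding fvs_def dl_def by auto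
lemma fvs_fminus: "f \<in> fvs G \<Longrightarrow> g \<in> fvs G \<Longrightarrow> fminus f g \<in> fvs G"
  unfolding fminus_def by (simp add: fvs_fadd fvs_fsc)
lemma fvs_fproj: "f \<in> fvs G \<Longrightarrow> fproj dg b f \<in> fvs G"
  unfolding fvs_def fproj_def by (auto elim: finite_subset[rotated])
lemma fvs_gr_sub: "fvs_gr G dg b \<subseteq> fvs G" unfolding fvs_gr_def by auto

lemma fvs_induct_aux:
  assumes "finite S" "\<And>x. f x \<noteq> 0 \<Longrightarrow> x \<in> S" "\<And>x. f x \<noteq> 0 \<Longrightarrow> x \<in> G"
    and z: "P fzero" and g: "\<And>c p. p \<in> G \<Longrightarrow> P (fsc c (dl p))"
    and a: "\<And>f g. f \<in> fvs G \<Longrightarrow> g \<in> fvs G \<Longrightarrow> P f \<Longrightarrow> P g \<Longrightarrow> P (fadd f g)"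
  shows "P f"
  using assms(1,2,3)
proof (induction S arbitrary: f rule: finite_induct)
  case empty
  then have "f = fzero" unfolding fzero_def by auto
  then show ?case using z by simp
next
  case (insert q S)
  define f' where "f' = f(q := 0)"
  have f'S: "\<And>x. f' x \<noteq> 0 \<Longrightarrow> x \<in> S" using insert(4) unfolding f'_def by (auto split: if_splits)
  have f'G: "\<And>x. f' x \<noteq> 0 \<Longrightarrow> x \<in> G" using insert(5) unfolding f'_def by (auto split: if_splits)
  have Pf': "P f'" using insert.IH f'S f'G by blast
  have fe: "f = fadd (fsc (f q) (dl q)) f'"
    unfolding fadd_def fsc_def dl_def f'_def by auto
  have f'v: "f' \<in> fvs G" unfolding fvs_def using f'S f'G insert(1)
    by (auto elim: finite_subset[rotated])
  show ?case
  proof (cases "f q = 0")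
    case True
    then have "f = f'" unfolding f'_def by auto
    then show ?thesis using Pf' by simp
  next
    case False
    then have qG: "q \<in> G" using insert(5) by auto
    have "P (fadd (fsc (f q) (dl q)) f')"
      by (rule a) (use qG f'v Pf' g fvs_fsc[OF fvs_dl[OF qG]] in auto)
    then show ?thesis using fe by simp
  qed
qed

lemma fvs_induct[consumes 1, case_names zero gen add]:
  assumes "f \<in> fvs G" and "P fzero" and "\<And>c p. p \<in> G \<Longrightarrow> P (fsc c (dl p))"
    and "\<And>f g. f \<in> fvs G \<Longrightarrow> g \<in> fvs G \<Longrightarrow> P f \<Longrightarrow> P g \<Longrightarrow> P (fadd f g)"
  shows "P f"
  using assms(1) by (intro fvs_induct_aux[of "{x. f x \<noteq> 0}" f G P]) (use assms in \<open>auto simp: fvs_def\<close>)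


lemma fmap_eq:
  assumes "finite A" "{p. f p \<noteq> 0} \<subseteq> A"
  shows "fmap g c f y = (\<Sum>p\<in>A. if g p = y then c p * f p else 0)"
  unfolding fmap_def by (rule sum_supp) (use assms in auto)

lemma fbil_eq:
  assumes "finite A" "{p. f p \<noteq> 0} \<subseteq> A" "finite B" "{q. h q \<noteq> 0} \<subseteq> B"
  shows "fbil b c f h x = (\<Sum>p\<in>A. \<Sum>q\<in>B. if b p q = x then f p * h q * c p q else 0)"
proof -
  have "fbil b c f h x = (\<Sum>p\<in>{p. f p \<noteq> 0}. \<Sum>q\<in>B. if b p q = x then f p * h q * c p q else 0)"
    unfolding fbil_def by (rule sum.cong[OF refl], rule sum_supp) (use assms in auto)
  also have "\<dots> = (\<Sum>p\<in>A. \<Sum>q\<in>B. if b p q = x then f p * h q * c p q else 0)"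
    by (rule sum_supp) (use assms in \<open>simp_all cong: if_cong\<close>)
  finally show ?thesis .
qed

lemma supp_fadd: "{p. fadd f g p \<noteq> 0} \<subseteq> {p. f p \<noteq> 0} \<union> {p. g p \<noteq> 0}"
  unfolding fadd_def by auto

lemma fmap_fadd:
  assumes "fin f" "fin f'"
  shows "fmap g c (fadd f f') = fadd (fmap g c f) (fmap g c f')"
proof
  fix y
  let ?A = "{p. f p \<noteq> 0} \<union> {p. f' p \<noteq> 0}"
  have fA: "finite ?A" using assms unfolding fin_def by auto
  have "fmap g c (fadd f f') y = (\<Sum>p\<in>?A. if g p = y then c p * fadd f f' p else 0)"
    by (rule fmap_eq[OF fA]) (use supp_fadd in \<open>auto simp: fadd_def\<close>)
  also have "\<dots> = (\<Sum>p\<in>?A. if g p = y then c p * f p else 0) + (\<Sum>p\<in>?A. if g p = y then c p * f' p else 0)"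
    unfolding fadd_def sum.distrib[symmetric] by (intro sum.cong refl) (simp add: distrib_left)
  also have "\<dots> = fmap g c f y + fmap g c f' y"
    by (simp add: fmap_eq[OF fA])
  finally show "fmap g c (fadd f f') y = fadd (fmap g c f) (fmap g c f') y" by (simp add: fadd_def)
qed

lemma fmap_fsc:
  assumes "fin f"
  shows "fmap g c (fsc d f) = fsc d (fmap g c f)"
proof
  fix y
  let ?A = "{p. f p \<noteq> 0}"
  have fA: "finite ?A" using assms unfolding fin_def by auto
  have "fmap g c (fsc d f) y = (\<Sum>p\<in>?A. if g p = y then c p * fsc d f p else 0)"
    by (rule fmap_eq[OF fA]) (auto simp: fsc_def)
  also have "\<dots> = (\<Sum>p\<in>?A. if g p = y then c p * (d * f p) else 0)" unfolding fsc_def by simp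
  also have "\<dots> = d * (\<Sum>p\<in>?A. if g p = y then c p * f p else 0)"
    by (simp add: sum_distrib_left; rule sum.cong; simp)
  finally show "fmap g c (fsc d f) y = fsc d (fmap g c f) y" by (simp add: fsc_def fmap_def)
qed

lemma fmap_fzero: "fmap g c fzero = fzero"
  unfolding fmap_def fzero_def by simp

lemma fmap_dl: fixes c :: "'g \<Rightarrow> 'k::field" shows "fmap g c (dl p) = fsc (c p) (dl (g p))"
proof
  fix y
  have "{q. dl p q \<noteq> (0::'k)} = {p}" unfolding dl_def by auto
  then show "fmap g c (dl p) y = fsc (c p) (dl (g p)) y"
    unfolding fmap_def by (simp add: dl_def fsc_def)
qed

lemma fmap_fminus: "fin f \<Longrightarrow> fin f' \<Longrightarrow> fmap g c (fminus f f') = fminus (fmap g c f) (fmap g c f')"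
  unfolding fminus_def by (simp add: fmap_fadd fmap_fsc fin_fsc)

lemma fmap_supp: "{y. fmap g c f y \<noteq> 0} \<subseteq> g ` {p. f p \<noteq> 0}"
proof
  fix y assume "y \<in> {y. fmap g c f y \<noteq> 0}"
  then have "(\<Sum>p\<in>{p. f p \<noteq> 0}. if g p = y then c p * f p else 0) \<noteq> 0" by (simp add: fmap_def)
  then obtain p where "f p \<noteq> 0" "(if g p = y then c p * f p else 0) \<noteq> 0"
    by (rule sum.not_neutral_contains_not_neutral) auto
  then have "f p \<noteq> 0" "g p = y" by (auto split: if_splits)
  then show "y \<in> g ` {p. f p \<noteq> 0}" by auto
qed

lemma fin_fmap: "fin f \<Longrightarrow> fin (fmap g c f)"
  unfolding fin_def by (rule finite_subset[OF fmap_supp], rule finite_imageI)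

lemma fvs_fmap: assumes "f \<in> fvs G" "\<And>p. p \<in> G \<Longrightarrow> g p \<in> H" shows "fmap g c f \<in> fvs H"
proof -
  have "fin (fmap g c f)" using fin_fmap fvs_fin assms(1) by blast
  moreover have "\<And>y. fmap g c f y \<noteq> 0 \<Longrightarrow> y \<in> H"
    using fmap_supp[of g c f] assms unfolding fvs_def by blast
  ultimately show ?thesis unfolding fvs_def fin_def by auto
qed

lemma fvs_gr_fmap: assumes "f \<in> fvs_gr G dg b" "\<And>p. p \<in> G \<Longrightarrow> g p \<in> H" "\<And>p. p \<in> G \<Longrightarrow> dg' (g p) = dg p"
  shows "fmap g c f \<in> fvs_gr H dg' b"
proof -
  have "f \<in> fvs G" using assms(1) unfolding fvs_gr_def by auto
  then have "fmap g c f \<in> fvs H" using fvs_fmap assms(2) by blast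
  moreover have "\<And>y. fmap g c f y \<noteq> 0 \<Longrightarrow> dg' y = b"
    using fmap_supp[of g c f] assms unfolding fvs_gr_def fvs_def by blast
  ultimately show ?thesis unfolding fvs_gr_def by auto
qed

lemma fbil_fadd1:
  assumes "fin f" "fin f'" "fin h"
  shows "fbil b c (fadd f f') h = fadd (fbil b c f h) (fbil b c f' h)"
proof
  fix x
  let ?A = "{p. f p \<noteq> 0} \<union> {p. f' p \<noteq> 0}" and ?B = "{q. h q \<noteq> 0}"
  have fA: "finite ?A" "finite ?B" using assms unfolding fin_def by auto
  have "fbil b c (fadd f f') h x = (\<Sum>p\<in>?A. \<Sum>q\<in>?B. if b p q = x then fadd f f' p * h q * c p q else 0)"
    by (rule fbil_eq) (use fA supp_fadd in \<open>auto simp: fadd_def\<close>)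
  also have "\<dots> = (\<Sum>p\<in>?A. \<Sum>q\<in>?B. if b p q = x then f p * h q * c p q else 0)
     + (\<Sum>p\<in>?A. \<Sum>q\<in>?B. if b p q = x then f' p * h q * c p q else 0)"
    unfolding fadd_def sum.distrib[symmetric] by (intro sum.cong refl) (simp add: distrib_right)
  also have "\<dots> = fbil b c f h x + fbil b c f' h x"
    by (simp add: fbil_eq[OF fA(1) _ fA(2)])
  finally show "fbil b c (fadd f f') h x = fadd (fbil b c f h) (fbil b c f' h) x" by (simp add: fadd_def)
qed

lemma fbil_fadd2:
  assumes "fin f" "fin h" "fin h'"
  shows "fbil b c f (fadd h h') = fadd (fbil b c f h) (fbil b c f h')"
proof
  fix x
  let ?A = "{p. f p \<noteq> 0}" and ?B = "{q. h q \<noteq> 0} \<union> {q. h' q \<noteq> 0}"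
  have fA: "finite ?A" "finite ?B" using assms unfolding fin_def by auto
  have "fbil b c f (fadd h h') x = (\<Sum>p\<in>?A. \<Sum>q\<in>?B. if b p q = x then f p * fadd h h' q * c p q else 0)"
    by (rule fbil_eq) (use fA supp_fadd in \<open>auto simp: fadd_def\<close>)
  also have "\<dots> = (\<Sum>p\<in>?A. \<Sum>q\<in>?B. if b p q = x then f p * h q * c p q else 0)
     + (\<Sum>p\<in>?A. \<Sum>q\<in>?B. if b p q = x then f p * h' q * c p q else 0)"
    unfolding fadd_def sum.distrib[symmetric] by (intro sum.cong refl) (simp add: distrib_right distrib_left)
  also have "\<dots> = fbil b c f h x + fbil b c f h' x"
    by (simp add: fbil_eq[OF fA(1) _ fA(2)])
  finally show "fbil b c f (fadd h h') x = fadd (fbil b c f h) (fbil b c f h') x" by (simp add: fadd_def)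
qed

lemma fbil_fsc1:
  assumes "fin f" "fin h"
  shows "fbil b c (fsc d f) h = fsc d (fbil b c f h)"
proof
  fix x
  let ?A = "{p. f p \<noteq> 0}" and ?B = "{q. h q \<noteq> 0}"
  have fA: "finite ?A" "finite ?B" using assms unfolding fin_def by auto
  have "fbil b c (fsc d f) h x = (\<Sum>p\<in>?A. \<Sum>q\<in>?B. if b p q = x then fsc d f p * h q * c p q else 0)"
    by (rule fbil_eq) (use fA in \<open>auto simp: fsc_def\<close>)
  also have "\<dots> = (\<Sum>p\<in>?A. \<Sum>q\<in>?B. d * (if b p q = x then f p * h q * c p q else 0))"
    by (intro sum.cong refl) (simp add: fsc_def)
  also have "\<dots> = d * (\<Sum>p\<in>?A. \<Sum>q\<in>?B. if b p q = x then f p * h q * c p q else 0)"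
    by (simp add: sum_distrib_left)
  also have "\<dots> = d * fbil b c f h x" by (simp add: fbil_eq[OF fA(1) _ fA(2)])
  finally show "fbil b c (fsc d f) h x = fsc d (fbil b c f h) x" by (simp add: fsc_def)
qed

lemma fbil_fsc2:
  assumes "fin f" "fin h"
  shows "fbil b c f (fsc d h) = fsc d (fbil b c f h)"
proof
  fix x
  let ?A = "{p. f p \<noteq> 0}" and ?B = "{q. h q \<noteq> 0}"
  have fA: "finite ?A" "finite ?B" using assms unfolding fin_def by auto
  have "fbil b c f (fsc d h) x = (\<Sum>p\<in>?A. \<Sum>q\<in>?B. if b p q = x then f p * fsc d h q * c p q else 0)"
    by (rule fbil_eq) (use fA in \<open>auto simp: fsc_def\<close>)
  also have "\<dots> = (\<Sum>p\<in>?A. \<Sum>q\<in>?B. d * (if b p q = x then f p * h q * c p q else 0))"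
    by (intro sum.cong refl) (simp add: fsc_def)
  also have "\<dots> = d * (\<Sum>p\<in>?A. \<Sum>q\<in>?B. if b p q = x then f p * h q * c p q else 0)"
    by (simp add: sum_distrib_left)
  also have "\<dots> = d * fbil b c f h x" by (simp add: fbil_eq[OF fA(1) _ fA(2)])
  finally show "fbil b c f (fsc d h) x = fsc d (fbil b c f h) x" by (simp add: fsc_def)
qed

lemma fbil_fzero1: "fbil b c fzero h = fzero" unfolding fbil_def fzero_def by simp
lemma fbil_fzero2: "fbil b c f fzero = fzero" unfolding fbil_def fzero_def by simp

lemma fbil_dl: fixes c :: "'g \<Rightarrow> 'g \<Rightarrow> 'k::field" shows "fbil b c (dl p) (dl q) = fsc (c p q) (dl (b p q))"
proof
  fix x
  have s: "\<And>p. {q. dl p q \<noteq> (0::'k)} = {p}" unfolding dl_def by auto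
  show "fbil b c (dl p) (dl q) x = fsc (c p q) (dl (b p q)) x"
    unfolding fbil_def s by (simp add: dl_def fsc_def)
qed

lemma fbil_supp: "{x. fbil b c f h x \<noteq> 0} \<subseteq> (\<lambda>(p,q). b p q) ` ({p. f p \<noteq> 0} \<times> {q. h q \<noteq> 0})"
proof
  fix x assume "x \<in> {x. fbil b c f h x \<noteq> 0}"
  then have "(\<Sum>p\<in>{p. f p \<noteq> 0}. \<Sum>q\<in>{q. h q \<noteq> 0}. if b p q = x then f p * h q * c p q else 0) \<noteq> 0"
    by (simp add: fbil_def)
  then obtain p where p: "f p \<noteq> 0" "(\<Sum>q\<in>{q. h q \<noteq> 0}. if b p q = x then f p * h q * c p q else 0) \<noteq> 0"
    by (rule sum.not_neutral_contains_not_neutral) auto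
  from p(2) obtain q where "h q \<noteq> 0" "(if b p q = x then f p * h q * c p q else 0) \<noteq> 0"
    by (rule sum.not_neutral_contains_not_neutral) auto
  then have "h q \<noteq> 0" "b p q = x" by (auto split: if_splits)
  then show "x \<in> (\<lambda>(p,q). b p q) ` ({p. f p \<noteq> 0} \<times> {q. h q \<noteq> 0})" using p
    by (intro image_eqI[where x="(p,q)"]) auto
qed

lemma fin_fbil: "fin f \<Longrightarrow> fin h \<Longrightarrow> fin (fbil b c f h)"
  unfolding fin_def by (rule finite_subset[OF fbil_supp], intro finite_imageI finite_SigmaI)

lemma fvs_fbil: assumes "f \<in> fvs G" "h \<in> fvs G" "\<And>p q. p \<in> G \<Longrightarrow> q \<in> G \<Longrightarrow> b p q \<in> G"
  shows "fbil b c f h \<in> fvs G"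
proof -
  have "fin (fbil b c f h)" using fin_fbil fvs_fin assms by blast
  moreover have "y \<in> G" if "fbil b c f h y \<noteq> 0" for y
  proof -
    have "y \<in> (\<lambda>(p,q). b p q) ` ({p. f p \<noteq> 0} \<times> {q. h q \<noteq> 0})" using fbil_supp[of b c f h] that by blast
    then obtain p q where "f p \<noteq> 0" "h q \<noteq> 0" "y = b p q" by auto
    then show ?thesis using assms unfolding fvs_def by auto
  qed
  ultimately show ?thesis unfolding fvs_def fin_def by auto
qed

lemma fproj_fadd: "fproj dg b (fadd f g) = fadd (fproj dg b f) (fproj dg b g)"
  unfolding fproj_def fadd_def by auto
lemma fproj_fsc: "fproj dg b (fsc c f) = fsc c (fproj dg b f)"
  unfolding fproj_def fsc_def by auto
lemma fproj_fzero: "fproj dg b fzero = fzero"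
  unfolding fproj_def fzero_def by auto
lemma fproj_dl: "fproj dg b (dl p) = (if dg p = b then dl p else fzero)"
  unfolding fproj_def dl_def fzero_def by auto


definition kcl :: "('g \<Rightarrow> 'k::field) set \<Rightarrow> bool" where
  "kcl K \<longleftrightarrow> fzero \<in> K \<and> (\<forall>x\<in>K. \<forall>y\<in>K. fadd x y \<in> K) \<and> (\<forall>c. \<forall>x\<in>K. fsc c x \<in> K)"

definition cg :: "('g \<Rightarrow> 'k::field) set \<Rightarrow> ('g \<Rightarrow> 'k) \<Rightarrow> ('g \<Rightarrow> 'k) \<Rightarrow> bool" where
  "cg K f g \<longleftrightarrow> fminus f g \<in> K"

lemma fminus_self: "fminus f f = fzero" unfolding fminus_def fadd_def fsc_def fzero_def by simp
lemma fminus_swap: "fminus g f = fsc (-1) (fminus f g)" unfolding fminus_def fadd_def fsc_def by (auto simp: algebra_simps)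
lemma fminus_trans: "fminus f h = fadd (fminus f g) (fminus g h)" unfolding fminus_def fadd_def fsc_def by (auto simp: algebra_simps)
lemma fminus_add: "fminus (fadd f f') (fadd g g') = fadd (fminus f g) (fminus f' g')"
  unfolding fminus_def fadd_def fsc_def by (auto simp: algebra_simps)
lemma fminus_sc: "fminus (fsc c f) (fsc c g) = fsc c (fminus f g)"
  unfolding fminus_def fadd_def fsc_def by (auto simp: algebra_simps)
lemma fminus_rec: "f = fadd (fminus f g) g"
  unfolding fminus_def fadd_def fsc_def by (auto simp: algebra_simps)

lemma kcl_zero: "kcl K \<Longrightarrow> fzero \<in> K" unfolding kcl_def by auto
lemma kcl_add: "kcl K \<Longrightarrow> x \<in> K \<Longrightarrow> y \<in> K \<Longrightarrow> fadd x y \<in> K" unfolding kcl_def by auto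
lemma kcl_sc: "kcl K \<Longrightarrow> x \<in> K \<Longrightarrow> fsc c x \<in> K" unfolding kcl_def by auto
lemma kcl_minus: "kcl K \<Longrightarrow> x \<in> K \<Longrightarrow> y \<in> K \<Longrightarrow> fminus x y \<in> K"
  unfolding fminus_def by (simp add: kcl_add kcl_sc)

lemma cg_refl: "kcl K \<Longrightarrow> cg K f f" unfolding cg_def fminus_self by (rule kcl_zero)
lemma cg_sym: "kcl K \<Longrightarrow> cg K f g \<Longrightarrow> cg K g f" unfolding cg_def
  by (subst fminus_swap) (rule kcl_sc)
lemma cg_trans: "kcl K \<Longrightarrow> cg K f g \<Longrightarrow> cg K g h \<Longrightarrow> cg K f h" unfolding cg_def
  by (subst fminus_trans[of _ _ g]) (rule kcl_add)
lemma cg_add: "kcl K \<Longrightarrow> cg K f g \<Longrightarrow> cg K f' g' \<Longrightarrow> cg K (fadd f f') (fadd g g')" unfolding cg_def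
  by (subst fminus_add) (rule kcl_add)
lemma cg_sc: "kcl K \<Longrightarrow> cg K f g \<Longrightarrow> cg K (fsc c f) (fsc c g)" unfolding cg_def
  by (subst fminus_sc) (rule kcl_sc)
lemma cg_mem: "kcl K \<Longrightarrow> cg K f g \<Longrightarrow> g \<in> K \<Longrightarrow> f \<in> K" unfolding cg_def
  by (subst fminus_rec[of f g]) (rule kcl_add)
lemma cg_zero: "kcl K \<Longrightarrow> f \<in> K \<Longrightarrow> cg K f fzero"
  unfolding cg_def by (simp add: fminus_def fadd_def fsc_def fzero_def)

lemma coset_cg: assumes "kcl K" "cg K f g" shows "coset K f = coset K g"
proof -
  have *: "coset K f \<subseteq> coset K g" if "cg K f g" for f g
  proof
    fix x assume "x \<in> coset K f"
    then obtain k where k: "k \<in> K" "x = fadd f k" unfolding coset_def by auto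
    have "x = fadd g (fadd (fminus f g) k)" unfolding k(2) fadd_def fminus_def fsc_def by auto
    moreover have "fadd (fminus f g) k \<in> K" using that k assms(1) unfolding cg_def by (simp add: kcl_add)
    ultimately show "x \<in> coset K g" unfolding coset_def by auto
  qed
  show ?thesis using *[OF assms(2)] *[OF cg_sym[OF assms]] by auto
qed

lemma self_in_coset: "kcl K \<Longrightarrow> f \<in> coset K f"
  unfolding coset_def using kcl_zero[of K] by (auto intro!: exI[of _ fzero] simp: fadd_def fzero_def)

lemma coset_eq_cg: assumes "kcl K" "coset K f = coset K g" shows "cg K f g"
proof -
  have "f \<in> coset K g" using self_in_coset[OF assms(1)] assms(2) by auto
  then obtain k where "k \<in> K" "f = fadd g k" unfolding coset_def by auto
  moreover have "fminus (fadd g k) g = k" unfolding fminus_def fadd_def fsc_def by auto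
  ultimately show ?thesis unfolding cg_def by simp
qed

lemma rep_cg: assumes "kcl K" shows "cg K (rep (coset K f)) f"
proof -
  have "rep (coset K f) \<in> coset K f" unfolding rep_def using self_in_coset[OF assms, of f] by (rule someI[of "\<lambda>x. x \<in> coset K f"])
  then obtain k where "k \<in> K" "rep (coset K f) = fadd f k" unfolding coset_def by auto
  moreover have "fminus (fadd f k) f = k" unfolding fminus_def fadd_def fsc_def by auto
  ultimately show ?thesis unfolding cg_def by simp
qed

lemma rep_fvs: assumes "kcl K" "K \<subseteq> fvs G" "f \<in> fvs G" shows "rep (coset K f) \<in> fvs G"
proof -
  have "rep (coset K f) \<in> coset K f" unfolding rep_def using self_in_coset[OF assms(1), of f] by (rule someI[of "\<lambda>x. x \<in> coset K f"])
  then obtain k where "k \<in> K" "rep (coset K f) = fadd f k" unfolding coset_def by auto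
  then show ?thesis using assms by (auto intro!: fvs_fadd)
qed

lemma cg_fvs: "kcl K \<Longrightarrow> K \<subseteq> fvs G \<Longrightarrow> cg K f g \<Longrightarrow> g \<in> fvs G \<Longrightarrow> f \<in> fvs G"
  unfolding cg_def by (subst fminus_rec[of f g]) (auto intro: fvs_fadd)

lemma coset_rep: assumes "kcl K" shows "coset K (rep (coset K f)) = coset K f"
  using coset_cg[OF assms rep_cg[OF assms]] .

context fixes M :: "('m, 'k::field) lsa" and N :: "('n, 'k) lsa" and aMN :: "'m \<Rightarrow> 'n \<Rightarrow> 'n" and aNM :: "'n \<Rightarrow> 'm \<Rightarrow> 'm"
begin

lemma tk_intro: "(\<And>K. tgood M N aMN aNM K \<Longrightarrow> x \<in> K) \<Longrightarrow> x \<in> tker M N aMN aNM"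
  unfolding tker_def by blast
lemma tk_D: "x \<in> tker M N aMN aNM \<Longrightarrow> tgood M N aMN aNM K \<Longrightarrow> x \<in> K"
  unfolding tker_def by blast

lemma tk_kcl: "kcl (tker M N aMN aNM)"
proof -
  have "fzero \<in> tker M N aMN aNM"
    by (rule tk_intro) (unfold tgood_def, elim conjE, assumption)
  moreover have "fadd x y \<in> tker M N aMN aNM" if "x \<in> tker M N aMN aNM" "y \<in> tker M N aMN aNM" for x y
  proof (rule tk_intro)
    fix K assume g: "tgood M N aMN aNM K"
    have "x \<in> K" "y \<in> K" using tk_D that g by auto
    moreover have "\<forall>x\<in>K. \<forall>y\<in>K. fadd x y \<in> K" using g unfolding tgood_def by (elim conjE) assumption
    ultimately show "fadd x y \<in> K" by auto
  qed
  moreover have "fsc c x \<in> tker M N aMN aNM" if "x \<in> tker M N aMN aNM" for x c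
  proof (rule tk_intro)
    fix K assume g: "tgood M N aMN aNM K"
    have "x \<in> K" using tk_D that g by auto
    moreover have "\<forall>c. \<forall>x\<in>K. fsc c x \<in> K" using g unfolding tgood_def by (elim conjE) assumption
    ultimately show "fsc c x \<in> K" by auto
  qed
  ultimately show ?thesis unfolding kcl_def by auto
qed

lemma tk_zero: "fzero \<in> tker M N aMN aNM" using tk_kcl kcl_zero by auto

lemma tk_proj: assumes "x \<in> tker M N aMN aNM" shows "fproj tdeg b x \<in> tker M N aMN aNM"
proof (rule tk_intro)
  fix K assume g: "tgood M N aMN aNM K"
  have "x \<in> K" using tk_D assms g by auto
  moreover have "\<forall>b. \<forall>x\<in>K. fproj tdeg b x \<in> K" using g unfolding tgood_def by (elim conjE) assumption
  ultimately show "fproj tdeg b x \<in> K" by auto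
qed

lemma tk_rels: assumes "r \<in> trels M N aMN aNM" shows "r \<in> tker M N aMN aNM"
proof (rule tk_intro)
  fix K assume g: "tgood M N aMN aNM K"
  have "trels M N aMN aNM \<subseteq> K" using g unfolding tgood_def by (elim conjE) assumption
  then show "r \<in> K" using assms by auto
qed

lemma tk_br: assumes "f \<in> fvs (tgens M N)" "k \<in> tker M N aMN aNM"
  shows "tbr aMN aNM f k \<in> tker M N aMN aNM" "tbr aMN aNM k f \<in> tker M N aMN aNM"
proof -
  have *: "tbr aMN aNM f k \<in> K \<and> tbr aMN aNM k f \<in> K" if g: "tgood M N aMN aNM K" for K
  proof -
    have "k \<in> K" using tk_D assms g by auto
    moreover have "\<forall>f\<in>fvs (tgens M N). \<forall>k\<in>K. tbr aMN aNM f k \<in> K \<and> tbr aMN aNM k f \<in> K"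
      using g unfolding tgood_def by (elim conjE) assumption
    ultimately show ?thesis using assms(1) by auto
  qed
  show "tbr aMN aNM f k \<in> tker M N aMN aNM" by (rule tk_intro) (use * in auto)
  show "tbr aMN aNM k f \<in> tker M N aMN aNM" by (rule tk_intro) (use * in auto)
qed

lemma tk_anti: assumes "f \<in> fvs_gr (tgens M N) tdeg a" "g \<in> fvs_gr (tgens M N) tdeg b"
  shows "fadd (tbr aMN aNM f g) (fsc (sg (a \<and> b)) (tbr aMN aNM g f)) \<in> tker M N aMN aNM"
proof (rule tk_intro)
  fix K assume g: "tgood M N aMN aNM K"
  have "\<forall>a b. \<forall>f\<in>fvs_gr (tgens M N) tdeg a. \<forall>g\<in>fvs_gr (tgens M N) tdeg b.
         fadd (tbr aMN aNM f g) (fsc (sg (a \<and> b)) (tbr aMN aNM g f)) \<in> K"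
    using g unfolding tgood_def by (elim conjE) assumption
  then show "fadd (tbr aMN aNM f g) (fsc (sg (a \<and> b)) (tbr aMN aNM g f)) \<in> K" using assms by auto
qed

lemma tk_jac: assumes "f \<in> fvs_gr (tgens M N) tdeg a" "g \<in> fvs_gr (tgens M N) tdeg b" "h \<in> fvs (tgens M N)"
  shows "fminus (tbr aMN aNM f (tbr aMN aNM g h))
           (fadd (tbr aMN aNM (tbr aMN aNM f g) h)
                 (fsc (sg (a \<and> b)) (tbr aMN aNM g (tbr aMN aNM f h)))) \<in> tker M N aMN aNM"
proof (rule tk_intro)
  fix K assume g: "tgood M N aMN aNM K"
  have "\<forall>a b. \<forall>f\<in>fvs_gr (tgens M N) tdeg a. \<forall>g\<in>fvs_gr (tgens M N) tdeg b.
         \<forall>h\<in>fvs (tgens M N).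
         fminus (tbr aMN aNM f (tbr aMN aNM g h))
           (fadd (tbr aMN aNM (tbr aMN aNM f g) h)
                 (fsc (sg (a \<and> b)) (tbr aMN aNM g (tbr aMN aNM f h)))) \<in> K"
    using g unfolding tgood_def by (elim conjE) assumption
  then show "fminus (tbr aMN aNM f (tbr aMN aNM g h))
           (fadd (tbr aMN aNM (tbr aMN aNM f g) h)
                 (fsc (sg (a \<and> b)) (tbr aMN aNM g (tbr aMN aNM f h)))) \<in> K" using assms by auto
qed

lemma tk_sub: "tgood M N aMN aNM (fvs (tgens M N)) \<Longrightarrow> tker M N aMN aNM \<subseteq> fvs (tgens M N)"
  using tk_D by blast

end


context fixes V :: "('a, 'k::field) lsa" assumes vs: "vector_space V"
begin

lemma v_add_car: "x \<in> car V \<Longrightarrow> y \<in> car V \<Longrightarrow> ad V x y \<in> car V"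
  using vs unfolding vector_space_def subspace_def by auto
lemma v_sc_car: "x \<in> car V \<Longrightarrow> sc V c x \<in> car V"
  using vs unfolding vector_space_def subspace_def by auto
lemma v_zr_car: "zr V \<in> car V"
  using vs unfolding vector_space_def subspace_def by auto
lemma v_assoc: "x \<in> car V \<Longrightarrow> y \<in> car V \<Longrightarrow> z \<in> car V \<Longrightarrow> ad V (ad V x y) z = ad V x (ad V y z)"
  using vs unfolding vector_space_def by auto
lemma v_comm: "x \<in> car V \<Longrightarrow> y \<in> car V \<Longrightarrow> ad V x y = ad V y x"
  using vs unfolding vector_space_def by auto
lemma v_zl: "x \<in> car V \<Longrightarrow> ad V (zr V) x = x"
  using vs unfolding vector_space_def by auto
lemma v_zr: "x \<in> car V \<Longrightarrow> ad V x (zr V) = x"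
  using v_zl v_comm v_zr_car by metis
lemma v_inv: "x \<in> car V \<Longrightarrow> ad V x (sc V (-1) x) = zr V"
  using vs unfolding vector_space_def by auto
lemma v_sc_add: "x \<in> car V \<Longrightarrow> y \<in> car V \<Longrightarrow> sc V c (ad V x y) = ad V (sc V c x) (sc V c y)"
  using vs unfolding vector_space_def by auto
lemma v_add_sc: "x \<in> car V \<Longrightarrow> sc V (c + d) x = ad V (sc V c x) (sc V d x)"
  using vs unfolding vector_space_def by auto
lemma v_sc_sc: "x \<in> car V \<Longrightarrow> sc V c (sc V d x) = sc V (c * d) x"
  using vs unfolding vector_space_def by auto
lemma v_sc1: "x \<in> car V \<Longrightarrow> sc V 1 x = x"
  using vs unfolding vector_space_def by auto
lemma v_sc0: "x \<in> car V \<Longrightarrow> sc V 0 x = zr V"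
proof -
  assume x: "x \<in> car V"
  have "sc V 0 x = sc V (1 + -1) x" by simp
  also have "\<dots> = ad V (sc V 1 x) (sc V (-1) x)" by (rule v_add_sc[OF x])
  also have "\<dots> = ad V x (sc V (-1) x)" using v_sc1[OF x] by simp
  finally show ?thesis using v_inv[OF x] by simp
qed
lemma v_sc_zr: "sc V c (zr V) = zr V"
  using v_sc_sc[OF v_zr_car, of c 0] v_sc0[OF v_zr_car] by simp

lemma v_swap4: "x \<in> car V \<Longrightarrow> y \<in> car V \<Longrightarrow> z \<in> car V \<Longrightarrow> w \<in> car V \<Longrightarrow>
   ad V (ad V x y) (ad V z w) = ad V (ad V x z) (ad V y w)"
proof -
  assume a: "x \<in> car V" "y \<in> car V" "z \<in> car V" "w \<in> car V"
  have "ad V (ad V x y) (ad V z w) = ad V x (ad V y (ad V z w))" using a by (simp add: v_assoc v_add_car)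
  also have "ad V y (ad V z w) = ad V z (ad V y w)"
    using a by (metis v_assoc v_comm)
  also have "ad V x (ad V z (ad V y w)) = ad V (ad V x z) (ad V y w)" using a by (simp add: v_assoc v_add_car)
  finally show ?thesis .
qed

lemma v_cancel: "u \<in> car V \<Longrightarrow> v \<in> car V \<Longrightarrow> ad V u (sc V (-1) v) = zr V \<Longrightarrow> u = v"
proof -
  assume a: "u \<in> car V" "v \<in> car V" "ad V u (sc V (-1) v) = zr V"
  have "u = ad V u (zr V)" using a by (simp add: v_zr)
  also have "zr V = ad V (sc V (-1) v) v" using a v_inv[of v] by (simp add: v_comm v_sc_car)
  also have "ad V u (ad V (sc V (-1) v) v) = ad V (ad V u (sc V (-1) v)) v"
    by (rule v_assoc[symmetric]) (use a v_sc_car in auto)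
  finally show ?thesis using a by (simp add: v_zl)
qed

end

definition lcomb :: "('a, 'k::field) lsa \<Rightarrow> ('k \<times> 'a) list \<Rightarrow> 'a" where
  "lcomb V xs = foldr (\<lambda>(c, x) acc. ad V (sc V c x) acc) xs (zr V)"

definition ind :: "'a \<Rightarrow> 'a \<Rightarrow> 'k::field" where
  "ind x a = (if x = a then 1 else 0)"

definition coef :: "('k::field \<times> 'a) list \<Rightarrow> 'a \<Rightarrow> 'k" where
  "coef xs a = sum_list (map (\<lambda>(c, x). c * ind x a) xs)"

lemma lcomb_Nil[simp]: "lcomb V [] = zr V" unfolding lcomb_def by simp
lemma lcomb_Cons[simp]: "lcomb V ((c, x) # xs) = ad V (sc V c x) (lcomb V xs)" unfolding lcomb_def by simp
lemma coef_Nil[simp]: "coef [] a = 0" unfolding coef_def by simp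
lemma coef_Cons[simp]: "coef ((c, x) # xs) a = c * ind x a + coef xs a" unfolding coef_def by simp
lemma coef_append[simp]: "coef (xs @ ys) a = coef xs a + coef ys a" unfolding coef_def by simp
lemma coef_map_neg[simp]: "coef (map (\<lambda>(d, x). (- d, x)) xs) a = - coef xs a"
  by (induction xs) (auto simp: algebra_simps)
lemma coef_map_sc[simp]: "coef (map (\<lambda>(d, x). (c * d, x)) xs) a = c * coef xs a"
  by (induction xs) (auto simp: algebra_simps)

context fixes V :: "('a, 'k::field) lsa" assumes vs: "vector_space V"
begin

lemma lc_car: "snd ` set xs \<subseteq> car V \<Longrightarrow> lcomb V xs \<in> car V"
  by (induction xs) (auto simp: v_add_car[OF vs] v_sc_car[OF vs] v_zr_car[OF vs])

lemma lc_append: "snd ` set xs \<subseteq> car V \<Longrightarrow> snd ` set ys \<subseteq> car V \<Longrightarrow>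
   ad V (lcomb V xs) (lcomb V ys) = lcomb V (xs @ ys)"
proof (induction xs)
  case Nil then show ?case by (simp add: v_zl[OF vs] lc_car)
next
  case (Cons a xs)
  obtain c x where a: "a = (c, x)" by force
  show ?case using Cons by (simp add: a v_assoc[OF vs] v_sc_car[OF vs] lc_car)
qed

lemma lc_sc: "snd ` set xs \<subseteq> car V \<Longrightarrow> sc V c (lcomb V xs) = lcomb V (map (\<lambda>(d, x). (c * d, x)) xs)"
proof (induction xs)
  case Nil then show ?case by (simp add: v_sc_zr[OF vs])
next
  case (Cons a xs)
  obtain d x where a: "a = (d, x)" by force
  show ?case using Cons by (simp add: a v_sc_add[OF vs] v_sc_car[OF vs] lc_car v_sc_sc[OF vs])
qed

lemma lc_single: "x \<in> car V \<Longrightarrow> lcomb V [(1, x)] = x"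
  by (simp add: v_sc1[OF vs] v_zr[OF vs])

lemma lc_split: "snd ` set xs \<subseteq> car V \<Longrightarrow> a \<in> car V \<Longrightarrow>
  lcomb V xs = ad V (sc V (coef xs a) a) (lcomb V (filter (\<lambda>(c, x). x \<noteq> a) xs))"
proof (induction xs)
  case Nil then show ?case by (simp add: v_sc0[OF vs] v_zl[OF vs] v_zr_car[OF vs])
next
  case (Cons y xs)
  obtain c x where y: "y = (c, x)" by force
  have IH: "lcomb V xs = ad V (sc V (coef xs a) a) (lcomb V (filter (\<lambda>(c, x). x \<noteq> a) xs))"
    using Cons by auto
  have xc: "x \<in> car V" "snd ` set xs \<subseteq> car V" using Cons(2) y by auto
  have fc: "snd ` set (filter (\<lambda>(c, x). x \<noteq> a) xs) \<subseteq> car V" using xc(2) by auto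
  note cs = v_sc_car[OF vs] lc_car[OF xc(2)] lc_car[OF fc] xc(1) Cons(3)
  show ?case
  proof (cases "x = a")
    case True
    have "lcomb V (y # xs) = ad V (sc V c a) (ad V (sc V (coef xs a) a) (lcomb V (filter (\<lambda>(c, x). x \<noteq> a) xs)))"
      using IH True y by simp
    also have "\<dots> = ad V (sc V (c + coef xs a) a) (lcomb V (filter (\<lambda>(c, x). x \<noteq> a) xs))"
      using cs by (simp add: v_assoc[OF vs, symmetric] v_add_sc[OF vs])
    finally show ?thesis using True y by (simp add: ind_def)
  next
    case False
    have "lcomb V (y # xs) = ad V (sc V c x) (ad V (sc V (coef xs a) a) (lcomb V (filter (\<lambda>(c, x). x \<noteq> a) xs)))"
      using IH y by simp
    also have "\<dots> = ad V (sc V (coef xs a) a) (ad V (sc V c x) (lcomb V (filter (\<lambda>(c, x). x \<noteq> a) xs)))"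
      using cs by (metis v_assoc[OF vs] v_comm[OF vs])
    finally show ?thesis using False y by (simp add: ind_def)
  qed
qed

lemma lc_zero: "snd ` set xs \<subseteq> car V \<Longrightarrow> (\<forall>a. coef xs a = 0) \<Longrightarrow> lcomb V xs = zr V"
proof (induction "length xs" arbitrary: xs rule: less_induct)
  case less
  show ?case
  proof (cases xs)
    case Nil then show ?thesis by simp
  next
    case (Cons y ys)
    obtain c a where y: "y = (c, a)" by force
    have ac: "a \<in> car V" using less(2) Cons y by auto
    let ?f = "filter (\<lambda>(c, x). x \<noteq> a) xs"
    have fc: "snd ` set ?f \<subseteq> car V" using less(2) by auto
    have "length ?f < length xs" using Cons y by (simp add: le_imp_less_Suc)
    moreover have "\<forall>b. coef ?f b = 0"
    proof
      fix b
      have "coef ?f b = (if b = a then 0 else coef xs b)"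
        by (induction xs) (auto simp: ind_def)
      then show "coef ?f b = 0" using less(3) by simp
    qed
    ultimately have "lcomb V ?f = zr V" using less(1) fc by blast
    then show ?thesis using lc_split[OF less(2) ac] less(3) ac
      by (simp add: v_sc0[OF vs] v_zl[OF vs] v_zr_car[OF vs])
  qed
qed

lemma lc_eq: assumes "snd ` set xs \<subseteq> car V" "snd ` set ys \<subseteq> car V" "\<forall>a. coef xs a = coef ys a"
  shows "lcomb V xs = lcomb V ys"
proof (rule v_cancel[OF vs])
  show "lcomb V xs \<in> car V" "lcomb V ys \<in> car V" using assms lc_car by auto
  have s: "snd ` set (map (\<lambda>(d, x). (- d, x)) ys) \<subseteq> car V" using assms(2) by auto
  have "ad V (lcomb V xs) (sc V (-1) (lcomb V ys)) = lcomb V (xs @ map (\<lambda>(d, x). (- d, x)) ys)"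
    using assms by (simp add: lc_sc lc_append[OF _ s])
  also have "\<dots> = zr V" by (rule lc_zero) (use assms s in auto)
  finally show "ad V (lcomb V xs) (sc V (-1) (lcomb V ys)) = zr V" .
qed

lemma lc_lsub: "snd ` set xs \<subseteq> car V \<Longrightarrow> snd ` set ys \<subseteq> car V \<Longrightarrow>
   lsub V (lcomb V xs) (lcomb V ys) = lcomb V (xs @ map (\<lambda>(d, x). (- d, x)) ys)"
  unfolding lsub_def by (simp add: lc_sc, rule lc_append) auto

end


lemma sg_sq: "sg b * sg b = (1::'k::field)" by (simp add: sg_def)

lemma cross_id:
  assumes vs: "vector_space V" and c: "P1 \<in> car V" "Q1 \<in> car V" "P2 \<in> car V" "Q2 \<in> car V" "X2 \<in> car V" "Y2 \<in> car V"
  shows "ad V (lsub V P1 (sc V (sg b) Q1)) (lsub V P2 (sc V (sg b) Q2)) =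
    lsub V (ad V (ad V P1 (sc V (sg b) Y2)) (ad V X2 P2)) (sc V (sg b) (ad V (ad V Q1 (sc V (sg b) X2)) (ad V Y2 Q2)))"
proof -
  let ?L = "\<lambda>x. lcomb V [(1, x)]"
  have "ad V (lsub V (?L P1) (sc V (sg b) (?L Q1))) (lsub V (?L P2) (sc V (sg b) (?L Q2))) =
    lsub V (ad V (ad V (?L P1) (sc V (sg b) (?L Y2))) (ad V (?L X2) (?L P2))) (sc V (sg b) (ad V (ad V (?L Q1) (sc V (sg b) (?L X2))) (ad V (?L Y2) (?L Q2))))"
    apply (simp only: lc_sc[OF vs] lc_append[OF vs] lc_lsub[OF vs] set_simps set_append set_map image_insert image_empty image_Un insert_subset empty_subsetI c simp_thms snd_conv map_append list.map prod.case append.simps)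
    apply (rule lc_eq[OF vs])
      apply (simp_all add: c)
    apply (cases b) apply (simp_all add: sg_def algebra_simps)
    done
  then show ?thesis using c by (simp only: lc_single[OF vs] c)
qed


lemma fin_tbr: "fin f \<Longrightarrow> fin h \<Longrightarrow> fin (tbr a b f h)" unfolding tbr_def by (rule fin_fbil)
lemma tbr_fadd1: "fin f \<Longrightarrow> fin f' \<Longrightarrow> fin h \<Longrightarrow> tbr a b (fadd f f') h = fadd (tbr a b f h) (tbr a b f' h)"
  unfolding tbr_def by (rule fbil_fadd1)
lemma tbr_fadd2: "fin f \<Longrightarrow> fin h \<Longrightarrow> fin h' \<Longrightarrow> tbr a b f (fadd h h') = fadd (tbr a b f h) (tbr a b f h')"
  unfolding tbr_def by (rule fbil_fadd2)
lemma tbr_fsc1: "fin f \<Longrightarrow> fin h \<Longrightarrow> tbr a b (fsc d f) h = fsc d (tbr a b f h)"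
  unfolding tbr_def by (rule fbil_fsc1)
lemma tbr_fsc2: "fin f \<Longrightarrow> fin h \<Longrightarrow> tbr a b f (fsc d h) = fsc d (tbr a b f h)"
  unfolding tbr_def by (rule fbil_fsc2)
lemma tbr_fzero1: "tbr a b fzero h = fzero" unfolding tbr_def by (rule fbil_fzero1)
lemma tbr_fzero2: "tbr a b f fzero = fzero" unfolding tbr_def by (rule fbil_fzero2)
lemma tbr_fminus1: "fin f \<Longrightarrow> fin f' \<Longrightarrow> fin h \<Longrightarrow> tbr a b (fminus f f') h = fminus (tbr a b f h) (tbr a b f' h)"
  unfolding fminus_def by (simp add: tbr_fadd1 tbr_fsc1 fin_fsc)
lemma tbr_fminus2: "fin f \<Longrightarrow> fin h \<Longrightarrow> fin h' \<Longrightarrow> tbr a b f (fminus h h') = fminus (tbr a b f h) (tbr a b f h')"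
  unfolding fminus_def by (simp add: tbr_fadd2 tbr_fsc2 fin_fsc)
lemma tbr_dl: "tbr aMN aNM (dl (m, n, i, j)) (dl (m', n', i', j')) =
   fsc (- sg (i \<and> j)) (dl (aNM n m, aMN m' n', i \<noteq> j, i' \<noteq> j'))"
  unfolding tbr_def fbil_dl by (simp add: tgb_def tgc_def)

lemma fin_fproj: "fin f \<Longrightarrow> fin (fproj dg b f)"
  unfolding fin_def fproj_def by (auto elim: finite_subset[rotated])

definition gclosed :: "('a, 'k::field) lsa \<Rightarrow> bool" where
  "gclosed A \<longleftrightarrow> (\<forall>b c x. x \<in> gr A b \<longrightarrow> sc A c x \<in> gr A b)
     \<and> (\<forall>b x y. x \<in> gr A b \<longrightarrow> y \<in> gr A b \<longrightarrow> ad A x y \<in> gr A b)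
     \<and> (\<forall>i j x y. x \<in> gr A i \<longrightarrow> y \<in> gr A j \<longrightarrow> br A x y \<in> gr A (i \<noteq> j))"

definition agr :: "('p, 'k::field) lsa \<Rightarrow> ('m, 'k) lsa \<Rightarrow> ('p \<Rightarrow> 'm \<Rightarrow> 'm) \<Rightarrow> bool" where
  "agr P M a \<longleftrightarrow> (\<forall>i j. \<forall>p\<in>gr P i. \<forall>m\<in>gr M j. a p m \<in> gr M (i \<noteq> j))"

lemma lsa_gclosed: assumes "lie_superalgebra A" shows "gclosed A"
proof -
  have "graded A" using assms unfolding lie_superalgebra_def by (elim conjE) assumption
  then have s: "\<forall>b. subspace A (gr A b)" unfolding graded_def by (elim conjE) assumption
  have brg: "\<forall>i j. \<forall>x\<in>gr A i. \<forall>y\<in>gr A j. br A x y \<in> gr A (i\<noteq>j)"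
    using assms unfolding lie_superalgebra_def by (elim conjE) assumption
  show ?thesis unfolding gclosed_def
  proof (intro conjI allI impI)
    fix b c x assume "x \<in> gr A b" then show "sc A c x \<in> gr A b" using s unfolding subspace_def by blast
  next
    fix b x y assume "x \<in> gr A b" "y \<in> gr A b" then show "ad A x y \<in> gr A b" using s unfolding subspace_def by blast
  next
    fix i j x y assume "x \<in> gr A i" "y \<in> gr A j" then show "br A x y \<in> gr A (i \<noteq> j)" using brg by blast
  qed
qed

lemma act_agr: "is_action P M a \<Longrightarrow> agr P M a"
  unfolding is_action_def agr_def by (elim conjE) assumption

lemma tgens_iff[simp]: "(m, n, i, j) \<in> tgens M N \<longleftrightarrow> m \<in> gr M i \<and> n \<in> gr N j"
  unfolding tgens_def by auto

lemma tgb_tgens: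
  assumes "agr M N aMN" "agr N M aNM" "p \<in> tgens M N" "q \<in> tgens M N"
  shows "tgb aMN aNM p q \<in> tgens M N"
proof -
  obtain m n i j where p: "p = (m, n, i, j)" "m \<in> gr M i" "n \<in> gr N j" using assms(3) unfolding tgens_def by auto
  obtain m' n' i' j' where q: "q = (m', n', i', j')" "m' \<in> gr M i'" "n' \<in> gr N j'" using assms(4) unfolding tgens_def by auto
  have "aNM n m \<in> gr M (j \<noteq> i)" using assms(2) p unfolding agr_def by blast
  moreover have "(j \<noteq> i) = (i \<noteq> j)" by auto
  ultimately have "aNM n m \<in> gr M (i \<noteq> j)" by simp
  moreover have "aMN m' n' \<in> gr N (i' \<noteq> j')" using assms(1) q unfolding agr_def by blast
  ultimately show ?thesis using p q by (simp add: tgb_def)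
qed

lemma fvs_tbr: "agr M N aMN \<Longrightarrow> agr N M aNM \<Longrightarrow> f \<in> fvs (tgens M N) \<Longrightarrow> h \<in> fvs (tgens M N) \<Longrightarrow>
   tbr aMN aNM f h \<in> fvs (tgens M N)"
  unfolding tbr_def by (rule fvs_fbil) (auto intro: tgb_tgens)

lemma tgood_fvs:
  fixes M :: "('m, 'k::field) lsa" and N :: "('n, 'k) lsa"
  assumes gM: "gclosed M" and gN: "gclosed N" and a1: "agr M N aMN" and a2: "agr N M aNM"
  shows "tgood M N aMN aNM (fvs (tgens M N))"
proof -
  let ?G = "tgens M N"
  have gM': "\<And>b c x. x \<in> gr M b \<Longrightarrow> sc M c x \<in> gr M b" "\<And>b x y. x \<in> gr M b \<Longrightarrow> y \<in> gr M b \<Longrightarrow> ad M x y \<in> gr M b"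
     "\<And>i j x y. x \<in> gr M i \<Longrightarrow> y \<in> gr M j \<Longrightarrow> br M x y \<in> gr M (i \<noteq> j)"
    using gM unfolding gclosed_def by blast+
  have gN': "\<And>b c x. x \<in> gr N b \<Longrightarrow> sc N c x \<in> gr N b" "\<And>b x y. x \<in> gr N b \<Longrightarrow> y \<in> gr N b \<Longrightarrow> ad N x y \<in> gr N b"
     "\<And>i j x y. x \<in> gr N i \<Longrightarrow> y \<in> gr N j \<Longrightarrow> br N x y \<in> gr N (i \<noteq> j)"
    using gN unfolding gclosed_def by blast+
  have a1': "\<And>i j m n. m \<in> gr M i \<Longrightarrow> n \<in> gr N j \<Longrightarrow> aMN m n \<in> gr N (i \<noteq> j)" using a1 unfolding agr_def by blast
  have a2': "\<And>i j m n. n \<in> gr N i \<Longrightarrow> m \<in> gr M j \<Longrightarrow> aNM n m \<in> gr M (i \<noteq> j)" using a2 unfolding agr_def by blast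
  have a2'': "aNM n m \<in> gr M (j \<noteq> i)" if "n \<in> gr N i" "m \<in> gr M j" for i j m n
  proof -
    have "(j \<noteq> i) = (i \<noteq> j)" by auto
    with a2'[OF that] show ?thesis by simp
  qed
  have n1: "\<And>i j x y. x \<in> gr M i \<Longrightarrow> y \<in> gr M j \<Longrightarrow> br M x y \<in> gr M (i = (\<not> j))"
    using gM'(3) by simp
  have n2: "\<And>i j x y. x \<in> gr N i \<Longrightarrow> y \<in> gr N j \<Longrightarrow> br N x y \<in> gr N (i = (\<not> j))"
    using gN'(3) by simp
  have n3: "\<And>i j m n. m \<in> gr M i \<Longrightarrow> n \<in> gr N j \<Longrightarrow> aMN m n \<in> gr N (i = (\<not> j))" using a1' by simp
  have n4: "\<And>i j m n. n \<in> gr N i \<Longrightarrow> m \<in> gr M j \<Longrightarrow> aNM n m \<in> gr M (j = (\<not> i))" using a2'' by simp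
  have rels: "trels M N aMN aNM \<subseteq> fvs ?G"
    unfolding trels_def
    apply (intro Un_least)
         apply (auto intro!: fvs_fminus fvs_fadd fvs_fsc fvs_dl)
         apply (auto intro: gM' gN' n1 n2 n3 n4)
    done
  have br: "\<forall>f\<in>(fvs ?G :: ('m \<times> 'n \<times> bool \<times> bool \<Rightarrow> 'k) set). \<forall>k\<in>fvs ?G. tbr aMN aNM f k \<in> fvs ?G \<and> tbr aMN aNM k f \<in> fvs ?G"
    using fvs_tbr[OF a1 a2] by blast
  have anti: "\<forall>a b. \<forall>f\<in>(fvs_gr ?G tdeg a :: ('m \<times> 'n \<times> bool \<times> bool \<Rightarrow> 'k) set). \<forall>g\<in>fvs_gr ?G tdeg b.
         fadd (tbr aMN aNM f g) (fsc (sg (a \<and> b)) (tbr aMN aNM g f)) \<in> fvs ?G"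
  proof (intro allI ballI)
    fix a b and f g :: "'m \<times> 'n \<times> bool \<times> bool \<Rightarrow> 'k" assume "f \<in> fvs_gr ?G tdeg a" "g \<in> fvs_gr ?G tdeg b"
    then have "f \<in> fvs ?G" "g \<in> fvs ?G" using fvs_gr_sub by auto
    then show "fadd (tbr aMN aNM f g) (fsc (sg (a \<and> b)) (tbr aMN aNM g f)) \<in> fvs ?G"
      by (intro fvs_fadd fvs_fsc fvs_tbr[OF a1 a2])
  qed
  have jac: "\<forall>a b. \<forall>f\<in>(fvs_gr ?G tdeg a :: ('m \<times> 'n \<times> bool \<times> bool \<Rightarrow> 'k) set). \<forall>g\<in>fvs_gr ?G tdeg b. \<forall>h\<in>fvs ?G.
         fminus (tbr aMN aNM f (tbr aMN aNM g h))
           (fadd (tbr aMN aNM (tbr aMN aNM f g) h)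
                 (fsc (sg (a \<and> b)) (tbr aMN aNM g (tbr aMN aNM f h)))) \<in> fvs ?G"
  proof (intro allI ballI)
    fix a b and f g h :: "'m \<times> 'n \<times> bool \<times> bool \<Rightarrow> 'k" assume "f \<in> fvs_gr ?G tdeg a" "g \<in> fvs_gr ?G tdeg b" "h \<in> fvs ?G"
    then have "f \<in> fvs ?G" "g \<in> fvs ?G" "h \<in> fvs ?G" using fvs_gr_sub by auto
    then show "fminus (tbr aMN aNM f (tbr aMN aNM g h))
           (fadd (tbr aMN aNM (tbr aMN aNM f g) h)
                 (fsc (sg (a \<and> b)) (tbr aMN aNM g (tbr aMN aNM f h)))) \<in> fvs ?G"
      by (intro fvs_fminus fvs_fadd fvs_fsc fvs_tbr[OF a1 a2])
  qed
  have cl: "\<forall>x\<in>(fvs ?G :: ('m \<times> 'n \<times> bool \<times> bool \<Rightarrow> 'k) set). \<forall>y\<in>fvs ?G. fadd x y \<in> fvs ?G" "\<forall>c. \<forall>x\<in>(fvs ?G :: ('m \<times> 'n \<times> bool \<times> bool \<Rightarrow> 'k) set). fsc c x \<in> fvs ?G"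
    "\<forall>b. \<forall>x\<in>(fvs ?G :: ('m \<times> 'n \<times> bool \<times> bool \<Rightarrow> 'k) set). fproj tdeg b x \<in> fvs ?G"
    by (auto intro: fvs_fadd fvs_fsc fvs_fproj)
  show ?thesis unfolding tgood_def
    using rels br anti jac cl fvs_fzero by blast
qed

lemma tker_fvs: fixes M :: "('m, 'k::field) lsa" and N :: "('n, 'k) lsa" shows "gclosed M \<Longrightarrow> gclosed N \<Longrightarrow> agr M N aMN \<Longrightarrow> agr N M aNM \<Longrightarrow>
   tker M N aMN aNM \<subseteq> fvs (tgens M N)"
  by (rule tk_sub, rule tgood_fvs)


lemmas fins[simp] = fin_dl fin_fsc fin_tbr fin_fmap fin_fadd fin_fminus fin_fzero fin_fproj

lemma fsc_fzero: "fsc d fzero = fzero" unfolding fsc_def fzero_def by simp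

lemma tgood_tbr: fixes M :: "('m, 'k::field) lsa" and N :: "('n, 'k) lsa" and f h :: "'m \<times> 'n \<times> bool \<times> bool \<Rightarrow> 'k"
  shows "tgood M N a b (fvs (tgens M N)) \<Longrightarrow> f \<in> fvs (tgens M N) \<Longrightarrow> h \<in> fvs (tgens M N) \<Longrightarrow>
   tbr a b f h \<in> fvs (tgens M N)"
proof -
  assume g: "tgood M N a b (fvs (tgens M N))" and f: "f \<in> fvs (tgens M N)" "h \<in> fvs (tgens M N)"
  have "\<forall>f\<in>(fvs (tgens M N) :: ('m \<times> 'n \<times> bool \<times> bool \<Rightarrow> 'k) set). \<forall>k\<in>fvs (tgens M N). tbr a b f k \<in> fvs (tgens M N) \<and> tbr a b k f \<in> fvs (tgens M N)"
    using g unfolding tgood_def by (elim conjE) assumption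
  then show ?thesis using f by auto
qed

lemma tgood_rels: fixes M :: "('m, 'k::field) lsa" and N :: "('n, 'k) lsa" shows "tgood M N a b (fvs (tgens M N)) \<Longrightarrow> trels M N a b \<subseteq> fvs (tgens M N)"
  unfolding tgood_def by (elim conjE) assumption

locale tmap =
  fixes M1 :: "('m1, 'k::field) lsa" and N1 :: "('n1, 'k) lsa" and a1 :: "'m1 \<Rightarrow> 'n1 \<Rightarrow> 'n1" and b1 :: "'n1 \<Rightarrow> 'm1 \<Rightarrow> 'm1"
    and M2 :: "('m2, 'k) lsa" and N2 :: "('n2, 'k) lsa" and a2 :: "'m2 \<Rightarrow> 'n2 \<Rightarrow> 'n2" and b2 :: "'n2 \<Rightarrow> 'm2 \<Rightarrow> 'm2"
    and g :: "'m1 \<times> 'n1 \<times> bool \<times> bool \<Rightarrow> 'm2 \<times> 'n2 \<times> bool \<times> bool" and c :: "'m1 \<times> 'n1 \<times> bool \<times> bool \<Rightarrow> 'k"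
  assumes good1: "tgood M1 N1 a1 b1 (fvs (tgens M1 N1))"
    and good2: "tgood M2 N2 a2 b2 (fvs (tgens M2 N2))"
    and gG: "\<And>p. p \<in> tgens M1 N1 \<Longrightarrow> g p \<in> tgens M2 N2"
    and gd: "\<And>p. p \<in> tgens M1 N1 \<Longrightarrow> tdeg (g p) = tdeg p"
    and rels: "\<And>r. r \<in> trels M1 N1 a1 b1 \<Longrightarrow> fmap g c r \<in> tker M2 N2 a2 b2"
    and brc: "\<And>p q. p \<in> tgens M1 N1 \<Longrightarrow> q \<in> tgens M1 N1 \<Longrightarrow> cg (tker M2 N2 a2 b2)
        (fmap g c (tbr a1 b1 (dl p) (dl q))) (tbr a2 b2 (fmap g c (dl p)) (fmap g c (dl q)))"
begin

abbreviation "G1 \<equiv> tgens M1 N1"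
abbreviation "G2 \<equiv> tgens M2 N2"
abbreviation "K1 \<equiv> tker M1 N1 a1 b1"
abbreviation "K2 \<equiv> tker M2 N2 a2 b2"
abbreviation "H \<equiv> fmap g c"

lemma kcl2: "kcl K2" by (rule tk_kcl)
lemma kcl1: "kcl K1" by (rule tk_kcl)
lemma tbr1: fixes f h :: "'m1 \<times> 'n1 \<times> bool \<times> bool \<Rightarrow> 'k" shows "f \<in> fvs G1 \<Longrightarrow> h \<in> fvs G1 \<Longrightarrow> tbr a1 b1 f h \<in> fvs G1" using tgood_tbr[OF good1] .
lemma tbr2: fixes f h :: "'m2 \<times> 'n2 \<times> bool \<times> bool \<Rightarrow> 'k" shows "f \<in> fvs G2 \<Longrightarrow> h \<in> fvs G2 \<Longrightarrow> tbr a2 b2 f h \<in> fvs G2" using tgood_tbr[OF good2] .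
lemma K1_fvs: "K1 \<subseteq> fvs G1" using tk_sub[OF good1] .
lemma K2_fvs: "K2 \<subseteq> fvs G2" using tk_sub[OF good2] .
lemma H_fvs: "f \<in> fvs G1 \<Longrightarrow> H f \<in> fvs G2" by (rule fvs_fmap) (use gG in auto)
lemma H_gr: "f \<in> fvs_gr G1 tdeg b \<Longrightarrow> H f \<in> fvs_gr G2 tdeg b" by (rule fvs_gr_fmap[of f G1 tdeg b g G2 tdeg c]) (use gG gd in auto)

lemma H_proj: assumes "f \<in> fvs G1" shows "H (fproj tdeg b f) = fproj tdeg b (H f)"
  using assms
proof (induction rule: fvs_induct)
  case zero then show ?case by (simp add: fproj_fzero fmap_fzero)
next
  case (gen d p)
  then show ?case by (cases "tdeg p = b") (simp_all add: fproj_fsc fmap_fsc fproj_dl fmap_dl gd fmap_fzero fsc_fzero)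
next
  case (add f h)
  then show ?case by (simp add: fproj_fadd fmap_fadd fvs_fin)
qed

lemma tbr_cg2: fixes x y z :: "'m2 \<times> 'n2 \<times> bool \<times> bool \<Rightarrow> 'k" assumes "z \<in> fvs G2" "x \<in> fvs G2" "y \<in> fvs G2" "cg K2 x y"
  shows "cg K2 (tbr a2 b2 z x) (tbr a2 b2 z y)"
proof -
  have "fminus (tbr a2 b2 z x) (tbr a2 b2 z y) = tbr a2 b2 z (fminus x y)"
    using assms by (simp add: tbr_fminus2 fvs_fin)
  moreover have "tbr a2 b2 z (fminus x y) \<in> K2" using assms(1,4) unfolding cg_def by (rule tk_br(1))
  ultimately show ?thesis unfolding cg_def by simp
qed

lemma tbr_cg1: fixes x y z :: "'m2 \<times> 'n2 \<times> bool \<times> bool \<Rightarrow> 'k" assumes "z \<in> fvs G2" "x \<in> fvs G2" "y \<in> fvs G2" "cg K2 x y"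
  shows "cg K2 (tbr a2 b2 x z) (tbr a2 b2 y z)"
proof -
  have "fminus (tbr a2 b2 x z) (tbr a2 b2 y z) = tbr a2 b2 (fminus x y) z"
    using assms by (simp add: tbr_fminus1 fvs_fin)
  moreover have "tbr a2 b2 (fminus x y) z \<in> K2" using assms(1,4) unfolding cg_def by (rule tk_br(2))
  ultimately show ?thesis unfolding cg_def by simp
qed

lemma brc_gen: assumes "q \<in> G1" "f \<in> fvs G1"
  shows "cg K2 (H (tbr a1 b1 f (dl q))) (tbr a2 b2 (H f) (H (dl q)))"
  using assms(2)
proof (induction rule: fvs_induct)
  case zero then show ?case by (simp add: tbr_fzero1 fmap_fzero cg_refl[OF kcl2])
next
  case (gen d p)
  have "cg K2 (fsc d (H (tbr a1 b1 (dl p) (dl q)))) (fsc d (tbr a2 b2 (H (dl p)) (H (dl q))))"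
    by (rule cg_sc[OF kcl2 brc[OF gen assms(1)]])
  then show ?case by (simp add: tbr_fsc1 fmap_fsc)
next
  case (add f h)
  have "cg K2 (fadd (H (tbr a1 b1 f (dl q))) (H (tbr a1 b1 h (dl q))))
              (fadd (tbr a2 b2 (H f) (H (dl q))) (tbr a2 b2 (H h) (H (dl q))))"
    by (rule cg_add[OF kcl2 add.IH])
  then show ?case using add.hyps by (simp add: tbr_fadd1 fmap_fadd fvs_fin)
qed

lemma brc_all: assumes "f \<in> fvs G1" "h \<in> fvs G1"
  shows "cg K2 (H (tbr a1 b1 f h)) (tbr a2 b2 (H f) (H h))"
  using assms(2)
proof (induction rule: fvs_induct)
  case zero then show ?case by (simp add: tbr_fzero2 fmap_fzero cg_refl[OF kcl2])
next
  case (gen d p)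
  have "cg K2 (fsc d (H (tbr a1 b1 f (dl p)))) (fsc d (tbr a2 b2 (H f) (H (dl p))))"
    by (rule cg_sc[OF kcl2 brc_gen[OF gen assms(1)]])
  then show ?case using assms(1) by (simp add: tbr_fsc2 fmap_fsc fvs_fin)
next
  case (add h1 h2)
  have "cg K2 (fadd (H (tbr a1 b1 f h1)) (H (tbr a1 b1 f h2)))
              (fadd (tbr a2 b2 (H f) (H h1)) (tbr a2 b2 (H f) (H h2)))"
    by (rule cg_add[OF kcl2 add.IH])
  then show ?case using add.hyps assms(1) by (simp add: tbr_fadd2 fmap_fadd fvs_fin)
qed

lemma pre_good: "tgood M1 N1 a1 b1 {f \<in> fvs G1. H f \<in> K2}"
proof -
  let ?P = "{f \<in> fvs G1. H f \<in> K2}"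
  have z: "fzero \<in> ?P" by (simp add: fvs_fzero fmap_fzero tk_zero)
  have ad: "\<forall>x\<in>?P. \<forall>y\<in>?P. fadd x y \<in> ?P"
  proof (intro ballI)
    fix x y assume "x \<in> ?P" "y \<in> ?P"
    then have a: "x \<in> fvs G1" "H x \<in> K2" "y \<in> fvs G1" "H y \<in> K2" by auto
    have "H (fadd x y) = fadd (H x) (H y)" using a by (simp add: fmap_fadd fvs_fin)
    then show "fadd x y \<in> ?P" using a by (simp add: fvs_fadd kcl_add[OF kcl2])
  qed
  have sc: "\<forall>d. \<forall>x\<in>?P. fsc d x \<in> ?P"
  proof (intro allI ballI)
    fix d x assume "x \<in> ?P"
    then have a: "x \<in> fvs G1" "H x \<in> K2" by auto
    have "H (fsc d x) = fsc d (H x)" using a by (simp add: fmap_fsc fvs_fin)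
    then show "fsc d x \<in> ?P" using a by (simp add: fvs_fsc kcl_sc[OF kcl2])
  qed
  have pr: "\<forall>b. \<forall>x\<in>?P. fproj tdeg b x \<in> ?P"
  proof (intro allI ballI)
    fix b x assume "x \<in> ?P"
    then show "fproj tdeg b x \<in> ?P" by (simp add: fvs_fproj H_proj tk_proj)
  qed
  have rl: "trels M1 N1 a1 b1 \<subseteq> ?P" using tgood_rels[OF good1] rels by auto
  have br: "\<forall>f\<in>(fvs G1 :: ('m1 \<times> 'n1 \<times> bool \<times> bool \<Rightarrow> 'k) set). \<forall>k\<in>?P. tbr a1 b1 f k \<in> ?P \<and> tbr a1 b1 k f \<in> ?P"
  proof (intro ballI conjI)
    fix f k :: "'m1 \<times> 'n1 \<times> bool \<times> bool \<Rightarrow> 'k" assume f: "f \<in> fvs G1" and k: "k \<in> ?P"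
    have k': "k \<in> fvs G1" "H k \<in> K2" using k by auto
    show "tbr a1 b1 f k \<in> ?P"
    proof (simp add: tbr1[OF f k'(1)], rule cg_mem[OF kcl2 brc_all[OF f k'(1)]])
      show "tbr a2 b2 (H f) (H k) \<in> K2" by (rule tk_br(1)[OF H_fvs[OF f] k'(2)])
    qed
    show "tbr a1 b1 k f \<in> ?P"
    proof (simp add: tbr1[OF k'(1) f], rule cg_mem[OF kcl2 brc_all[OF k'(1) f]])
      show "tbr a2 b2 (H k) (H f) \<in> K2" by (rule tk_br(2)[OF H_fvs[OF f] k'(2)])
    qed
  qed
  have an: "\<forall>a b. \<forall>f\<in>(fvs_gr G1 tdeg a :: ('m1 \<times> 'n1 \<times> bool \<times> bool \<Rightarrow> 'k) set). \<forall>h\<in>fvs_gr G1 tdeg b.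
         fadd (tbr a1 b1 f h) (fsc (sg (a \<and> b)) (tbr a1 b1 h f)) \<in> ?P"
  proof (intro allI ballI)
    fix a b and f h :: "'m1 \<times> 'n1 \<times> bool \<times> bool \<Rightarrow> 'k" assume f: "f \<in> fvs_gr G1 tdeg a" and h: "h \<in> fvs_gr G1 tdeg b"
    have f1: "f \<in> fvs G1" "h \<in> fvs G1" using f h fvs_gr_sub by auto
    have "cg K2 (H (fadd (tbr a1 b1 f h) (fsc (sg (a \<and> b)) (tbr a1 b1 h f))))
       (fadd (tbr a2 b2 (H f) (H h)) (fsc (sg (a \<and> b)) (tbr a2 b2 (H h) (H f))))"
      using f1 by (simp add: fmap_fadd fmap_fsc fvs_fin cg_add[OF kcl2] cg_sc[OF kcl2] brc_all)
    moreover have "fadd (tbr a2 b2 (H f) (H h)) (fsc (sg (a \<and> b)) (tbr a2 b2 (H h) (H f))) \<in> K2"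
      by (rule tk_anti[OF H_gr[OF f] H_gr[OF h]])
    ultimately have "H (fadd (tbr a1 b1 f h) (fsc (sg (a \<and> b)) (tbr a1 b1 h f))) \<in> K2"
      by (rule cg_mem[OF kcl2])
    moreover have "fadd (tbr a1 b1 f h) (fsc (sg (a \<and> b)) (tbr a1 b1 h f)) \<in> fvs G1"
      using f1 by (intro fvs_fadd fvs_fsc tbr1)
    ultimately show "fadd (tbr a1 b1 f h) (fsc (sg (a \<and> b)) (tbr a1 b1 h f)) \<in> ?P" by simp
  qed
  have jc: "\<forall>a b. \<forall>f\<in>(fvs_gr G1 tdeg a :: ('m1 \<times> 'n1 \<times> bool \<times> bool \<Rightarrow> 'k) set). \<forall>g\<in>fvs_gr G1 tdeg b. \<forall>h\<in>fvs G1.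
         fminus (tbr a1 b1 f (tbr a1 b1 g h))
           (fadd (tbr a1 b1 (tbr a1 b1 f g) h)
                 (fsc (sg (a \<and> b)) (tbr a1 b1 g (tbr a1 b1 f h)))) \<in> ?P"
  proof (intro allI ballI)
    fix a b and f g' h :: "'m1 \<times> 'n1 \<times> bool \<times> bool \<Rightarrow> 'k" assume f: "f \<in> fvs_gr G1 tdeg a" and g: "g' \<in> fvs_gr G1 tdeg b" and h: "h \<in> fvs G1"
    have f1: "f \<in> fvs G1" "g' \<in> fvs G1" using f g fvs_gr_sub by auto
    note F = f1 h H_fvs[OF f1(1)] H_fvs[OF f1(2)] H_fvs[OF h]
    have c1: "cg K2 (H (tbr a1 b1 x (tbr a1 b1 y z))) (tbr a2 b2 (H x) (tbr a2 b2 (H y) (H z)))"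
      if "x \<in> fvs G1" "y \<in> fvs G1" "z \<in> fvs G1" for x y z
    proof (rule cg_trans[OF kcl2 brc_all[OF that(1) tbr1[OF that(2,3)]]])
      show "cg K2 (tbr a2 b2 (H x) (H (tbr a1 b1 y z))) (tbr a2 b2 (H x) (tbr a2 b2 (H y) (H z)))"
        by (rule tbr_cg2) (use that brc_all H_fvs tbr1 tbr2 in auto)
    qed
    have c2: "cg K2 (H (tbr a1 b1 (tbr a1 b1 f g') h)) (tbr a2 b2 (tbr a2 b2 (H f) (H g')) (H h))"
    proof (rule cg_trans[OF kcl2 brc_all[OF tbr1[OF f1] h]])
      show "cg K2 (tbr a2 b2 (H (tbr a1 b1 f g')) (H h)) (tbr a2 b2 (tbr a2 b2 (H f) (H g')) (H h))"
        by (rule tbr_cg1) (use F brc_all H_fvs tbr1 tbr2 in auto)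
    qed
    have "cg K2 (H (fminus (tbr a1 b1 f (tbr a1 b1 g' h))
           (fadd (tbr a1 b1 (tbr a1 b1 f g') h)
                 (fsc (sg (a \<and> b)) (tbr a1 b1 g' (tbr a1 b1 f h))))))
        (fminus (tbr a2 b2 (H f) (tbr a2 b2 (H g') (H h)))
           (fadd (tbr a2 b2 (tbr a2 b2 (H f) (H g')) (H h))
                 (fsc (sg (a \<and> b)) (tbr a2 b2 (H g') (tbr a2 b2 (H f) (H h))))))"
      unfolding fminus_def using F
      by (simp add: fmap_fadd fmap_fsc fvs_fin cg_add[OF kcl2] cg_sc[OF kcl2] c1 c2)
    moreover have "fminus (tbr a2 b2 (H f) (tbr a2 b2 (H g') (H h)))
           (fadd (tbr a2 b2 (tbr a2 b2 (H f) (H g')) (H h))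
                 (fsc (sg (a \<and> b)) (tbr a2 b2 (H g') (tbr a2 b2 (H f) (H h))))) \<in> K2"
      by (rule tk_jac[OF H_gr[OF f] H_gr[OF g] H_fvs[OF h]])
    ultimately have "H (fminus (tbr a1 b1 f (tbr a1 b1 g' h))
           (fadd (tbr a1 b1 (tbr a1 b1 f g') h)
                 (fsc (sg (a \<and> b)) (tbr a1 b1 g' (tbr a1 b1 f h))))) \<in> K2"
      by (rule cg_mem[OF kcl2])
    moreover have "fminus (tbr a1 b1 f (tbr a1 b1 g' h))
           (fadd (tbr a1 b1 (tbr a1 b1 f g') h)
                 (fsc (sg (a \<and> b)) (tbr a1 b1 g' (tbr a1 b1 f h)))) \<in> fvs G1"
      using F by (intro fvs_fadd fvs_fsc fvs_fminus tbr1)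
    ultimately show "fminus (tbr a1 b1 f (tbr a1 b1 g' h))
           (fadd (tbr a1 b1 (tbr a1 b1 f g') h)
                 (fsc (sg (a \<and> b)) (tbr a1 b1 g' (tbr a1 b1 f h)))) \<in> ?P" by simp
  qed
  show ?thesis unfolding tgood_def
    apply (intro conjI)
    apply blast
    apply (fact z)
    apply (fact ad)
    apply (fact sc)
    apply (fact pr)
    apply (fact rl)
    apply (fact br)
    apply (fact an)
    apply (fact jc)
    done
qed

lemma pre: "f \<in> K1 \<Longrightarrow> H f \<in> K2"
  using tk_D[OF _ pre_good] by blast

lemma hcg: assumes "x \<in> fvs G1" "y \<in> fvs G1" "cg K1 x y" shows "cg K2 (H x) (H y)"
  using pre[of "fminus x y"] assms unfolding cg_def by (simp add: fmap_fminus fvs_fin)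

end


lemma tensor_simps:
  "car (tensor M N a b) = coset (tker M N a b) ` fvs (tgens M N)"
  "zr (tensor M N a b) = coset (tker M N a b) fzero"
  "ad (tensor M N a b) X Y = coset (tker M N a b) (fadd (rep X) (rep Y))"
  "sc (tensor M N a b) d X = coset (tker M N a b) (fsc d (rep X))"
  "br (tensor M N a b) X Y = coset (tker M N a b) (tbr a b (rep X) (rep Y))"
  "gr (tensor M N a b) i = coset (tker M N a b) ` fvs_gr (tgens M N) tdeg i"
  by (simp_all add: tensor_def)

definition qm :: "('g \<Rightarrow> 'h) \<Rightarrow> ('g \<Rightarrow> 'k::field) \<Rightarrow> ('h \<Rightarrow> 'k) set \<Rightarrow> ('g \<Rightarrow> 'k) set \<Rightarrow> ('h \<Rightarrow> 'k) set" where
  "qm g c K Z = coset K (fmap g c (rep Z))"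

context tmap
begin

abbreviation "T1 \<equiv> tensor M1 N1 a1 b1"
abbreviation "T2 \<equiv> tensor M2 N2 a2 b2"
abbreviation "Phi \<equiv> qm g c K2"

lemma rep_car1: "Z \<in> car T1 \<Longrightarrow> rep Z \<in> fvs G1"
  by (auto simp: tensor_simps intro: rep_fvs[OF kcl1 K1_fvs])
lemma rep_car2: "Z \<in> car T2 \<Longrightarrow> rep Z \<in> fvs G2"
  by (auto simp: tensor_simps intro: rep_fvs[OF kcl2 K2_fvs])

lemma Phi_coset: assumes "f \<in> fvs G1" shows "Phi (coset K1 f) = coset K2 (H f)"
proof -
  have r: "rep (coset K1 f) \<in> fvs G1" by (rule rep_fvs[OF kcl1 K1_fvs assms])
  have "cg K2 (H (rep (coset K1 f))) (H f)" by (rule hcg[OF r assms rep_cg[OF kcl1]])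
  then show ?thesis unfolding qm_def by (rule coset_cg[OF kcl2])
qed

lemma cg_rep2: "cg K2 (rep (coset K2 x)) x" by (rule rep_cg[OF kcl2])

lemma Phi_hom: "hom T1 T2 Phi"
  unfolding hom_def
proof (intro conjI ballI allI)
  fix Z assume Z: "Z \<in> car T1"
  show "Phi Z \<in> car T2" unfolding qm_def tensor_simps using H_fvs[OF rep_car1[OF Z]] by auto
next
  fix Z W assume Z: "Z \<in> car T1" and W: "W \<in> car T1"
  note r = rep_car1[OF Z] rep_car1[OF W]
  have "Phi (ad T1 Z W) = coset K2 (fadd (H (rep Z)) (H (rep W)))"
    unfolding tensor_simps using r by (simp add: Phi_coset fvs_fadd fmap_fadd fvs_fin)
  also have "\<dots> = ad T2 (Phi Z) (Phi W)"
    unfolding tensor_simps qm_def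
    by (rule coset_cg[OF kcl2], rule cg_sym[OF kcl2], rule cg_add[OF kcl2 cg_rep2 cg_rep2])
  finally show "Phi (ad T1 Z W) = ad T2 (Phi Z) (Phi W)" .
next
  fix d Z assume Z: "Z \<in> car T1"
  note r = rep_car1[OF Z]
  have "Phi (sc T1 d Z) = coset K2 (fsc d (H (rep Z)))"
    unfolding tensor_simps using r by (simp add: Phi_coset fvs_fsc fmap_fsc fvs_fin)
  also have "\<dots> = sc T2 d (Phi Z)"
    unfolding tensor_simps qm_def
    by (rule coset_cg[OF kcl2], rule cg_sym[OF kcl2], rule cg_sc[OF kcl2 cg_rep2])
  finally show "Phi (sc T1 d Z) = sc T2 d (Phi Z)" .
next
  fix Z W assume Z: "Z \<in> car T1" and W: "W \<in> car T1"
  note r = rep_car1[OF Z] rep_car1[OF W]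
  have "Phi (br T1 Z W) = coset K2 (H (tbr a1 b1 (rep Z) (rep W)))"
    unfolding tensor_simps using r by (simp add: Phi_coset tbr1)
  also have "\<dots> = coset K2 (tbr a2 b2 (H (rep Z)) (H (rep W)))"
    by (rule coset_cg[OF kcl2 brc_all[OF r]])
  also have "\<dots> = br T2 (Phi Z) (Phi W)"
    unfolding tensor_simps qm_def
  proof (rule coset_cg[OF kcl2], rule cg_sym[OF kcl2])
    let ?x = "H (rep Z)" and ?y = "H (rep W)"
    have hx: "?x \<in> fvs G2" "?y \<in> fvs G2" using H_fvs r by auto
    have rx: "rep (coset K2 ?x) \<in> fvs G2" "rep (coset K2 ?y) \<in> fvs G2"
      using rep_fvs[OF kcl2 K2_fvs] hx by auto
    show "cg K2 (tbr a2 b2 (rep (coset K2 ?x)) (rep (coset K2 ?y))) (tbr a2 b2 ?x ?y)"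
    proof (rule cg_trans[OF kcl2])
      show "cg K2 (tbr a2 b2 (rep (coset K2 ?x)) (rep (coset K2 ?y))) (tbr a2 b2 ?x (rep (coset K2 ?y)))"
        by (rule tbr_cg1[OF rx(2) rx(1) hx(1) cg_rep2])
      show "cg K2 (tbr a2 b2 ?x (rep (coset K2 ?y))) (tbr a2 b2 ?x ?y)"
        by (rule tbr_cg2[OF hx(1) rx(2) hx(2) cg_rep2])
    qed
  qed
  finally show "Phi (br T1 Z W) = br T2 (Phi Z) (Phi W)" .
next
  fix b
  show "Phi ` gr T1 b \<subseteq> gr T2 b"
  proof
    fix Y assume "Y \<in> Phi ` gr T1 b"
    then obtain f where f: "f \<in> fvs_gr G1 tdeg b" "Y = Phi (coset K1 f)" by (auto simp: tensor_simps)
    have "f \<in> fvs G1" using f fvs_gr_sub by auto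
    then have "Y = coset K2 (H f)" using f Phi_coset by simp
    then show "Y \<in> gr T2 b" using H_gr[OF f(1)] by (auto simp: tensor_simps)
  qed
qed

end


lemma act_car: assumes "is_action P M a" "p \<in> car P" "m \<in> car M" shows "a p m \<in> car M"
proof -
  have "\<forall>p\<in>car P. \<forall>m\<in>car M. a p m \<in> car M" using assms(1) unfolding is_action_def by (elim conjE) assumption
  then show ?thesis using assms by blast
qed
lemma act_addl: assumes "is_action P M a" "p \<in> car P" "p' \<in> car P" "m \<in> car M"
  shows "a (ad P p p') m = ad M (a p m) (a p' m)"
proof -
  have "\<forall>p\<in>car P. \<forall>p'\<in>car P. \<forall>m\<in>car M. a (ad P p p') m = ad M (a p m) (a p' m)"
    using assms(1) unfolding is_action_def by (elim conjE) assumption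
  then show ?thesis using assms by blast
qed
lemma act_scl: assumes "is_action P M a" "p \<in> car P" "m \<in> car M"
  shows "a (sc P c p) m = sc M c (a p m)"
proof -
  have "\<forall>c. \<forall>p\<in>car P. \<forall>m\<in>car M. a (sc P c p) m = sc M c (a p m)"
    using assms(1) unfolding is_action_def by (elim conjE) assumption
  then show ?thesis using assms by blast
qed
lemma act_addr: assumes "is_action P M a" "p \<in> car P" "m \<in> car M" "m' \<in> car M"
  shows "a p (ad M m m') = ad M (a p m) (a p m')"
proof -
  have "\<forall>p\<in>car P. \<forall>m\<in>car M. \<forall>m'\<in>car M. a p (ad M m m') = ad M (a p m) (a p m')"
    using assms(1) unfolding is_action_def by (elim conjE) assumption
  then show ?thesis using assms by blast
qed
lemma act_scr: assumes "is_action P M a" "p \<in> car P" "m \<in> car M"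
  shows "a p (sc M c m) = sc M c (a p m)"
proof -
  have "\<forall>c. \<forall>p\<in>car P. \<forall>m\<in>car M. a p (sc M c m) = sc M c (a p m)"
    using assms(1) unfolding is_action_def by (elim conjE) assumption
  then show ?thesis using assms by blast
qed
lemma act_gr: assumes "is_action P M a" "p \<in> gr P i" "m \<in> gr M j"
  shows "a p m \<in> gr M (i \<noteq> j)"
proof -
  have "\<forall>i j. \<forall>p\<in>gr P i. \<forall>m\<in>gr M j. a p m \<in> gr M (i \<noteq> j)"
    using assms(1) unfolding is_action_def by (elim conjE) assumption
  then show ?thesis using assms by blast
qed
lemma act_br1: assumes "is_action P M a" "p \<in> gr P i" "p' \<in> gr P j" "m \<in> car M"
  shows "a (br P p p') m = lsub M (a p (a p' m)) (sc M (sg (i \<and> j)) (a p' (a p m)))"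
proof -
  have "\<forall>i j. \<forall>p\<in>gr P i. \<forall>p'\<in>gr P j. \<forall>m\<in>car M.
         a (br P p p') m = lsub M (a p (a p' m)) (sc M (sg (i \<and> j)) (a p' (a p m)))"
    using assms(1) unfolding is_action_def by (elim conjE) assumption
  then show ?thesis using assms by blast
qed
lemma act_br2: assumes "is_action P M a" "p \<in> gr P i" "m \<in> gr M j" "m' \<in> car M"
  shows "a p (br M m m') = ad M (br M (a p m) m') (sc M (sg (i \<and> j)) (br M m (a p m')))"
proof -
  have "\<forall>i j. \<forall>p\<in>gr P i. \<forall>m\<in>gr M j. \<forall>m'\<in>car M.
         a p (br M m m') = ad M (br M (a p m) m') (sc M (sg (i \<and> j)) (br M m (a p m')))"
    using assms(1) unfolding is_action_def by (elim conjE) assumption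
  then show ?thesis using assms by blast
qed

lemma ls_vs: "lie_superalgebra A \<Longrightarrow> vector_space A"
  unfolding lie_superalgebra_def by (elim conjE) assumption
lemma ls_graded: "lie_superalgebra A \<Longrightarrow> graded A"
  unfolding lie_superalgebra_def by (elim conjE) assumption
lemma ls_sub: assumes "lie_superalgebra A" shows "subspace A (gr A b)"
proof -
  have "\<forall>b. subspace A (gr A b)" using ls_graded[OF assms] unfolding graded_def by (elim conjE) assumption
  then show ?thesis by blast
qed
lemma ls_gr_car: "lie_superalgebra A \<Longrightarrow> x \<in> gr A b \<Longrightarrow> x \<in> car A"
  using ls_sub[of A b] unfolding subspace_def by blast
lemma ls_zr_gr: "lie_superalgebra A \<Longrightarrow> zr A \<in> gr A b"
  using ls_sub[of A b] unfolding subspace_def by blast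
lemma ls_gr_ad: "lie_superalgebra A \<Longrightarrow> x \<in> gr A b \<Longrightarrow> y \<in> gr A b \<Longrightarrow> ad A x y \<in> gr A b"
  using ls_sub[of A b] unfolding subspace_def by blast
lemma ls_gr_sc: "lie_superalgebra A \<Longrightarrow> x \<in> gr A b \<Longrightarrow> sc A c x \<in> gr A b"
  using ls_sub[of A b] unfolding subspace_def by blast
lemma ls_decomp: assumes "lie_superalgebra A" "x \<in> car A"
  obtains x0 x1 where "x0 \<in> gr A False" "x1 \<in> gr A True" "x = ad A x0 x1"
proof -
  have "\<forall>x\<in>car A. \<exists>x0\<in>gr A False. \<exists>x1\<in>gr A True. x = ad A x0 x1"
    using ls_graded[OF assms(1)] unfolding graded_def by (elim conjE) assumption
  then show ?thesis using assms that by blast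
qed
lemma ls_br_car: assumes "lie_superalgebra A" "x \<in> car A" "y \<in> car A" shows "br A x y \<in> car A"
proof -
  have "\<forall>x\<in>car A. \<forall>y\<in>car A. br A x y \<in> car A" using assms(1) unfolding lie_superalgebra_def by (elim conjE) assumption
  then show ?thesis using assms by blast
qed
lemma ls_br_add: assumes "lie_superalgebra A" "x \<in> car A" "y \<in> car A" "z \<in> car A"
  shows "br A (ad A x y) z = ad A (br A x z) (br A y z)" "br A z (ad A x y) = ad A (br A z x) (br A z y)"
proof -
  have "\<forall>x\<in>car A. \<forall>y\<in>car A. \<forall>z\<in>car A.
          br A (ad A x y) z = ad A (br A x z) (br A y z)
        \<and> br A z (ad A x y) = ad A (br A z x) (br A z y)" using assms(1) unfolding lie_superalgebra_def by (elim conjE) assumption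
  then show "br A (ad A x y) z = ad A (br A x z) (br A y z)" "br A z (ad A x y) = ad A (br A z x) (br A z y)"
    using assms by blast+
qed
lemma ls_br_sc: assumes "lie_superalgebra A" "x \<in> car A" "y \<in> car A"
  shows "br A (sc A c x) y = sc A c (br A x y)" "br A x (sc A c y) = sc A c (br A x y)"
proof -
  have "\<forall>c. \<forall>x\<in>car A. \<forall>y\<in>car A. br A (sc A c x) y = sc A c (br A x y)
        \<and> br A x (sc A c y) = sc A c (br A x y)" using assms(1) unfolding lie_superalgebra_def by (elim conjE) assumption
  then show "br A (sc A c x) y = sc A c (br A x y)" "br A x (sc A c y) = sc A c (br A x y)"
    using assms by blast+
qed
lemma ls_br_zr: assumes "lie_superalgebra A" "y \<in> car A" shows "br A (zr A) y = zr A"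
proof -
  have z: "zr A \<in> car A" using v_zr_car[OF ls_vs[OF assms(1)]] .
  have "br A (zr A) y = br A (sc A 0 (zr A)) y" using v_sc0[OF ls_vs[OF assms(1)] z] by simp
  also have "\<dots> = sc A 0 (br A (zr A) y)" using ls_br_sc(1)[OF assms(1) z assms(2)] .
  also have "\<dots> = zr A" using v_sc0[OF ls_vs[OF assms(1)] ls_br_car[OF assms(1) z assms(2)]] .
  finally show ?thesis .
qed

lemma act_zr_r: assumes "is_action P M a" "vector_space M" "p \<in> car P" shows "a p (zr M) = zr M"
proof -
  have z: "zr M \<in> car M" using v_zr_car[OF assms(2)] .
  have "a p (zr M) = a p (sc M 0 (zr M))" using v_sc0[OF assms(2) z] by simp
  also have "\<dots> = sc M 0 (a p (zr M))" using act_scr[OF assms(1,3) z] .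
  also have "\<dots> = zr M" using v_sc0[OF assms(2) act_car[OF assms(1,3) z]] .
  finally show ?thesis .
qed
lemma act_zr_l: assumes "is_action P M a" "vector_space P" "vector_space M" "m \<in> car M" shows "a (zr P) m = zr M"
proof -
  have z: "zr P \<in> car P" using v_zr_car[OF assms(2)] .
  have "a (zr P) m = a (sc P 0 (zr P)) m" using v_sc0[OF assms(2) z] by simp
  also have "\<dots> = sc M 0 (a (zr P) m)" using act_scl[OF assms(1) z assms(4)] .
  also have "\<dots> = zr M" using v_sc0[OF assms(3) act_car[OF assms(1) z assms(4)]] .
  finally show ?thesis .
qed

lemma dsum_simps[simp]:
  "car (dsum A B) = car A \<times> car B"
  "zr (dsum A B) = (zr A, zr B)"
  "ad (dsum A B) (a, b) (a', b') = (ad A a a', ad B b b')"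
  "sc (dsum A B) c (a, b) = (sc A c a, sc B c b)"
  "br (dsum A B) (a, b) (a', b') = (br A a a', br B b b')"
  "gr (dsum A B) i = gr A i \<times> gr B i"
  by (simp_all add: dsum_def)

lemma dsum_lsub[simp]: "lsub (dsum A B) (a, b) (a', b') = (lsub A a a', lsub B b b')"
  by (simp add: lsub_def)

lemma dsum_act_simp[simp]: "dsum_act N aLN aMN (l, m) n = ad N (aLN l n) (aMN m n)"
  by (simp add: dsum_act_def)
lemma act_dsum_simp[simp]: "act_dsum aNL aNM n (l, m) = (aNL n l, aNM n m)"
  by (simp add: act_dsum_def)

lemma dsum_gclosed: "gclosed A \<Longrightarrow> gclosed B \<Longrightarrow> gclosed (dsum A B)"
  unfolding gclosed_def by auto


lemma act_gr': "is_action P M a \<Longrightarrow> p \<in> gr P i \<Longrightarrow> m \<in> gr M j \<Longrightarrow> a p m \<in> gr M (i = (\<not> j))"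
  using act_gr[of P M a p i m j] by simp

locale setting =
  fixes L :: "('l, 'k::field) lsa" and M :: "('m, 'k) lsa" and N :: "('n, 'k) lsa"
    and aLN :: "'l \<Rightarrow> 'n \<Rightarrow> 'n" and aNL :: "'n \<Rightarrow> 'l \<Rightarrow> 'l"
    and aMN :: "'m \<Rightarrow> 'n \<Rightarrow> 'n" and aNM :: "'n \<Rightarrow> 'm \<Rightarrow> 'm"
  assumes L: "lie_superalgebra L" and M: "lie_superalgebra M" and N: "lie_superalgebra N"
    and actLN: "is_action L N aLN" and actNL: "is_action N L aNL"
    and actMN: "is_action M N aMN" and actNM: "is_action N M aNM"
    and ii: "\<forall>i j k. \<forall>l\<in>gr L i. \<forall>m\<in>gr M j. \<forall>n\<in>gr N k.
               aLN l (aMN m n) = sc N (sg (i \<and> j)) (aMN m (aLN l n))"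
    and iii1: "canon_trivial N (act_ideal L N aLN) M aNM aMN"
    and iii2: "canon_trivial N (act_ideal M N aMN) L aNL aLN"
begin

abbreviation "D \<equiv> dsum L M"
abbreviation "aDN \<equiv> dsum_act N aLN aMN"
abbreviation "aND \<equiv> act_dsum aNL aNM"

lemmas vL = ls_vs[OF L] and vM = ls_vs[OF M] and vN = ls_vs[OF N]
lemmas grL = ls_gr_car[OF L] and grM = ls_gr_car[OF M] and grN = ls_gr_car[OF N]
lemmas cN = v_add_car[OF vN] v_sc_car[OF vN] act_car[OF actLN] act_car[OF actMN] ls_br_car[OF N]

lemma ii_ext: assumes l: "l \<in> gr L i" and m: "m \<in> gr M j" and n: "n \<in> car N"
  shows "aLN l (aMN m n) = sc N (sg (i \<and> j)) (aMN m (aLN l n))"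
proof -
  obtain n0 n1 where n01: "n0 \<in> gr N False" "n1 \<in> gr N True" "n = ad N n0 n1" using ls_decomp[OF N n] by blast
  have c: "l \<in> car L" "m \<in> car M" "n0 \<in> car N" "n1 \<in> car N" using l m n01 grL grM grN by auto
  have i0: "aLN l (aMN m n0) = sc N (sg (i \<and> j)) (aMN m (aLN l n0))" using ii l m n01(1) by blast
  have i1: "aLN l (aMN m n1) = sc N (sg (i \<and> j)) (aMN m (aLN l n1))" using ii l m n01(2) by blast
  have "aLN l (aMN m n) = ad N (aLN l (aMN m n0)) (aLN l (aMN m n1))"
    using c by (simp add: n01(3) act_addr[OF actMN] act_addr[OF actLN] cN)
  also have "\<dots> = sc N (sg (i \<and> j)) (ad N (aMN m (aLN l n0)) (aMN m (aLN l n1)))"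
    using c by (simp add: i0 i1 v_sc_add[OF vN] cN)
  also have "\<dots> = sc N (sg (i \<and> j)) (aMN m (aLN l n))"
    using c by (simp add: n01(3) act_addr[OF actMN] act_addr[OF actLN] cN)
  finally show ?thesis .
qed

lemma part1: "is_action D N aDN"
  unfolding is_action_def
proof (intro conjI)
  show "\<forall>p\<in>car D. \<forall>n\<in>car N. aDN p n \<in> car N" by (auto simp: cN)
  show "\<forall>p\<in>car D. \<forall>p'\<in>car D. \<forall>n\<in>car N. aDN (ad D p p') n = ad N (aDN p n) (aDN p' n)"
  proof (intro ballI)
    fix p p' n assume "p \<in> car D" "p' \<in> car D" and n: "n \<in> car N"
    then obtain l m l' m' where p: "p = (l, m)" "p' = (l', m')" "l \<in> car L" "m \<in> car M" "l' \<in> car L" "m' \<in> car M" by auto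
    show "aDN (ad D p p') n = ad N (aDN p n) (aDN p' n)"
      using p n by (simp add: act_addl[OF actLN] act_addl[OF actMN] v_swap4[OF vN] cN)
  qed
  show "\<forall>c. \<forall>p\<in>car D. \<forall>n\<in>car N. aDN (sc D c p) n = sc N c (aDN p n)"
  proof (intro allI ballI)
    fix c p n assume "p \<in> car D" and n: "n \<in> car N"
    then obtain l m where p: "p = (l, m)" "l \<in> car L" "m \<in> car M" by auto
    show "aDN (sc D c p) n = sc N c (aDN p n)"
      using p n by (simp add: act_scl[OF actLN] act_scl[OF actMN] v_sc_add[OF vN] cN)
  qed
  show "\<forall>p\<in>car D. \<forall>n\<in>car N. \<forall>n'\<in>car N. aDN p (ad N n n') = ad N (aDN p n) (aDN p n')"
  proof (intro ballI)
    fix p n n' assume "p \<in> car D" and n: "n \<in> car N" "n' \<in> car N"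
    then obtain l m where p: "p = (l, m)" "l \<in> car L" "m \<in> car M" by auto
    show "aDN p (ad N n n') = ad N (aDN p n) (aDN p n')"
      using p n by (simp add: act_addr[OF actLN] act_addr[OF actMN] v_swap4[OF vN] cN)
  qed
  show "\<forall>c. \<forall>p\<in>car D. \<forall>n\<in>car N. aDN p (sc N c n) = sc N c (aDN p n)"
  proof (intro allI ballI)
    fix c p n assume "p \<in> car D" and n: "n \<in> car N"
    then obtain l m where p: "p = (l, m)" "l \<in> car L" "m \<in> car M" by auto
    show "aDN p (sc N c n) = sc N c (aDN p n)"
      using p n by (simp add: act_scr[OF actLN] act_scr[OF actMN] v_sc_add[OF vN] cN)
  qed
  show "\<forall>i j. \<forall>p\<in>gr D i. \<forall>n\<in>gr N j. aDN p n \<in> gr N (i \<noteq> j)"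
  proof (intro allI ballI)
    fix i j p n assume "p \<in> gr D i" and n: "n \<in> gr N j"
    then obtain l m where p: "p = (l, m)" "l \<in> gr L i" "m \<in> gr M i" by auto
    show "aDN p n \<in> gr N (i \<noteq> j)"
      using p n by (simp add: ls_gr_ad[OF N] act_gr'[OF actLN] act_gr'[OF actMN])
  qed
  show "\<forall>i j. \<forall>p\<in>gr D i. \<forall>p'\<in>gr D j. \<forall>n\<in>car N.
         aDN (br D p p') n = lsub N (aDN p (aDN p' n)) (sc N (sg (i \<and> j)) (aDN p' (aDN p n)))"
  proof (intro allI ballI)
    fix i j p p' n assume "p \<in> gr D i" "p' \<in> gr D j" and n: "n \<in> car N"
    then obtain l m l' m' where p: "p = (l, m)" "p' = (l', m')" "l \<in> gr L i" "m \<in> gr M i" "l' \<in> gr L j" "m' \<in> gr M j" by auto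
    have c: "l \<in> car L" "m \<in> car M" "l' \<in> car L" "m' \<in> car M" using p grL grM by auto
    let ?s = "sg (i \<and> j)"
    have e1: "aLN (br L l l') n = lsub N (aLN l (aLN l' n)) (sc N ?s (aLN l' (aLN l n)))"
      by (rule act_br1[OF actLN p(3) p(5) n])
    have e2: "aMN (br M m m') n = lsub N (aMN m (aMN m' n)) (sc N ?s (aMN m' (aMN m n)))"
      by (rule act_br1[OF actMN p(4) p(6) n])
    have e3: "aDN p (aDN p' n) = ad N (ad N (aLN l (aLN l' n)) (aLN l (aMN m' n))) (ad N (aMN m (aLN l' n)) (aMN m (aMN m' n)))"
      using p c n by (simp add: act_addr[OF actLN] act_addr[OF actMN] cN)
    have e4: "aDN p' (aDN p n) = ad N (ad N (aLN l' (aLN l n)) (aLN l' (aMN m n))) (ad N (aMN m' (aLN l n)) (aMN m' (aMN m n)))"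
      using p c n by (simp add: act_addr[OF actLN] act_addr[OF actMN] cN)
    have x1: "aLN l (aMN m' n) = sc N ?s (aMN m' (aLN l n))" by (rule ii_ext[OF p(3) p(6) n])
    have y1: "aLN l' (aMN m n) = sc N ?s (aMN m (aLN l' n))"
      using ii_ext[OF p(5) p(4) n] by (cases i; cases j; simp)
    show "aDN (br D p p') n = lsub N (aDN p (aDN p' n)) (sc N ?s (aDN p' (aDN p n)))"
      unfolding e3 e4 x1 y1 using p(1,2) e1 e2
      by (simp, intro cross_id[OF vN]) (use c n in \<open>simp_all add: cN\<close>)
  qed
  show "\<forall>i j. \<forall>p\<in>gr D i. \<forall>n\<in>gr N j. \<forall>n'\<in>car N.
         aDN p (br N n n') = ad N (br N (aDN p n) n') (sc N (sg (i \<and> j)) (br N n (aDN p n')))"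
  proof (intro allI ballI)
    fix i j p n n' assume "p \<in> gr D i" and n: "n \<in> gr N j" "n' \<in> car N"
    then obtain l m where p: "p = (l, m)" "l \<in> gr L i" "m \<in> gr M i" by auto
    have c: "l \<in> car L" "m \<in> car M" "n \<in> car N" using p n grL grM grN by auto
    let ?s = "sg (i \<and> j)"
    have e1: "aLN l (br N n n') = ad N (br N (aLN l n) n') (sc N ?s (br N n (aLN l n')))"
      by (rule act_br2[OF actLN p(2) n])
    have e2: "aMN m (br N n n') = ad N (br N (aMN m n) n') (sc N ?s (br N n (aMN m n')))"
      by (rule act_br2[OF actMN p(3) n])
    have e3: "br N (aDN p n) n' = ad N (br N (aLN l n) n') (br N (aMN m n) n')"
      using p c n by (simp add: ls_br_add[OF N] cN)
    have e4: "sc N ?s (br N n (aDN p n')) = ad N (sc N ?s (br N n (aLN l n'))) (sc N ?s (br N n (aMN m n')))"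
      using p c n by (simp add: ls_br_add[OF N] v_sc_add[OF vN] cN)
    show "aDN p (br N n n') = ad N (br N (aDN p n) n') (sc N ?s (br N n (aDN p n')))"
      unfolding e3 e4 using p(1) e1 e2 c n
      by (simp, intro v_swap4[OF vN, symmetric]) (simp_all add: cN)
  qed
qed

lemma part2: "is_action N D aND"
  unfolding is_action_def
proof (intro conjI)
  show "\<forall>n\<in>car N. \<forall>p\<in>car D. aND n p \<in> car D"
    by (auto simp: act_car[OF actNL] act_car[OF actNM])
  show "\<forall>n\<in>car N. \<forall>n'\<in>car N. \<forall>p\<in>car D. aND (ad N n n') p = ad D (aND n p) (aND n' p)"
    by (auto simp: act_addl[OF actNL] act_addl[OF actNM])
  show "\<forall>c. \<forall>n\<in>car N. \<forall>p\<in>car D. aND (sc N c n) p = sc D c (aND n p)"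
    by (auto simp: act_scl[OF actNL] act_scl[OF actNM])
  show "\<forall>n\<in>car N. \<forall>p\<in>car D. \<forall>p'\<in>car D. aND n (ad D p p') = ad D (aND n p) (aND n p')"
    by (auto simp: act_addr[OF actNL] act_addr[OF actNM])
  show "\<forall>c. \<forall>n\<in>car N. \<forall>p\<in>car D. aND n (sc D c p) = sc D c (aND n p)"
    by (auto simp: act_scr[OF actNL] act_scr[OF actNM])
  show "\<forall>i j. \<forall>n\<in>gr N i. \<forall>p\<in>gr D j. aND n p \<in> gr D (i \<noteq> j)"
    by (auto simp: act_gr'[OF actNL] act_gr'[OF actNM])
  show "\<forall>i j. \<forall>n\<in>gr N i. \<forall>n'\<in>gr N j. \<forall>p\<in>car D.
         aND (br N n n') p = lsub D (aND n (aND n' p)) (sc D (sg (i \<and> j)) (aND n' (aND n p)))"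
    by (auto simp: act_br1[OF actNL] act_br1[OF actNM] act_car[OF actNL] act_car[OF actNM])
  show "\<forall>i j. \<forall>n\<in>gr N i. \<forall>p\<in>gr D j. \<forall>p'\<in>car D.
         aND n (br D p p') = ad D (br D (aND n p) p') (sc D (sg (i \<and> j)) (br D p (aND n p')))"
    by (auto simp: act_br2[OF actNL] act_br2[OF actNM] act_car[OF actNL] act_car[OF actNM])
qed

end


context fixes M :: "('m, 'k::field) lsa" and N :: "('n, 'k) lsa" and aMN :: "'m \<Rightarrow> 'n \<Rightarrow> 'n" and aNM :: "'n \<Rightarrow> 'm \<Rightarrow> 'm"
begin
lemma trR1: "m \<in> gr M i \<Longrightarrow> n \<in> gr N j \<Longrightarrow>
  fminus (fsc c (dl (m, n, i, j))) (dl (sc M c m, n, i, j)) \<in> trels M N aMN aNM"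
  unfolding trels_def by (rule UnI1, rule UnI1, rule UnI1, rule UnI1, rule UnI1) blast
lemma trR2: "m \<in> gr M i \<Longrightarrow> n \<in> gr N j \<Longrightarrow>
  fminus (fsc c (dl (m, n, i, j))) (dl (m, sc N c n, i, j)) \<in> trels M N aMN aNM"
  unfolding trels_def by (rule UnI1, rule UnI1, rule UnI1, rule UnI1, rule UnI2) blast
lemma trR3: "m \<in> gr M i \<Longrightarrow> m' \<in> gr M i \<Longrightarrow> n \<in> gr N j \<Longrightarrow>
  fminus (dl (ad M m m', n, i, j)) (fadd (dl (m, n, i, j)) (dl (m', n, i, j))) \<in> trels M N aMN aNM"
  unfolding trels_def by (rule UnI1, rule UnI1, rule UnI1, rule UnI2) blast
lemma trR4: "m \<in> gr M i \<Longrightarrow> n \<in> gr N j \<Longrightarrow> n' \<in> gr N j \<Longrightarrow>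
  fminus (dl (m, ad N n n', i, j)) (fadd (dl (m, n, i, j)) (dl (m, n', i, j))) \<in> trels M N aMN aNM"
  unfolding trels_def by (rule UnI1, rule UnI1, rule UnI2) blast
lemma trR5: "m \<in> gr M i \<Longrightarrow> m' \<in> gr M i' \<Longrightarrow> n \<in> gr N j \<Longrightarrow>
  fadd (fminus (dl (br M m m', n, i \<noteq> i', j)) (dl (m, aMN m' n, i, i' \<noteq> j)))
            (fsc (sg (i \<and> i')) (dl (m', aMN m n, i', i \<noteq> j))) \<in> trels M N aMN aNM"
  unfolding trels_def by (rule UnI1, rule UnI2) blast
lemma trR6: "m \<in> gr M i \<Longrightarrow> n \<in> gr N j \<Longrightarrow> n' \<in> gr N j' \<Longrightarrow>
  fadd (fminus (dl (m, br N n n', i, j \<noteq> j'))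
                    (fsc (sg (j' \<and> (i \<noteq> j))) (dl (aNM n' m, n, i \<noteq> j', j))))
            (fsc (sg (i \<and> j)) (dl (aNM n m, n', i \<noteq> j, j'))) \<in> trels M N aMN aNM"
  unfolding trels_def by (rule UnI2) blast

lemma trels_cases:
  assumes "r \<in> trels M N aMN aNM"
  obtains (R1) c m n i j where "m \<in> gr M i" "n \<in> gr N j" "r = fminus (fsc c (dl (m, n, i, j))) (dl (sc M c m, n, i, j))"
  | (R2) c m n i j where "m \<in> gr M i" "n \<in> gr N j" "r = fminus (fsc c (dl (m, n, i, j))) (dl (m, sc N c n, i, j))"
  | (R3) m m' n i j where "m \<in> gr M i" "m' \<in> gr M i" "n \<in> gr N j"
      "r = fminus (dl (ad M m m', n, i, j)) (fadd (dl (m, n, i, j)) (dl (m', n, i, j)))"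
  | (R4) m n n' i j where "m \<in> gr M i" "n \<in> gr N j" "n' \<in> gr N j"
      "r = fminus (dl (m, ad N n n', i, j)) (fadd (dl (m, n, i, j)) (dl (m, n', i, j)))"
  | (R5) m m' n i i' j where "m \<in> gr M i" "m' \<in> gr M i'" "n \<in> gr N j"
      "r = fadd (fminus (dl (br M m m', n, i \<noteq> i', j)) (dl (m, aMN m' n, i, i' \<noteq> j)))
            (fsc (sg (i \<and> i')) (dl (m', aMN m n, i', i \<noteq> j)))"
  | (R6) m n n' i j j' where "m \<in> gr M i" "n \<in> gr N j" "n' \<in> gr N j'"
      "r = fadd (fminus (dl (m, br N n n', i, j \<noteq> j'))
                    (fsc (sg (j' \<and> (i \<noteq> j))) (dl (aNM n' m, n, i \<noteq> j', j))))
            (fsc (sg (i \<and> j)) (dl (aNM n m, n', i \<noteq> j, j')))"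
  using assms unfolding trels_def by (elim UnE; (elim CollectE exE conjE)?) blast+

end

lemma fvs_gr_dl: "p \<in> G \<Longrightarrow> dl p \<in> fvs_gr G dg (dg p)"
  unfolding fvs_gr_def using fvs_dl[of p G] by (auto simp: dl_def)

lemma fsc_fsc: "fsc c (fsc d f) = fsc (c * d) f" unfolding fsc_def by (auto simp: mult_ac)
lemma fsc_one: "fsc 1 f = f" unfolding fsc_def by simp

definition swg :: "'n \<times> 'l \<times> bool \<times> bool \<Rightarrow> 'l \<times> 'n \<times> bool \<times> bool" where
  "swg = (\<lambda>(n, l, i, j). (l, n, j, i))"
definition swc :: "'n \<times> 'l \<times> bool \<times> bool \<Rightarrow> 'k::field" where
  "swc = (\<lambda>(n, l, i, j). - sg (i \<and> j))"

lemma swg_simp[simp]: "swg (n, l, i, j) = (l, n, j, i)" by (simp add: swg_def)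
lemma swc_simp[simp]: "swc (n, l, i, j) = - sg (i \<and> j)" by (simp add: swc_def)

lemmas fmap_lin = fmap_fminus fmap_fadd fmap_fsc fmap_dl fins


lemma swap_tmap:
  fixes L :: "('l, 'k::field) lsa" and N :: "('n, 'k) lsa"
    and aLN :: "'l \<Rightarrow> 'n \<Rightarrow> 'n" and aNL :: "'n \<Rightarrow> 'l \<Rightarrow> 'l"
  assumes gL: "gclosed L" and gN: "gclosed N" and a1: "agr L N aLN" and a2: "agr N L aNL"
  shows "tmap N L aNL aLN L N aLN aNL swg swc"
proof
  let ?K = "tker L N aLN aNL"
  show "tgood N L aNL aLN (fvs (tgens N L))" by (rule tgood_fvs[OF gN gL a2 a1])
  show "tgood L N aLN aNL (fvs (tgens L N))" by (rule tgood_fvs[OF gL gN a1 a2])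
  fix p assume "p \<in> tgens N L"
  then obtain n l i j where p: "p = (n, l, i, j)" "n \<in> gr N i" "l \<in> gr L j" unfolding tgens_def by auto
  show "swg p \<in> tgens L N" using p by simp
  show "tdeg (swg p) = tdeg p" using p by (auto simp: tdeg_def)
next
  let ?K = "tker L N aLN aNL"
  have mem: "fmap swg swc r \<in> ?K" if "fmap swg swc r = fsc k E" "E \<in> trels L N aLN aNL" for r E k
    using that tk_rels kcl_sc[OF tk_kcl] by metis
  fix r assume "r \<in> trels N L aNL aLN"
  then show "fmap swg swc r \<in> ?K"
  proof (cases rule: trels_cases)
    case (R1 c n l i j)
    show ?thesis
    proof (rule mem)
      show "fminus (fsc c (dl (l, n, j, i))) (dl (l, sc N c n, j, i)) \<in> trels L N aLN aNL" by (rule trR2) (use R1 in auto)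
      show "fmap swg swc r = fsc (- sg (i \<and> j)) (fminus (fsc c (dl (l, n, j, i))) (dl (l, sc N c n, j, i)))"
        unfolding R1 by (simp add: fmap_lin) (rule ext, simp add: fminus_def fadd_def fsc_def algebra_simps)
    qed
  next
    case (R2 c n l i j)
    show ?thesis
    proof (rule mem)
      show "fminus (fsc c (dl (l, n, j, i))) (dl (sc L c l, n, j, i)) \<in> trels L N aLN aNL" by (rule trR1) (use R2 in auto)
      show "fmap swg swc r = fsc (- sg (i \<and> j)) (fminus (fsc c (dl (l, n, j, i))) (dl (sc L c l, n, j, i)))"
        unfolding R2 by (simp add: fmap_lin) (rule ext, simp add: fminus_def fadd_def fsc_def algebra_simps)
    qed
  next
    case (R3 n n' l i j)
    show ?thesis
    proof (rule mem)
      show "fminus (dl (l, ad N n n', j, i)) (fadd (dl (l, n, j, i)) (dl (l, n', j, i))) \<in> trels L N aLN aNL"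
        by (rule trR4) (use R3 in auto)
      show "fmap swg swc r = fsc (- sg (i \<and> j)) (fminus (dl (l, ad N n n', j, i)) (fadd (dl (l, n, j, i)) (dl (l, n', j, i))))"
        unfolding R3 by (simp add: fmap_lin) (rule ext, simp add: fminus_def fadd_def fsc_def algebra_simps)
    qed
  next
    case (R4 n l l' i j)
    show ?thesis
    proof (rule mem)
      show "fminus (dl (ad L l l', n, j, i)) (fadd (dl (l, n, j, i)) (dl (l', n, j, i))) \<in> trels L N aLN aNL"
        by (rule trR3) (use R4 in auto)
      show "fmap swg swc r = fsc (- sg (i \<and> j)) (fminus (dl (ad L l l', n, j, i)) (fadd (dl (l, n, j, i)) (dl (l', n, j, i))))"
        unfolding R4 by (simp add: fmap_lin) (rule ext, simp add: fminus_def fadd_def fsc_def algebra_simps)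
    qed
  next
    case (R5 n n' l i i' j)
    let ?E = "fadd (fminus (dl (l, br N n n', j, i \<noteq> i'))
                    (fsc (sg (i' \<and> (j \<noteq> i))) (dl (aNL n' l, n, j \<noteq> i', i))))
            (fsc (sg (j \<and> i)) (dl (aNL n l, n', j \<noteq> i, i')))"
    show ?thesis
    proof (rule mem)
      show "?E \<in> trels L N aLN aNL" by (rule trR6) (use R5 in auto)
      show "fmap swg swc r = fsc (- sg ((i \<noteq> i') \<and> j)) ?E"
        unfolding R5 by (simp add: fmap_lin) (rule ext, cases i; cases i'; cases j; simp add: fminus_def fadd_def fsc_def sg_def algebra_simps)
    qed
  next
    case (R6 n l l' i j j')
    let ?E = "fadd (fminus (dl (br L l l', n, j \<noteq> j', i)) (dl (l, aLN l' n, j, j' \<noteq> i)))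
            (fsc (sg (j \<and> j')) (dl (l', aLN l n, j', j \<noteq> i)))"
    show ?thesis
    proof (rule mem)
      show "?E \<in> trels L N aLN aNL" by (rule trR5) (use R6 in auto)
      show "fmap swg swc r = fsc (- sg (i \<and> (j \<noteq> j'))) ?E"
        unfolding R6 by (simp add: fmap_lin) (rule ext, cases i; cases j; cases j'; simp add: fminus_def fadd_def fsc_def sg_def algebra_simps)
    qed
  qed
next
  let ?K = "tker L N aLN aNL"
  fix p q assume "p \<in> tgens N L" "q \<in> tgens N L"
  then obtain n l i j n' l' i' j' where p: "p = (n, l, i, j)" "n \<in> gr N i" "l \<in> gr L j"
    and q: "q = (n', l', i', j')" "n' \<in> gr N i'" "l' \<in> gr L j'" unfolding tgens_def by auto
  let ?f = "dl (l', n', j', i') :: 'l \<times> 'n \<times> bool \<times> bool \<Rightarrow> 'k" and ?g = "dl (l, n, j, i) :: 'l \<times> 'n \<times> bool \<times> bool \<Rightarrow> 'k"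
  have fg: "?f \<in> fvs_gr (tgens L N) tdeg (j' \<noteq> i')" "?g \<in> fvs_gr (tgens L N) tdeg (j \<noteq> i)"
    using fvs_gr_dl[of "(l', n', j', i')" "tgens L N" tdeg] fvs_gr_dl[of "(l, n, j, i)" "tgens L N" tdeg] p q
    by (auto simp: tdeg_def)
  have an: "fadd (tbr aLN aNL ?f ?g) (fsc (sg ((j' \<noteq> i') \<and> (j \<noteq> i))) (tbr aLN aNL ?g ?f)) \<in> ?K"
    by (rule tk_anti[OF fg])
  let ?k = "- sg (i \<and> j) * sg ((i \<noteq> j) \<and> (i' \<noteq> j')) * sg (i' \<and> j') :: 'k"
  have "fminus (fmap swg swc (tbr aNL aLN (dl p) (dl q))) (tbr aLN aNL (fmap swg swc (dl p)) (fmap swg swc (dl q)))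
    = fsc ?k (fadd (tbr aLN aNL ?f ?g) (fsc (sg ((j' \<noteq> i') \<and> (j \<noteq> i))) (tbr aLN aNL ?g ?f)))"
    unfolding p q by (simp add: fmap_lin tbr_dl tbr_fsc1 tbr_fsc2)
      (rule ext, cases i; cases i'; cases j; cases j'; simp add: fminus_def fadd_def fsc_def sg_def algebra_simps)
  then show "cg ?K (fmap swg swc (tbr aNL aLN (dl p) (dl q))) (tbr aLN aNL (fmap swg swc (dl p)) (fmap swg swc (dl q)))"
    unfolding cg_def using kcl_sc[OF tk_kcl an] by metis
qed


lemma Zgen:
  fixes P :: "('p, 'k::field) lsa" and N :: "('n, 'k) lsa"
  assumes P: "lie_superalgebra P" and N: "lie_superalgebra N"
    and aPN: "is_action P N aPN" and aNP: "is_action N P aNP"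
    and ct: "canon_trivial N I P aNP aPN"
    and x: "x \<in> gr N k" "x \<in> I" and p: "p \<in> gr P i"
  shows "dl (p, x, i, k) \<in> tker P N aPN aNP"
proof -
  obtain phi where hom: "hom (tensor (subalg N I) P aNP aPN) (tensor N P aNP aPN) phi"
    and gen: "\<forall>x m i j. x \<in> gr N i \<inter> I \<and> m \<in> gr P j \<longrightarrow>
             phi (tsym (subalg N I) P aNP aPN x m i j) = tsym N P aNP aPN x m i j"
    and zer: "\<forall>X\<in>car (tensor (subalg N I) P aNP aPN). phi X = zr (tensor N P aNP aPN)"
    using ct unfolding canon_trivial_def by blast
  have "(x, p, k, i) \<in> tgens (subalg N I) P" using x p by (simp add: subalg_def)
  then have c: "tsym (subalg N I) P aNP aPN x p k i \<in> car (tensor (subalg N I) P aNP aPN)"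
    unfolding tsym_def tensor_simps by (intro imageI fvs_dl)
  have g1: "phi (tsym (subalg N I) P aNP aPN x p k i) = tsym N P aNP aPN x p k i"
    using gen[rule_format, of x k p i] x p by simp
  have "tsym N P aNP aPN x p k i = zr (tensor N P aNP aPN)" using zer[rule_format, OF c] g1 by simp
  then have "coset (tker N P aNP aPN) (dl (x, p, k, i)) = coset (tker N P aNP aPN) fzero"
    unfolding tsym_def tensor_simps .
  then have "cg (tker N P aNP aPN) (dl (x, p, k, i)) fzero" by (rule coset_eq_cg[OF tk_kcl])
  then have d: "dl (x, p, k, i) \<in> tker N P aNP aPN" by (rule cg_mem[OF tk_kcl _ tk_zero])
  interpret sw: tmap N P aNP aPN P N aPN aNP swg swc
    by (rule swap_tmap[OF lsa_gclosed[OF P] lsa_gclosed[OF N] act_agr[OF aPN] act_agr[OF aNP]])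
  have "fmap swg swc (dl (x, p, k, i)) \<in> tker P N aPN aNP" by (rule sw.pre[OF d])
  then have "fsc (- sg (k \<and> i)) (fmap swg swc (dl (x, p, k, i))) \<in> tker P N aPN aNP" by (rule kcl_sc[OF tk_kcl])
  moreover have "fsc (- sg (k \<and> i)) (fmap swg swc (dl (x, p, k, i))) = (dl (p, x, i, k) :: 'p \<times> 'n \<times> bool \<times> bool \<Rightarrow> 'k)"
    by (simp add: fmap_dl fsc_fsc sg_sq fsc_one)
  ultimately show ?thesis by simp
qed

lemma act_ideal_mem: "lie_superalgebra M \<Longrightarrow> lie_superalgebra N \<Longrightarrow> m \<in> gr M a \<Longrightarrow> n \<in> gr N b \<Longrightarrow>
   aMN m n \<in> act_ideal M N aMN"
  unfolding act_ideal_def lspan_def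
proof (rule InterI)
  fix U assume a: "lie_superalgebra M" "lie_superalgebra N" "m \<in> gr M a" "n \<in> gr N b"
    and "U \<in> {U. {aMN m n |m n. m \<in> car M \<and> n \<in> car N} \<subseteq> U \<and> subspace N U}"
  then have "{aMN m n |m n. m \<in> car M \<and> n \<in> car N} \<subseteq> U" by simp
  moreover have "m \<in> car M" "n \<in> car N" using ls_gr_car[OF a(1) a(3)] ls_gr_car[OF a(2) a(4)] by auto
  ultimately show "aMN m n \<in> U" by blast
qed


definition alg :: "('l \<times> 'm) \<times> 'n \<times> bool \<times> bool \<Rightarrow> 'l \<times> 'n \<times> bool \<times> bool" where
  "alg = (\<lambda>(d, n, i, j). (fst d, n, i, j))"
definition beg :: "('l \<times> 'm) \<times> 'n \<times> bool \<times> bool \<Rightarrow> 'm \<times> 'n \<times> bool \<times> bool" where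
  "beg = (\<lambda>(d, n, i, j). (snd d, n, i, j))"
lemma alg_simp[simp]: "alg ((l, m), n, i, j) = (l, n, i, j)" by (simp add: alg_def)
lemma beg_simp[simp]: "beg ((l, m), n, i, j) = (m, n, i, j)" by (simp add: beg_def)

context setting
begin

lemmas gD = dsum_gclosed[OF lsa_gclosed[OF L] lsa_gclosed[OF M]]
lemma goodD: "tgood D N aDN aND (fvs (tgens D N))"
  by (rule tgood_fvs[OF gD lsa_gclosed[OF N] act_agr[OF part1] act_agr[OF part2]])
lemma goodL: "tgood L N aLN aNL (fvs (tgens L N))"
  by (rule tgood_fvs[OF lsa_gclosed[OF L] lsa_gclosed[OF N] act_agr[OF actLN] act_agr[OF actNL]])
lemma goodM: "tgood M N aMN aNM (fvs (tgens M N))"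
  by (rule tgood_fvs[OF lsa_gclosed[OF M] lsa_gclosed[OF N] act_agr[OF actMN] act_agr[OF actNM]])

lemma ZL: "l \<in> gr L i \<Longrightarrow> m \<in> gr M a \<Longrightarrow> n \<in> gr N b \<Longrightarrow> dl (l, aMN m n, i, a \<noteq> b) \<in> tker L N aLN aNL"
  by (rule Zgen[OF L N actLN actNL iii2 act_gr[OF actMN] act_ideal_mem[OF M N]])
lemma ZM: "m \<in> gr M i \<Longrightarrow> l \<in> gr L a \<Longrightarrow> n \<in> gr N b \<Longrightarrow> dl (m, aLN l n, i, a \<noteq> b) \<in> tker M N aMN aNM"
  by (rule Zgen[OF M N actMN actNM iii1 act_gr[OF actLN] act_ideal_mem[OF L N]])

lemma gr_sw: assumes "x \<in> gr A (j \<noteq> i)" shows "x \<in> gr A (i \<noteq> j)"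
proof -
  have e: "(j \<noteq> i) = (i \<noteq> j)" by auto
  show ?thesis using assms unfolding e .
qed

lemma alpha_tmap: "tmap D N aDN aND L N aLN aNL alg (\<lambda>_. 1)"
proof
  show "tgood D N aDN aND (fvs (tgens D N))" by (rule goodD)
  show "tgood L N aLN aNL (fvs (tgens L N))" by (rule goodL)
  fix p assume "p \<in> tgens D N"
  then obtain l m n i j where p: "p = ((l, m), n, i, j)" "l \<in> gr L i" "m \<in> gr M i" "n \<in> gr N j" unfolding tgens_def by auto
  show "alg p \<in> tgens L N" using p by simp
  show "tdeg (alg p) = tdeg p" using p by (simp add: tdeg_def)
next
  let ?K = "tker L N aLN aNL"
  have kc: "kcl ?K" by (rule tk_kcl)
  fix r assume "r \<in> trels D N aDN aND"
  then show "fmap alg (\<lambda>_. 1) r \<in> ?K"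
  proof (cases rule: trels_cases)
    case (R1 c d n i j)
    obtain l m where d: "d = (l, m)" by force
    have "fmap alg (\<lambda>_. 1) r = fminus (fsc c (dl (l, n, i, j))) (dl (sc L c l, n, i, j))"
      unfolding R1 d by (simp add: fmap_lin fsc_one)
    then show ?thesis using R1 d by (simp add: tk_rels trR1)
  next
    case (R2 c d n i j)
    obtain l m where d: "d = (l, m)" by force
    have "fmap alg (\<lambda>_. 1) r = fminus (fsc c (dl (l, n, i, j))) (dl (l, sc N c n, i, j))"
      unfolding R2 d by (simp add: fmap_lin fsc_one)
    then show ?thesis using R2 d by (simp add: tk_rels trR2)
  next
    case (R3 d d' n i j)
    obtain l m where d: "d = (l, m)" by force
    obtain l' m' where d': "d' = (l', m')" by force
    have "fmap alg (\<lambda>_. 1) r = fminus (dl (ad L l l', n, i, j)) (fadd (dl (l, n, i, j)) (dl (l', n, i, j)))"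
      unfolding R3 d d' by (simp add: fmap_lin fsc_one)
    then show ?thesis using R3 d d' by (simp add: tk_rels trR3)
  next
    case (R4 d n n' i j)
    obtain l m where d: "d = (l, m)" by force
    have "fmap alg (\<lambda>_. 1) r = fminus (dl (l, ad N n n', i, j)) (fadd (dl (l, n, i, j)) (dl (l, n', i, j)))"
      unfolding R4 d by (simp add: fmap_lin fsc_one)
    then show ?thesis using R4 d by (simp add: tk_rels trR4)
  next
    case (R5 d d' n i i' j)
    obtain l m where d: "d = (l, m)" by force
    obtain l' m' where d': "d' = (l', m')" by force
    have g: "l \<in> gr L i" "m \<in> gr M i" "l' \<in> gr L i'" "m' \<in> gr M i'" "n \<in> gr N j" using R5 d d' by auto
    let ?x = "aLN l' n" and ?y = "aMN m' n" and ?x' = "aLN l n" and ?y' = "aMN m n" and ?s = "sg (i \<and> i')"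
    have gx: "?x \<in> gr N (i' \<noteq> j)" "?y \<in> gr N (i' \<noteq> j)" "?x' \<in> gr N (i \<noteq> j)" "?y' \<in> gr N (i \<noteq> j)"
      using g act_gr[OF actLN] act_gr[OF actMN] by auto
    let ?R = "fadd (fminus (dl (br L l l', n, i \<noteq> i', j)) (dl (l, ?x, i, i' \<noteq> j))) (fsc ?s (dl (l', ?x', i', i \<noteq> j)))"
    let ?A1 = "fminus (dl (l, ad N ?x ?y, i, i' \<noteq> j)) (fadd (dl (l, ?x, i, i' \<noteq> j)) (dl (l, ?y, i, i' \<noteq> j)))"
    let ?A2 = "fminus (dl (l', ad N ?x' ?y', i', i \<noteq> j)) (fadd (dl (l', ?x', i', i \<noteq> j)) (dl (l', ?y', i', i \<noteq> j)))"
    let ?Z1 = "dl (l, ?y, i, i' \<noteq> j)" and ?Z2 = "dl (l', ?y', i', i \<noteq> j)"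
    have mem: "?R \<in> ?K" "?A1 \<in> ?K" "?A2 \<in> ?K" "?Z1 \<in> ?K" "?Z2 \<in> ?K"
      apply (rule tk_rels, rule trR5, (rule g)+)
      apply (rule tk_rels, rule trR4, (rule g gx)+)+
      apply (rule ZL, (rule g)+)+
      done
    have "fmap alg (\<lambda>_. 1) r = fadd (fminus (fminus ?R ?A1) ?Z1) (fsc ?s (fadd ?A2 ?Z2))"
      unfolding R5 d d' by (simp add: fmap_lin fsc_one) (rule ext, simp add: fminus_def fadd_def fsc_def algebra_simps)
    then show ?thesis using mem by (simp add: kcl_add[OF kc] kcl_sc[OF kc] kcl_minus[OF kc])
  next
    case (R6 d n n' i j j')
    obtain l m where d: "d = (l, m)" by force
    have eq: "fmap alg (\<lambda>_. 1) r = fadd (fminus (dl (l, br N n n', i, j \<noteq> j'))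
                    (fsc (sg (j' \<and> (i \<noteq> j))) (dl (aNL n' l, n, i \<noteq> j', j))))
            (fsc (sg (i \<and> j)) (dl (aNL n l, n', i \<noteq> j, j')))"
      unfolding R6 d by (simp add: fmap_lin fsc_one)
    show ?thesis unfolding eq by (rule tk_rels, rule trR6) (use R6 d in auto)
  qed
next
  let ?K = "tker L N aLN aNL"
  have kc: "kcl ?K" by (rule tk_kcl)
  fix p q assume "p \<in> tgens D N" "q \<in> tgens D N"
  then obtain l m n i j l' m' n' i' j' where p: "p = ((l, m), n, i, j)" "l \<in> gr L i" "m \<in> gr M i" "n \<in> gr N j"
    and q: "q = ((l', m'), n', i', j')" "l' \<in> gr L i'" "m' \<in> gr M i'" "n' \<in> gr N j'" unfolding tgens_def by auto
  let ?a = "aNL n l" and ?x = "aLN l' n'" and ?y = "aMN m' n'"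
  have ga: "?a \<in> gr L (i \<noteq> j)" by (rule gr_sw, rule act_gr[OF actNL p(4) p(2)])
  have gx: "?x \<in> gr N (i' \<noteq> j')" "?y \<in> gr N (i' \<noteq> j')" using act_gr[OF actLN q(2) q(4)] act_gr[OF actMN q(3) q(4)] by auto
  let ?A = "fminus (dl (?a, ad N ?x ?y, i \<noteq> j, i' \<noteq> j')) (fadd (dl (?a, ?x, i \<noteq> j, i' \<noteq> j')) (dl (?a, ?y, i \<noteq> j, i' \<noteq> j')))"
  let ?Z = "dl (?a, ?y, i \<noteq> j, i' \<noteq> j')"
  have mem: "?A \<in> ?K" "?Z \<in> ?K"
    by (rule tk_rels, rule trR4, (rule ga gx)+) (rule ZL, rule ga, rule q, rule q)
  have eq: "fminus (fmap alg (\<lambda>_. 1) (tbr aDN aND (dl p) (dl q))) (tbr aLN aNL (fmap alg (\<lambda>_. 1) (dl p)) (fmap alg (\<lambda>_. 1) (dl q)))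
     = fsc (- sg (i \<and> j)) (fadd ?A ?Z)"
    unfolding p q by (simp add: fmap_lin fsc_one tbr_dl) (rule ext, simp add: fminus_def fadd_def fsc_def algebra_simps)
  show "cg ?K (fmap alg (\<lambda>_. 1) (tbr aDN aND (dl p) (dl q))) (tbr aLN aNL (fmap alg (\<lambda>_. 1) (dl p)) (fmap alg (\<lambda>_. 1) (dl q)))"
    unfolding cg_def eq by (rule kcl_sc[OF kc kcl_add[OF kc mem]])
qed

lemma beta_tmap: "tmap D N aDN aND M N aMN aNM beg (\<lambda>_. 1)"
proof
  show "tgood D N aDN aND (fvs (tgens D N))" by (rule goodD)
  show "tgood M N aMN aNM (fvs (tgens M N))" by (rule goodM)
  fix p assume "p \<in> tgens D N"
  then obtain l m n i j where p: "p = ((l, m), n, i, j)" "l \<in> gr L i" "m \<in> gr M i" "n \<in> gr N j" unfolding tgens_def by auto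
  show "beg p \<in> tgens M N" using p by simp
  show "tdeg (beg p) = tdeg p" using p by (simp add: tdeg_def)
next
  let ?K = "tker M N aMN aNM"
  have kc: "kcl ?K" by (rule tk_kcl)
  fix r assume "r \<in> trels D N aDN aND"
  then show "fmap beg (\<lambda>_. 1) r \<in> ?K"
  proof (cases rule: trels_cases)
    case (R1 c d n i j)
    obtain l m where d: "d = (l, m)" by force
    have "fmap beg (\<lambda>_. 1) r = fminus (fsc c (dl (m, n, i, j))) (dl (sc M c m, n, i, j))"
      unfolding R1 d by (simp add: fmap_lin fsc_one)
    then show ?thesis using R1 d by (simp add: tk_rels trR1)
  next
    case (R2 c d n i j)
    obtain l m where d: "d = (l, m)" by force
    have "fmap beg (\<lambda>_. 1) r = fminus (fsc c (dl (m, n, i, j))) (dl (m, sc N c n, i, j))"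
      unfolding R2 d by (simp add: fmap_lin fsc_one)
    then show ?thesis using R2 d by (simp add: tk_rels trR2)
  next
    case (R3 d d' n i j)
    obtain l m where d: "d = (l, m)" by force
    obtain l' m' where d': "d' = (l', m')" by force
    have "fmap beg (\<lambda>_. 1) r = fminus (dl (ad M m m', n, i, j)) (fadd (dl (m, n, i, j)) (dl (m', n, i, j)))"
      unfolding R3 d d' by (simp add: fmap_lin fsc_one)
    then show ?thesis using R3 d d' by (simp add: tk_rels trR3)
  next
    case (R4 d n n' i j)
    obtain l m where d: "d = (l, m)" by force
    have "fmap beg (\<lambda>_. 1) r = fminus (dl (m, ad N n n', i, j)) (fadd (dl (m, n, i, j)) (dl (m, n', i, j)))"
      unfolding R4 d by (simp add: fmap_lin fsc_one)
    then show ?thesis using R4 d by (simp add: tk_rels trR4)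
  next
    case (R5 d d' n i i' j)
    obtain l m where d: "d = (l, m)" by force
    obtain l' m' where d': "d' = (l', m')" by force
    have g: "l \<in> gr L i" "m \<in> gr M i" "l' \<in> gr L i'" "m' \<in> gr M i'" "n \<in> gr N j" using R5 d d' by auto
    let ?x = "aLN l' n" and ?y = "aMN m' n" and ?x' = "aLN l n" and ?y' = "aMN m n" and ?s = "sg (i \<and> i')"
    have gx: "?x \<in> gr N (i' \<noteq> j)" "?y \<in> gr N (i' \<noteq> j)" "?x' \<in> gr N (i \<noteq> j)" "?y' \<in> gr N (i \<noteq> j)"
      using g act_gr[OF actLN] act_gr[OF actMN] by auto
    let ?R = "fadd (fminus (dl (br M m m', n, i \<noteq> i', j)) (dl (m, ?y, i, i' \<noteq> j))) (fsc ?s (dl (m', ?y', i', i \<noteq> j)))"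
    let ?A1 = "fminus (dl (m, ad N ?x ?y, i, i' \<noteq> j)) (fadd (dl (m, ?x, i, i' \<noteq> j)) (dl (m, ?y, i, i' \<noteq> j)))"
    let ?A2 = "fminus (dl (m', ad N ?x' ?y', i', i \<noteq> j)) (fadd (dl (m', ?x', i', i \<noteq> j)) (dl (m', ?y', i', i \<noteq> j)))"
    let ?Z1 = "dl (m, ?x, i, i' \<noteq> j)" and ?Z2 = "dl (m', ?x', i', i \<noteq> j)"
    have mem: "?R \<in> ?K" "?A1 \<in> ?K" "?A2 \<in> ?K" "?Z1 \<in> ?K" "?Z2 \<in> ?K"
      apply (rule tk_rels, rule trR5, (rule g)+)
      apply (rule tk_rels, rule trR4, (rule g gx)+)+
      apply (rule ZM, (rule g)+)+
      done
    have "fmap beg (\<lambda>_. 1) r = fadd (fminus (fminus ?R ?A1) ?Z1) (fsc ?s (fadd ?A2 ?Z2))"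
      unfolding R5 d d' by (simp add: fmap_lin fsc_one) (rule ext, simp add: fminus_def fadd_def fsc_def algebra_simps)
    then show ?thesis using mem by (simp add: kcl_add[OF kc] kcl_sc[OF kc] kcl_minus[OF kc])
  next
    case (R6 d n n' i j j')
    obtain l m where d: "d = (l, m)" by force
    have eq: "fmap beg (\<lambda>_. 1) r = fadd (fminus (dl (m, br N n n', i, j \<noteq> j'))
                    (fsc (sg (j' \<and> (i \<noteq> j))) (dl (aNM n' m, n, i \<noteq> j', j))))
            (fsc (sg (i \<and> j)) (dl (aNM n m, n', i \<noteq> j, j')))"
      unfolding R6 d by (simp add: fmap_lin fsc_one)
    show ?thesis unfolding eq by (rule tk_rels, rule trR6) (use R6 d in auto)
  qed
next
  let ?K = "tker M N aMN aNM"
  have kc: "kcl ?K" by (rule tk_kcl)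
  fix p q assume "p \<in> tgens D N" "q \<in> tgens D N"
  then obtain l m n i j l' m' n' i' j' where p: "p = ((l, m), n, i, j)" "l \<in> gr L i" "m \<in> gr M i" "n \<in> gr N j"
    and q: "q = ((l', m'), n', i', j')" "l' \<in> gr L i'" "m' \<in> gr M i'" "n' \<in> gr N j'" unfolding tgens_def by auto
  let ?a = "aNM n m" and ?x = "aLN l' n'" and ?y = "aMN m' n'"
  have ga: "?a \<in> gr M (i \<noteq> j)" by (rule gr_sw, rule act_gr[OF actNM p(4) p(3)])
  have gx: "?x \<in> gr N (i' \<noteq> j')" "?y \<in> gr N (i' \<noteq> j')" using act_gr[OF actLN q(2) q(4)] act_gr[OF actMN q(3) q(4)] by auto
  let ?A = "fminus (dl (?a, ad N ?x ?y, i \<noteq> j, i' \<noteq> j')) (fadd (dl (?a, ?x, i \<noteq> j, i' \<noteq> j')) (dl (?a, ?y, i \<noteq> j, i' \<noteq> j')))"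
  let ?Z = "dl (?a, ?x, i \<noteq> j, i' \<noteq> j')"
  have mem: "?A \<in> ?K" "?Z \<in> ?K"
    by (rule tk_rels, rule trR4, (rule ga gx)+) (rule ZM, rule ga, rule q, rule q)
  have eq: "fminus (fmap beg (\<lambda>_. 1) (tbr aDN aND (dl p) (dl q))) (tbr aMN aNM (fmap beg (\<lambda>_. 1) (dl p)) (fmap beg (\<lambda>_. 1) (dl q)))
     = fsc (- sg (i \<and> j)) (fadd ?A ?Z)"
    unfolding p q by (simp add: fmap_lin fsc_one tbr_dl) (rule ext, simp add: fminus_def fadd_def fsc_def algebra_simps)
  show "cg ?K (fmap beg (\<lambda>_. 1) (tbr aDN aND (dl p) (dl q))) (tbr aMN aNM (fmap beg (\<lambda>_. 1) (dl p)) (fmap beg (\<lambda>_. 1) (dl q)))"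
    unfolding cg_def eq by (rule kcl_sc[OF kc kcl_add[OF kc mem]])
qed

end


context setting
begin

definition io1 :: "'l \<times> 'n \<times> bool \<times> bool \<Rightarrow> ('l \<times> 'm) \<times> 'n \<times> bool \<times> bool" where
  "io1 = (\<lambda>(l, n, i, j). ((l, zr M), n, i, j))"
definition io2 :: "'m \<times> 'n \<times> bool \<times> bool \<Rightarrow> ('l \<times> 'm) \<times> 'n \<times> bool \<times> bool" where
  "io2 = (\<lambda>(m, n, i, j). ((zr L, m), n, i, j))"
lemma io1_simp[simp]: "io1 (l, n, i, j) = ((l, zr M), n, i, j)" by (simp add: io1_def)
lemma io2_simp[simp]: "io2 (m, n, i, j) = ((zr L, m), n, i, j)" by (simp add: io2_def)

lemma zfacts:
  "sc M c (zr M) = zr M" "ad M (zr M) (zr M) = zr M" "br M (zr M) (zr M) = zr M"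
  "sc L c (zr L) = zr L" "ad L (zr L) (zr L) = zr L" "br L (zr L) (zr L) = zr L"
  by (simp_all add: v_sc_zr[OF vM] v_zl[OF vM v_zr_car[OF vM]] ls_br_zr[OF M v_zr_car[OF vM]]
      v_sc_zr[OF vL] v_zl[OF vL v_zr_car[OF vL]] ls_br_zr[OF L v_zr_car[OF vL]])

lemma zact:
  "n \<in> car N \<Longrightarrow> aMN (zr M) n = zr N" "n \<in> car N \<Longrightarrow> aLN (zr L) n = zr N"
  "n \<in> car N \<Longrightarrow> aNM n (zr M) = zr M" "n \<in> car N \<Longrightarrow> aNL n (zr L) = zr L"
  "x \<in> car N \<Longrightarrow> ad N x (zr N) = x" "x \<in> car N \<Longrightarrow> ad N (zr N) x = x"
  by (simp_all add: act_zr_l[OF actMN vM vN] act_zr_l[OF actLN vL vN] act_zr_r[OF actNM vM]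
      act_zr_r[OF actNL vL] v_zr[OF vN] v_zl[OF vN])

lemma iota1_tmap: "tmap L N aLN aNL D N aDN aND io1 (\<lambda>_. 1)"
proof
  show "tgood D N aDN aND (fvs (tgens D N))" by (rule goodD)
  show "tgood L N aLN aNL (fvs (tgens L N))" by (rule goodL)
  fix p assume "p \<in> tgens L N"
  then obtain l n i j where p: "p = (l, n, i, j)" "l \<in> gr L i" "n \<in> gr N j" unfolding tgens_def by auto
  show "io1 p \<in> tgens D N" using p by (simp add: ls_zr_gr[OF M])
  show "tdeg (io1 p) = tdeg p" using p by (simp add: tdeg_def)
next
  let ?K = "tker D N aDN aND"
  fix r assume "r \<in> trels L N aLN aNL"
  then show "fmap io1 (\<lambda>_. 1) r \<in> ?K"
  proof (cases rule: trels_cases)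
    case (R1 c l n i j)
    have eq: "fmap io1 (\<lambda>_. 1) r = fminus (fsc c (dl ((l, zr M), n, i, j))) (dl (sc D c (l, zr M), n, i, j))"
      unfolding R1 by (simp add: fmap_lin fsc_one zfacts)
    show ?thesis unfolding eq by (rule tk_rels, rule trR1) (use R1 in \<open>auto simp: ls_zr_gr[OF M]\<close>)
  next
    case (R2 c l n i j)
    have eq: "fmap io1 (\<lambda>_. 1) r = fminus (fsc c (dl ((l, zr M), n, i, j))) (dl ((l, zr M), sc N c n, i, j))"
      unfolding R2 by (simp add: fmap_lin fsc_one zfacts)
    show ?thesis unfolding eq by (rule tk_rels, rule trR2) (use R2 in \<open>auto simp: ls_zr_gr[OF M]\<close>)
  next
    case (R3 l l' n i j)
    have eq: "fmap io1 (\<lambda>_. 1) r = fminus (dl (ad D (l, zr M) (l', zr M), n, i, j)) (fadd (dl ((l, zr M), n, i, j)) (dl ((l', zr M), n, i, j)))"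
      unfolding R3 by (simp add: fmap_lin fsc_one zfacts)
    show ?thesis unfolding eq by (rule tk_rels, rule trR3) (use R3 in \<open>auto simp: ls_zr_gr[OF M]\<close>)
  next
    case (R4 l n n' i j)
    have eq: "fmap io1 (\<lambda>_. 1) r = fminus (dl ((l, zr M), ad N n n', i, j)) (fadd (dl ((l, zr M), n, i, j)) (dl ((l, zr M), n', i, j)))"
      unfolding R4 by (simp add: fmap_lin fsc_one zfacts)
    show ?thesis unfolding eq by (rule tk_rels, rule trR4) (use R4 in \<open>auto simp: ls_zr_gr[OF M]\<close>)
  next
    case (R5 l l' n i i' j)
    have c: "n \<in> car N" "aLN l n \<in> car N" "aLN l' n \<in> car N" using R5 grL grN act_car[OF actLN] by auto
    have eq: "fmap io1 (\<lambda>_. 1) r = fadd (fminus (dl (br D (l, zr M) (l', zr M), n, i \<noteq> i', j)) (dl ((l, zr M), aDN (l', zr M) n, i, i' \<noteq> j)))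
            (fsc (sg (i \<and> i')) (dl ((l', zr M), aDN (l, zr M) n, i', i \<noteq> j)))"
      unfolding R5 using c by (simp add: fmap_lin fsc_one zfacts zact)
    show ?thesis unfolding eq by (rule tk_rels, rule trR5) (use R5 in \<open>auto simp: ls_zr_gr[OF M]\<close>)
  next
    case (R6 l n n' i j j')
    have c: "n \<in> car N" "n' \<in> car N" using R6 grN by auto
    have eq: "fmap io1 (\<lambda>_. 1) r = fadd (fminus (dl ((l, zr M), br N n n', i, j \<noteq> j'))
                    (fsc (sg (j' \<and> (i \<noteq> j))) (dl (aND n' (l, zr M), n, i \<noteq> j', j))))
            (fsc (sg (i \<and> j)) (dl (aND n (l, zr M), n', i \<noteq> j, j')))"
      unfolding R6 using c by (simp add: fmap_lin fsc_one zfacts zact)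
    show ?thesis unfolding eq by (rule tk_rels, rule trR6) (use R6 in \<open>auto simp: ls_zr_gr[OF M]\<close>)
  qed
next
  fix p q assume "p \<in> tgens L N" "q \<in> tgens L N"
  then obtain l n i j l' n' i' j' where p: "p = (l, n, i, j)" "l \<in> gr L i" "n \<in> gr N j"
    and q: "q = (l', n', i', j')" "l' \<in> gr L i'" "n' \<in> gr N j'" unfolding tgens_def by auto
  have c: "n \<in> car N" "n' \<in> car N" "aLN l' n' \<in> car N" using p q grL grN act_car[OF actLN] by auto
  have eq: "fmap io1 (\<lambda>_. 1) (tbr aLN aNL (dl p) (dl q)) = tbr aDN aND (fmap io1 (\<lambda>_. 1) (dl p)) (fmap io1 (\<lambda>_. 1) (dl q))"
    unfolding p q using c by (simp add: fmap_lin fsc_one tbr_dl zact)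
  show "cg (tker D N aDN aND) (fmap io1 (\<lambda>_. 1) (tbr aLN aNL (dl p) (dl q))) (tbr aDN aND (fmap io1 (\<lambda>_. 1) (dl p)) (fmap io1 (\<lambda>_. 1) (dl q)))"
    unfolding eq by (rule cg_refl[OF tk_kcl])
qed

lemma iota2_tmap: "tmap M N aMN aNM D N aDN aND io2 (\<lambda>_. 1)"
proof
  show "tgood D N aDN aND (fvs (tgens D N))" by (rule goodD)
  show "tgood M N aMN aNM (fvs (tgens M N))" by (rule goodM)
  fix p assume "p \<in> tgens M N"
  then obtain l n i j where p: "p = (l, n, i, j)" "l \<in> gr M i" "n \<in> gr N j" unfolding tgens_def by auto
  show "io2 p \<in> tgens D N" using p by (simp add: ls_zr_gr[OF L])
  show "tdeg (io2 p) = tdeg p" using p by (simp add: tdeg_def)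
next
  let ?K = "tker D N aDN aND"
  fix r assume "r \<in> trels M N aMN aNM"
  then show "fmap io2 (\<lambda>_. 1) r \<in> ?K"
  proof (cases rule: trels_cases)
    case (R1 c l n i j)
    have eq: "fmap io2 (\<lambda>_. 1) r = fminus (fsc c (dl ((zr L, l), n, i, j))) (dl (sc D c (zr L, l), n, i, j))"
      unfolding R1 by (simp add: fmap_lin fsc_one zfacts)
    show ?thesis unfolding eq by (rule tk_rels, rule trR1) (use R1 in \<open>auto simp: ls_zr_gr[OF L]\<close>)
  next
    case (R2 c l n i j)
    have eq: "fmap io2 (\<lambda>_. 1) r = fminus (fsc c (dl ((zr L, l), n, i, j))) (dl ((zr L, l), sc N c n, i, j))"
      unfolding R2 by (simp add: fmap_lin fsc_one zfacts)
    show ?thesis unfolding eq by (rule tk_rels, rule trR2) (use R2 in \<open>auto simp: ls_zr_gr[OF L]\<close>)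
  next
    case (R3 l l' n i j)
    have eq: "fmap io2 (\<lambda>_. 1) r = fminus (dl (ad D (zr L, l) (zr L, l'), n, i, j)) (fadd (dl ((zr L, l), n, i, j)) (dl ((zr L, l'), n, i, j)))"
      unfolding R3 by (simp add: fmap_lin fsc_one zfacts)
    show ?thesis unfolding eq by (rule tk_rels, rule trR3) (use R3 in \<open>auto simp: ls_zr_gr[OF L]\<close>)
  next
    case (R4 l n n' i j)
    have eq: "fmap io2 (\<lambda>_. 1) r = fminus (dl ((zr L, l), ad N n n', i, j)) (fadd (dl ((zr L, l), n, i, j)) (dl ((zr L, l), n', i, j)))"
      unfolding R4 by (simp add: fmap_lin fsc_one zfacts)
    show ?thesis unfolding eq by (rule tk_rels, rule trR4) (use R4 in \<open>auto simp: ls_zr_gr[OF L]\<close>)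
  next
    case (R5 l l' n i i' j)
    have c: "n \<in> car N" "aMN l n \<in> car N" "aMN l' n \<in> car N" using R5 grM grN act_car[OF actMN] by auto
    have eq: "fmap io2 (\<lambda>_. 1) r = fadd (fminus (dl (br D (zr L, l) (zr L, l'), n, i \<noteq> i', j)) (dl ((zr L, l), aDN (zr L, l') n, i, i' \<noteq> j)))
            (fsc (sg (i \<and> i')) (dl ((zr L, l'), aDN (zr L, l) n, i', i \<noteq> j)))"
      unfolding R5 using c by (simp add: fmap_lin fsc_one zfacts zact)
    show ?thesis unfolding eq by (rule tk_rels, rule trR5) (use R5 in \<open>auto simp: ls_zr_gr[OF L]\<close>)
  next
    case (R6 l n n' i j j')
    have c: "n \<in> car N" "n' \<in> car N" using R6 grN by auto
    have eq: "fmap io2 (\<lambda>_. 1) r = fadd (fminus (dl ((zr L, l), br N n n', i, j \<noteq> j'))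
                    (fsc (sg (j' \<and> (i \<noteq> j))) (dl (aND n' (zr L, l), n, i \<noteq> j', j))))
            (fsc (sg (i \<and> j)) (dl (aND n (zr L, l), n', i \<noteq> j, j')))"
      unfolding R6 using c by (simp add: fmap_lin fsc_one zfacts zact)
    show ?thesis unfolding eq by (rule tk_rels, rule trR6) (use R6 in \<open>auto simp: ls_zr_gr[OF L]\<close>)
  qed
next
  fix p q assume "p \<in> tgens M N" "q \<in> tgens M N"
  then obtain l n i j l' n' i' j' where p: "p = (l, n, i, j)" "l \<in> gr M i" "n \<in> gr N j"
    and q: "q = (l', n', i', j')" "l' \<in> gr M i'" "n' \<in> gr N j'" unfolding tgens_def by auto
  have c: "n \<in> car N" "n' \<in> car N" "aMN l' n' \<in> car N" using p q grM grN act_car[OF actMN] by auto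
  have eq: "fmap io2 (\<lambda>_. 1) (tbr aMN aNM (dl p) (dl q)) = tbr aDN aND (fmap io2 (\<lambda>_. 1) (dl p)) (fmap io2 (\<lambda>_. 1) (dl q))"
    unfolding p q using c by (simp add: fmap_lin fsc_one tbr_dl zact)
  show "cg (tker D N aDN aND) (fmap io2 (\<lambda>_. 1) (tbr aMN aNM (dl p) (dl q))) (tbr aDN aND (fmap io2 (\<lambda>_. 1) (dl p)) (fmap io2 (\<lambda>_. 1) (dl q)))"
    unfolding eq by (rule cg_refl[OF tk_kcl])
qed

end


lemma hom_car: "hom A B f \<Longrightarrow> x \<in> car A \<Longrightarrow> f x \<in> car B" unfolding hom_def by blast
lemma hom_ad: "hom A B f \<Longrightarrow> x \<in> car A \<Longrightarrow> y \<in> car A \<Longrightarrow> f (ad A x y) = ad B (f x) (f y)" unfolding hom_def by blast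
lemma hom_sc: "hom A B f \<Longrightarrow> x \<in> car A \<Longrightarrow> f (sc A c x) = sc B c (f x)" unfolding hom_def by blast
lemma hom_br: "hom A B f \<Longrightarrow> x \<in> car A \<Longrightarrow> y \<in> car A \<Longrightarrow> f (br A x y) = br B (f x) (f y)" unfolding hom_def by blast
lemma hom_gr: "hom A B f \<Longrightarrow> x \<in> gr A b \<Longrightarrow> f x \<in> gr B b" unfolding hom_def by blast

lemma fadd_fzero: "fadd f fzero = f" "fadd fzero f = f" unfolding fadd_def fzero_def by simp_all

lemma tensor_zero_add:
  fixes M :: "('m, 'k::field) lsa" and N :: "('n, 'k) lsa"
  assumes X: "X \<in> car (tensor M N a b)" and k: "k \<in> tker M N a b"
  shows "ad (tensor M N a b) X (coset (tker M N a b) k) = X"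
    "ad (tensor M N a b) (coset (tker M N a b) k) X = X"
proof -
  let ?K = "tker M N a b"
  have kc: "kcl ?K" by (rule tk_kcl)
  obtain f where f: "X = coset ?K f" using X by (auto simp: tensor_simps)
  have rX: "coset ?K (rep X) = X" unfolding f by (rule coset_rep[OF kc])
  have rk: "cg ?K (rep (coset ?K k)) fzero" by (rule cg_trans[OF kc rep_cg[OF kc] cg_zero[OF kc k]])
  have "cg ?K (fadd (rep X) (rep (coset ?K k))) (fadd (rep X) fzero)" by (rule cg_add[OF kc cg_refl[OF kc] rk])
  then have "coset ?K (fadd (rep X) (rep (coset ?K k))) = X" using coset_cg[OF kc] rX by (simp add: fadd_fzero)
  then show "ad (tensor M N a b) X (coset (tker M N a b) k) = X" by (simp add: tensor_simps)
  have "cg ?K (fadd (rep (coset ?K k)) (rep X)) (fadd fzero (rep X))" by (rule cg_add[OF kc rk cg_refl[OF kc]])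
  then have "coset ?K (fadd (rep (coset ?K k)) (rep X)) = X" using coset_cg[OF kc] rX by (simp add: fadd_fzero)
  then show "ad (tensor M N a b) (coset (tker M N a b) k) X = X" by (simp add: tensor_simps)
qed

lemma car_rep: "X \<in> car (tensor M N a b) \<Longrightarrow> coset (tker M N a b) (rep X) = X"
  by (auto simp: tensor_simps coset_rep[OF tk_kcl])

context setting
begin

lemma alg_io1: "alg (io1 p) = p" by (cases p) auto
lemma beg_io2: "beg (io2 p) = p" by (cases p) auto

lemma c1: "f \<in> fvs (tgens L N) \<Longrightarrow> fmap alg (\<lambda>_. 1) (fmap io1 (\<lambda>_. 1) f) = f"
proof (induction rule: fvs_induct)
  case zero then show ?case by (simp add: fmap_fzero)
next
  case (gen c p) then show ?case by (simp add: fmap_lin fsc_one alg_io1)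
next
  case (add f g) then show ?case by (simp add: fmap_fadd fvs_fin)
qed

lemma c2: "f \<in> fvs (tgens M N) \<Longrightarrow> fmap beg (\<lambda>_. 1) (fmap io2 (\<lambda>_. 1) f) = f"
proof (induction rule: fvs_induct)
  case zero then show ?case by (simp add: fmap_fzero)
next
  case (gen c p) then show ?case by (simp add: fmap_lin fsc_one beg_io2)
next
  case (add f g) then show ?case by (simp add: fmap_fadd fvs_fin)
qed

lemma zdl: fixes A :: "('a, 'k) lsa" and B :: "('b, 'k) lsa"
  assumes "vector_space A" "zr A \<in> gr A i" "n \<in> gr B j"
  shows "(dl (zr A, n, i, j) :: _ \<Rightarrow> 'k) \<in> tker A B aa bb"
proof -
  have r: "fminus (fsc 0 (dl (zr A, n, i, j))) (dl (sc A 0 (zr A), n, i, j)) \<in> tker A B aa bb"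
    by (rule tk_rels, rule trR1) (use assms in auto)
  have eq: "(dl (zr A, n, i, j) :: _ \<Rightarrow> 'k) = fsc (-1) (fminus (fsc 0 (dl (zr A, n, i, j))) (dl (sc A 0 (zr A), n, i, j)))"
    using v_sc_zr[OF assms(1)] by (simp add: fminus_def fsc_def fadd_def)
  show ?thesis by (subst eq) (rule kcl_sc[OF tk_kcl r])
qed

lemma c3: "f \<in> fvs (tgens M N) \<Longrightarrow> fmap alg (\<lambda>_. 1) (fmap io2 (\<lambda>_. 1) f) \<in> tker L N aLN aNL"
proof (induction rule: fvs_induct)
  case zero then show ?case by (simp add: fmap_fzero tk_zero)
next
  case (gen c p)
  obtain m n i j where p: "p = (m, n, i, j)" "n \<in> gr N j" using gen by (cases p) auto
  have "dl (zr L, n, i, j) \<in> tker L N aLN aNL" by (rule zdl[OF vL ls_zr_gr[OF L] p(2)])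
  then show ?case unfolding p by (simp add: fmap_lin fsc_one kcl_sc[OF tk_kcl])
next
  case (add f g) then show ?case by (simp add: fmap_fadd fvs_fin kcl_add[OF tk_kcl])
qed

lemma c4: "f \<in> fvs (tgens L N) \<Longrightarrow> fmap beg (\<lambda>_. 1) (fmap io1 (\<lambda>_. 1) f) \<in> tker M N aMN aNM"
proof (induction rule: fvs_induct)
  case zero then show ?case by (simp add: fmap_fzero tk_zero)
next
  case (gen c p)
  obtain l n i j where p: "p = (l, n, i, j)" "n \<in> gr N j" using gen by (cases p) auto
  have "dl (zr M, n, i, j) \<in> tker M N aMN aNM" by (rule zdl[OF vM ls_zr_gr[OF M] p(2)])
  then show ?case unfolding p by (simp add: fmap_lin fsc_one kcl_sc[OF tk_kcl])
next
  case (add f g) then show ?case by (simp add: fmap_fadd fvs_fin kcl_add[OF tk_kcl])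
qed

lemma c5: "f \<in> fvs (tgens D N) \<Longrightarrow>
  cg (tker D N aDN aND) (fadd (fmap io1 (\<lambda>_. 1) (fmap alg (\<lambda>_. 1) f)) (fmap io2 (\<lambda>_. 1) (fmap beg (\<lambda>_. 1) f))) f"
proof (induction rule: fvs_induct)
  case zero then show ?case by (simp add: fmap_fzero fadd_fzero cg_refl[OF tk_kcl])
next
  case (gen c p)
  obtain l m n i j where p: "p = ((l, m), n, i, j)" "l \<in> gr L i" "m \<in> gr M i" "n \<in> gr N j" using gen by (cases p) auto
  have lm: "l \<in> car L" "m \<in> car M" using p grL grM by auto
  have r: "fminus (dl (ad D (l, zr M) (zr L, m), n, i, j)) (fadd (dl ((l, zr M), n, i, j)) (dl ((zr L, m), n, i, j)))
     \<in> tker D N aDN aND"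
    by (rule tk_rels, rule trR3) (use p in \<open>auto simp: ls_zr_gr[OF L] ls_zr_gr[OF M]\<close>)
  have e: "ad D (l, zr M) (zr L, m) = (l, m)" using lm by (simp add: v_zr[OF vL] v_zl[OF vM])
  have "fminus (fadd (fmap io1 (\<lambda>_. 1) (fmap alg (\<lambda>_. 1) (fsc c (dl p)))) (fmap io2 (\<lambda>_. 1) (fmap beg (\<lambda>_. 1) (fsc c (dl p))))) (fsc c (dl p))
    = fsc (- c) (fminus (dl (ad D (l, zr M) (zr L, m), n, i, j)) (fadd (dl ((l, zr M), n, i, j)) (dl ((zr L, m), n, i, j))))"
    unfolding e p by (simp add: fmap_lin fsc_one) (rule ext, simp add: fminus_def fadd_def fsc_def algebra_simps)
  then show ?case unfolding cg_def using kcl_sc[OF tk_kcl r] by simp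
next
  case (add f g)
  have "cg (tker D N aDN aND)
     (fadd (fadd (fmap io1 (\<lambda>_. 1) (fmap alg (\<lambda>_. 1) f)) (fmap io2 (\<lambda>_. 1) (fmap beg (\<lambda>_. 1) f)))
           (fadd (fmap io1 (\<lambda>_. 1) (fmap alg (\<lambda>_. 1) g)) (fmap io2 (\<lambda>_. 1) (fmap beg (\<lambda>_. 1) g))))
     (fadd f g)" by (rule cg_add[OF tk_kcl add.IH])
  moreover have "fadd (fadd (fmap io1 (\<lambda>_. 1) (fmap alg (\<lambda>_. 1) f)) (fmap io2 (\<lambda>_. 1) (fmap beg (\<lambda>_. 1) f)))
           (fadd (fmap io1 (\<lambda>_. 1) (fmap alg (\<lambda>_. 1) g)) (fmap io2 (\<lambda>_. 1) (fmap beg (\<lambda>_. 1) g)))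
     = fadd (fmap io1 (\<lambda>_. 1) (fmap alg (\<lambda>_. 1) (fadd f g))) (fmap io2 (\<lambda>_. 1) (fmap beg (\<lambda>_. 1) (fadd f g)))"
    using add.hyps by (simp add: fmap_fadd fvs_fin) (rule ext, simp add: fadd_def algebra_simps)
  ultimately show ?case by simp
qed

end


context setting
begin

abbreviation "TD \<equiv> tensor D N aDN aND"
abbreviation "TL \<equiv> tensor L N aLN aNL"
abbreviation "TM \<equiv> tensor M N aMN aNM"

lemma part3: "\<exists>\<phi>. iso TD (dsum TL TM) \<phi>
             \<and> (\<forall>l m n i j. l \<in> gr L i \<and> m \<in> gr M i \<and> n \<in> gr N j \<longrightarrow>
                  \<phi> (tsym D N aDN aND (l, m) n i j)
                  = (tsym L N aLN aNL l n i j, tsym M N aMN aNM m n i j))"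
proof -
  interpret ta: tmap D N aDN aND L N aLN aNL alg "\<lambda>_. 1" by (rule alpha_tmap)
  interpret tb: tmap D N aDN aND M N aMN aNM beg "\<lambda>_. 1" by (rule beta_tmap)
  interpret t1: tmap L N aLN aNL D N aDN aND io1 "\<lambda>_. 1" by (rule iota1_tmap)
  interpret t2: tmap M N aMN aNM D N aDN aND io2 "\<lambda>_. 1" by (rule iota2_tmap)
  define phi where "phi = (\<lambda>Z. (ta.Phi Z, tb.Phi Z))"
  define psi where "psi = (\<lambda>(X, Y). ad TD (t1.Phi X) (t2.Phi Y))"
  have ha: "hom TD TL ta.Phi" by (rule ta.Phi_hom)
  have hb: "hom TD TM tb.Phi" by (rule tb.Phi_hom)
  have h1: "hom TL TD t1.Phi" by (rule t1.Phi_hom)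
  have h2: "hom TM TD t2.Phi" by (rule t2.Phi_hom)
  have hom: "hom TD (dsum TL TM) phi"
    unfolding hom_def phi_def
    using hom_car[OF ha] hom_car[OF hb] hom_ad[OF ha] hom_ad[OF hb] hom_sc[OF ha] hom_sc[OF hb]
      hom_br[OF ha] hom_br[OF hb] hom_gr[OF ha] hom_gr[OF hb]
    by auto
  have phi_car: "phi Z \<in> car TL \<times> car TM" if "Z \<in> car TD" for Z
    unfolding phi_def using hom_car[OF ha that] hom_car[OF hb that] by auto
  have tadd: "ad TD A B \<in> car TD" if "A \<in> car TD" "B \<in> car TD" for A B
  proof -
    have "fadd (rep A) (rep B) \<in> fvs (tgens D N)" using t1.rep_car2[OF that(1)] t1.rep_car2[OF that(2)] by (rule fvs_fadd)
    then show ?thesis by (simp add: tensor_simps)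
  qed
  have psi_car: "psi XY \<in> car TD" if "XY \<in> car TL \<times> car TM" for XY
    using that unfolding psi_def by (auto intro!: tadd hom_car[OF h1] hom_car[OF h2])
  have phipsi: "phi (psi XY) = XY" if "XY \<in> car TL \<times> car TM" for XY
  proof -
    obtain X Y where XY0: "XY = (X, Y)" by (cases XY)
    have XY: "XY = (X, Y)" "X \<in> car TL" "Y \<in> car TM" using that XY0 by auto
    have rX: "rep X \<in> fvs (tgens L N)" and rY: "rep Y \<in> fvs (tgens M N)"
      using ta.rep_car2[OF XY(2)] tb.rep_car2[OF XY(3)] by auto
    have A: "t1.Phi X = coset (tker D N aDN aND) (fmap io1 (\<lambda>_. 1) (rep X))" by (simp add: qm_def)
    have B: "t2.Phi Y = coset (tker D N aDN aND) (fmap io2 (\<lambda>_. 1) (rep Y))" by (simp add: qm_def)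
    have Ac: "t1.Phi X \<in> car TD" and Bc: "t2.Phi Y \<in> car TD" using hom_car[OF h1 XY(2)] hom_car[OF h2 XY(3)] by auto
    have a1: "ta.Phi (t1.Phi X) = X"
      unfolding A using ta.Phi_coset[OF t1.H_fvs[OF rX]] c1[OF rX] car_rep[OF XY(2)] by simp
    have a2: "ta.Phi (t2.Phi Y) = coset (tker L N aLN aNL) (fmap alg (\<lambda>_. 1) (fmap io2 (\<lambda>_. 1) (rep Y)))"
      unfolding B using ta.Phi_coset[OF t2.H_fvs[OF rY]] by simp
    have b1: "tb.Phi (t1.Phi X) = coset (tker M N aMN aNM) (fmap beg (\<lambda>_. 1) (fmap io1 (\<lambda>_. 1) (rep X)))"
      unfolding A using tb.Phi_coset[OF t1.H_fvs[OF rX]] by simp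
    have b2: "tb.Phi (t2.Phi Y) = Y"
      unfolding B using tb.Phi_coset[OF t2.H_fvs[OF rY]] c2[OF rY] car_rep[OF XY(3)] by simp
    have "ta.Phi (psi XY) = X"
      unfolding XY psi_def using hom_ad[OF ha Ac Bc] a1 a2 tensor_zero_add(1)[OF XY(2) c3[OF rY]] by simp
    moreover have "tb.Phi (psi XY) = Y"
      unfolding XY psi_def using hom_ad[OF hb Ac Bc] b1 b2 tensor_zero_add(2)[OF XY(3) c4[OF rX]] by simp
    ultimately show ?thesis unfolding phi_def XY by simp
  qed
  have psiphi: "psi (phi Z) = Z" if Z: "Z \<in> car TD" for Z
  proof -
    let ?K = "tker D N aDN aND"
    have rZ: "rep Z \<in> fvs (tgens D N)" by (rule ta.rep_car1[OF Z])
    have u: "fmap io1 (\<lambda>_. 1) (fmap alg (\<lambda>_. 1) (rep Z)) \<in> fvs (tgens D N)" by (rule t1.H_fvs[OF ta.H_fvs[OF rZ]])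
    have v: "fmap io2 (\<lambda>_. 1) (fmap beg (\<lambda>_. 1) (rep Z)) \<in> fvs (tgens D N)" by (rule t2.H_fvs[OF tb.H_fvs[OF rZ]])
    have "t1.Phi (ta.Phi Z) = coset ?K (fmap io1 (\<lambda>_. 1) (fmap alg (\<lambda>_. 1) (rep Z)))"
      using t1.Phi_coset[OF ta.H_fvs[OF rZ]] by (simp add: qm_def)
    moreover have "t2.Phi (tb.Phi Z) = coset ?K (fmap io2 (\<lambda>_. 1) (fmap beg (\<lambda>_. 1) (rep Z)))"
      using t2.Phi_coset[OF tb.H_fvs[OF rZ]] by (simp add: qm_def)
    ultimately have "psi (phi Z) = coset ?K (fadd (rep (coset ?K (fmap io1 (\<lambda>_. 1) (fmap alg (\<lambda>_. 1) (rep Z)))))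
                                              (rep (coset ?K (fmap io2 (\<lambda>_. 1) (fmap beg (\<lambda>_. 1) (rep Z))))))"
      unfolding psi_def phi_def by (simp add: tensor_simps)
    also have "\<dots> = coset ?K (rep Z)"
      by (rule coset_cg[OF tk_kcl], rule cg_trans[OF tk_kcl cg_add[OF tk_kcl rep_cg[OF tk_kcl] rep_cg[OF tk_kcl]] c5[OF rZ]])
    also have "\<dots> = Z" by (rule car_rep[OF Z])
    finally show ?thesis .
  qed
  have bij: "bij_betw phi (car TD) (car (dsum TL TM))"
    unfolding dsum_simps
    apply (rule bij_betw_byWitness[where f'=psi])
    using psiphi apply blast
    using phipsi apply blast
    using phi_car apply blast
    using psi_car apply blast
    done
  have ts: "phi (tsym D N aDN aND (l, m) n i j) = (tsym L N aLN aNL l n i j, tsym M N aMN aNM m n i j)"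
    if "l \<in> gr L i" "m \<in> gr M i" "n \<in> gr N j" for l m n i j
  proof -
    have d: "dl ((l, m), n, i, j) \<in> fvs (tgens D N)" using that by (intro fvs_dl) simp
    show ?thesis unfolding phi_def tsym_def using ta.Phi_coset[OF d] tb.Phi_coset[OF d]
      by (simp add: fmap_dl fsc_one)
  qed
  show ?thesis using hom bij ts unfolding iso_def by blast
qed

end

theorem mainTheorem9:
  fixes L :: "('l, 'k::field) lsa" and M :: "('m, 'k) lsa" and N :: "('n, 'k) lsa"
    and aLN :: "'l \<Rightarrow> 'n \<Rightarrow> 'n" and aNL :: "'n \<Rightarrow> 'l \<Rightarrow> 'l"
    and aMN :: "'m \<Rightarrow> 'n \<Rightarrow> 'n" and aNM :: "'n \<Rightarrow> 'm \<Rightarrow> 'm"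
  assumes char2: "(2::'k) \<noteq> 0" and char3: "(3::'k) \<noteq> 0"
    and L: "lie_superalgebra L" and M: "lie_superalgebra M" and N: "lie_superalgebra N"
    and actLN: "is_action L N aLN" and actNL: "is_action N L aNL"
    and compLN: "compatible L N aLN aNL"
    and actMN: "is_action M N aMN" and actNM: "is_action N M aNM"
    and compMN: "compatible M N aMN aNM"
    and ii: "\<forall>i j k. \<forall>l\<in>gr L i. \<forall>m\<in>gr M j. \<forall>n\<in>gr N k.
               aLN l (aMN m n) = sc N (sg (i \<and> j)) (aMN m (aLN l n))"
    and iii1: "canon_trivial N (act_ideal L N aLN) M aNM aMN"
    and iii2: "canon_trivial N (act_ideal M N aMN) L aNL aLN"
  shows "is_action (dsum L M) N (dsum_act N aLN aMN)
       \<and> is_action N (dsum L M) (act_dsum aNL aNM)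
       \<and> (\<exists>\<phi>. iso (tensor (dsum L M) N (dsum_act N aLN aMN) (act_dsum aNL aNM))
                   (dsum (tensor L N aLN aNL) (tensor M N aMN aNM)) \<phi>
             \<and> (\<forall>l m n i j. l \<in> gr L i \<and> m \<in> gr M i \<and> n \<in> gr N j \<longrightarrow>
                  \<phi> (tsym (dsum L M) N (dsum_act N aLN aMN) (act_dsum aNL aNM) (l, m) n i j)
                  = (tsym L N aLN aNL l n i j, tsym M N aMN aNM m n i j)))"
proof -
  interpret s: setting L M N aLN aNL aMN aNM
    by (rule setting.intro) (rule L M N actLN actNL actMN actNM ii iii1 iii2)+
  show ?thesis using s.part1 s.part2 s.part3 by blast
qed


end
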